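(* Let $k$ be a field of characteristic zero and $n\geq 1$. There is an isomorphism of algebras $\mathcal{D}(\mathcal{B}_{n+1})\cong A_1\otimes\mathcal{D}(\tilde{\mathcal{B}}_n)$, where $A_1$ is the first Weyl algebra.
   Context: For a central hyperplane arrangement $\mathcal{A}$ in $k^m$ with coordinate ring $S=k[x_1,\ldots,x_m]$ and defining polynomial $Q$ (product of linear forms defining its hyperplanes), $\mathcal{D}(S)$ denotes the algebra of differential operators on $S$ (the subalgebra of $\operatorname{End}_k(S)$ generated by $\operatorname{Der}(S)$ and multiplications by elements of $S$), and the algebra of differential operators tangent to $\mathcal{A}$ is $\mathcal{D}(\mathcal{A})=\bigcap_{m\geq1}\{P\in\mathcal{D}(S): P\,Q^m\mathcal{D}(S)\subseteq Q^m\mathcal{D}(S)\}$; when $\mathcal{A}$ is free (i.e. $\operatorname{Der}\mathcal{A}=\{\theta\in\operatorname{Der}S:\lambda\mid\theta(\lambda)$ for every linear form $\lambda$ defining a hyperplane of $\mathcal{A}\}$ is a free $S$-module) this equals the subalgebra of $\operatorname{End}_k(S)$ generated by $\operatorname{Der}\mathcal{A}$ and multiplications by elements of $S$. The braid arrangement $\mathcal{B}_{n+1}$ in $k^{n+1}$ (coordinates $x_0,\ldots,x_n$) consists of the hyperplanes $x_i=x_j$, $0\leq i<j\leq n$. The arrangement $\tilde{\mathcal{B}}_n$ in $k^n$ (coordinates $x_1,\ldots,x_n$) is defined by the polynomial $x_1\cdots x_n\prod_{1\leq i<j\leq n}(x_i-x_j)$. *)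

theory Defs
  imports Main "HOL-Library.Poly_Mapping"
begin

text \<open>Polynomials in variables x_i (i :: nat) with coefficients in 'k:
  finitely supported maps from monomials (exponent vectors) to coefficients.\<close>
type_synonym 'k mpoly = "(nat \<Rightarrow>\<^sub>0 nat) \<Rightarrow>\<^sub>0 'k"

definition polys_in :: "nat set \<Rightarrow> 'k::comm_ring_1 mpoly set" where
  "polys_in I = {p :: 'k mpoly. \<forall>m \<in> Poly_Mapping.keys p. Poly_Mapping.keys m \<subseteq> I}"

definition mvar :: "nat \<Rightarrow> 'k::comm_ring_1 mpoly" where
  "mvar i = Poly_Mapping.single (Poly_Mapping.single i 1) 1"

definition mconst :: "'k::comm_ring_1 \<Rightarrow> 'k mpoly" where
  "mconst c = Poly_Mapping.single 0 c"

section \<open>Linear operators on a coordinate ring S (functions vanishing off S)\<close>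

type_synonym 'k op = "'k mpoly \<Rightarrow> 'k mpoly"

definition mult_op :: "'k::comm_ring_1 mpoly set \<Rightarrow> 'k mpoly \<Rightarrow> 'k op" where
  "mult_op S p = (\<lambda>q. if q \<in> S then p * q else 0)"

definition op_add :: "'k::comm_ring_1 op \<Rightarrow> 'k op \<Rightarrow> 'k op" where
  "op_add P R = (\<lambda>q. P q + R q)"

definition op_smult :: "'k::comm_ring_1 \<Rightarrow> 'k op \<Rightarrow> 'k op" where
  "op_smult c P = (\<lambda>q. mconst c * P q)"

definition derivations :: "'k::comm_ring_1 mpoly set \<Rightarrow> 'k op set" where
  "derivations S = {\<theta>.
      (\<forall>q\<in>S. \<theta> q \<in> S) \<and> (\<forall>q. q \<notin> S \<longrightarrow> \<theta> q = 0) \<and>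
      (\<forall>p\<in>S. \<forall>q\<in>S. \<theta> (p + q) = \<theta> p + \<theta> q) \<and>
      (\<forall>c. \<forall>q\<in>S. \<theta> (mconst c * q) = mconst c * \<theta> q) \<and>
      (\<forall>p\<in>S. \<forall>q\<in>S. \<theta> (p * q) = p * \<theta> q + q * \<theta> p)}"

inductive_set diff_ops :: "'k::comm_ring_1 mpoly set \<Rightarrow> 'k op set" for S where
  der: "\<theta> \<in> derivations S \<Longrightarrow> \<theta> \<in> diff_ops S"
| mult: "p \<in> S \<Longrightarrow> mult_op S p \<in> diff_ops S"
| add: "P \<in> diff_ops S \<Longrightarrow> R \<in> diff_ops S \<Longrightarrow> op_add P R \<in> diff_ops S"
| smult: "P \<in> diff_ops S \<Longrightarrow> op_smult c P \<in> diff_ops S"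
| comp: "P \<in> diff_ops S \<Longrightarrow> R \<in> diff_ops S \<Longrightarrow> P \<circ> R \<in> diff_ops S"

text \<open>D(A) for the arrangement with defining polynomial Q in S:
  all P in D(S) with P Q^m D(S) \<subseteq> Q^m D(S) for every m \<ge> 1.\<close>
definition tangent_ops :: "'k::comm_ring_1 mpoly set \<Rightarrow> 'k mpoly \<Rightarrow> 'k op set" where
  "tangent_ops S Q = {P \<in> diff_ops S. \<forall>m::nat. m \<ge> 1 \<longrightarrow>
      (\<forall>R \<in> diff_ops S. \<exists>R' \<in> diff_ops S.
          P \<circ> mult_op S (Q ^ m) \<circ> R = mult_op S (Q ^ m) \<circ> R')}"

text \<open>Braid arrangement B_{n+1} in k^{n+1}, coordinates x_0..x_n.\<close>
definition braid_poly :: "nat \<Rightarrow> 'k::comm_ring_1 mpoly" where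
  "braid_poly n = (\<Prod>(i,j) \<in> {(i,j). i < j \<and> j \<le> n}. mvar i - mvar j)"

definition D_braid :: "nat \<Rightarrow> 'k::comm_ring_1 op set" where
  "D_braid n = tangent_ops (polys_in {0..n}) (braid_poly n)"

text \<open>The arrangement B~_n in k^n, coordinates x_1..x_n.\<close>
definition braid_tilde_poly :: "nat \<Rightarrow> 'k::comm_ring_1 mpoly" where
  "braid_tilde_poly n = (\<Prod>i\<in>{1..n}. mvar i) *
      (\<Prod>(i,j) \<in> {(i,j). 1 \<le> i \<and> i < j \<and> j \<le> n}. mvar i - mvar j)"

definition D_braid_tilde :: "nat \<Rightarrow> 'k::comm_ring_1 op set" where
  "D_braid_tilde n = tangent_ops (polys_in {1..n}) (braid_tilde_poly n)"

text \<open>First Weyl algebra A_1 = D(k[t]) (here t = x_0), the algebra of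
  differential operators on the polynomial ring in one variable.\<close>
definition weyl_algebra_1 :: "'k::comm_ring_1 op set" where
  "weyl_algebra_1 = diff_ops (polys_in {0})"

text \<open>The tensor product A \<otimes>_k B of vector spaces is presented as the free
  k-vector space on A \<times> B (finitely supported functions), modulo the
  subspace generated by the bilinearity relations.\<close>
definition tfree :: "'k::comm_ring_1 op set \<Rightarrow> 'k op set \<Rightarrow> (('k op \<times> 'k op) \<Rightarrow>\<^sub>0 'k) set" where
  "tfree A B = {\<phi>. Poly_Mapping.keys \<phi> \<subseteq> A \<times> B}"

definition tgen :: "'k op \<Rightarrow> 'k op \<Rightarrow> (('k op \<times> 'k op) \<Rightarrow>\<^sub>0 'k::comm_ring_1)" where
  "tgen a b = Poly_Mapping.single (a, b) 1"

definition tsmult :: "'k::comm_ring_1 \<Rightarrow> (('k op \<times> 'k op) \<Rightarrow>\<^sub>0 'k) \<Rightarrow> (('k op \<times> 'k op) \<Rightarrow>\<^sub>0 'k)" where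
  "tsmult c \<phi> = Poly_Mapping.map (\<lambda>x. c * x) \<phi>"

inductive_set trel :: "'k::comm_ring_1 op set \<Rightarrow> 'k op set \<Rightarrow> (('k op \<times> 'k op) \<Rightarrow>\<^sub>0 'k) set"
  for A B where
  zero: "0 \<in> trel A B"
| addl: "a \<in> A \<Longrightarrow> a' \<in> A \<Longrightarrow> b \<in> B \<Longrightarrow>
     tgen (op_add a a') b - tgen a b - tgen a' b \<in> trel A B"
| addr: "a \<in> A \<Longrightarrow> b \<in> B \<Longrightarrow> b' \<in> B \<Longrightarrow>
     tgen a (op_add b b') - tgen a b - tgen a b' \<in> trel A B"
| smultl: "a \<in> A \<Longrightarrow> b \<in> B \<Longrightarrow> tgen (op_smult c a) b - tsmult c (tgen a b) \<in> trel A B"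
| smultr: "a \<in> A \<Longrightarrow> b \<in> B \<Longrightarrow> tgen a (op_smult c b) - tsmult c (tgen a b) \<in> trel A B"
| sum: "\<phi> \<in> trel A B \<Longrightarrow> \<psi> \<in> trel A B \<Longrightarrow> \<phi> + \<psi> \<in> trel A B"
| scal: "\<phi> \<in> trel A B \<Longrightarrow> tsmult c \<phi> \<in> trel A B"

text \<open>C is isomorphic, as a k-algebra, to A \<otimes>_k B, where A, B, C are
  algebras of operators with multiplication = composition and units 1_A, 1_B, 1_C:
  there is a k-linear map from the free space onto C whose kernel is exactly the
  relation subspace (i.e. a linear bijection A \<otimes> B \<rightarrow> C) that is multiplicative on
  pure tensors, (a \<otimes> b)(a' \<otimes> b') = aa' \<otimes> bb', and unital.\<close>
definition alg_iso_tensor ::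
  "'k::comm_ring_1 op set \<Rightarrow> 'k op \<Rightarrow> 'k op set \<Rightarrow> 'k op \<Rightarrow> 'k op set \<Rightarrow> 'k op \<Rightarrow> bool" where
  "alg_iso_tensor A oneA B oneB C oneC \<longleftrightarrow>
    (\<exists>\<Psi>. \<Psi> ` tfree A B = C \<and>
       (\<forall>\<phi>\<in>tfree A B. \<forall>\<psi>\<in>tfree A B. \<Psi> (\<phi> + \<psi>) = op_add (\<Psi> \<phi>) (\<Psi> \<psi>)) \<and>
       (\<forall>c. \<forall>\<phi>\<in>tfree A B. \<Psi> (tsmult c \<phi>) = op_smult c (\<Psi> \<phi>)) \<and>
       (\<forall>\<phi>\<in>tfree A B. \<Psi> \<phi> = (\<lambda>_. 0) \<longleftrightarrow> \<phi> \<in> trel A B) \<and>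
       (\<forall>a\<in>A. \<forall>a'\<in>A. \<forall>b\<in>B. \<forall>b'\<in>B.
          \<Psi> (tgen (a \<circ> a') (b \<circ> b')) = \<Psi> (tgen a b) \<circ> \<Psi> (tgen a' b')) \<and>
       \<Psi> (tgen oneA oneB) = oneC)"

end

theory Submission
  imports Defs
begin

abbreviation keys :: "('a \<Rightarrow>\<^sub>0 'b::zero) \<Rightarrow> 'a set" where "keys \<equiv> Poly_Mapping.keys"
abbreviation lookup :: "('a \<Rightarrow>\<^sub>0 'b::zero) \<Rightarrow> 'a \<Rightarrow> 'b" where "lookup \<equiv> poly_mapping.lookup"

abbreviation X :: "(nat \<Rightarrow>\<^sub>0 nat) \<Rightarrow> 'k::comm_ring_1 mpoly" where
  "X m \<equiv> Poly_Mapping.single m 1"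

lemma lookup_map0: "f 0 = 0 \<Longrightarrow> lookup (Poly_Mapping.map f p) k = f (lookup p k)"
  by transfer (simp add: when_def)

lemma lookup_mconst_mult: "lookup (mconst c * p) m = c * lookup p m"
proof -
  have "mconst c * p = Poly_Mapping.map ((*) c) p"
    unfolding mconst_def by (simp add: mult_map_scale_conv_mult)
  then show ?thesis by (simp add: lookup_map0)
qed

lemma mconst_0 [simp]: "mconst 0 = 0" unfolding mconst_def by simp
lemma mconst_1 [simp]: "mconst 1 = 1" unfolding mconst_def by simp
lemma mconst_add: "mconst (a + b) = mconst a + mconst b"
  unfolding mconst_def by (simp add: single_add)
lemma mconst_mult: "mconst (a * b) = mconst a * mconst b"
  unfolding mconst_def by (simp add: mult_single)
lemma mconst_uminus: "mconst (- a) = - mconst a"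
  unfolding mconst_def by (simp add: single_uminus)
lemma mconst_diff: "mconst (a - b) = mconst a - mconst b"
  unfolding mconst_def by (simp add: single_diff)
lemma mconst_power: "mconst (a ^ k) = mconst a ^ k"
  by (induct k) (simp_all add: mconst_mult)
lemma mconst_single: "mconst c * Poly_Mapping.single m d = Poly_Mapping.single m (c * d)"
  unfolding mconst_def by (simp add: mult_single)

lemma X_mult: "X m * X m' = X (m + m')"
  by (simp add: mult_single)

lemma mvar_X: "mvar i = X (Poly_Mapping.single i 1)"
  unfolding mvar_def ..

lemma polys_in_iff: "(p :: 'k::comm_ring_1 mpoly) \<in> polys_in I \<longleftrightarrow> (\<forall>m\<in>keys p. keys m \<subseteq> I)"
  unfolding polys_in_def by simp

lemma polys_in_0 [simp]: "0 \<in> polys_in I"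
  by (simp add: polys_in_iff)

lemma polys_in_add [intro]: "p \<in> polys_in I \<Longrightarrow> q \<in> polys_in I \<Longrightarrow> p + q \<in> polys_in I"
  unfolding polys_in_iff using keys_add[of p q] by (meson Un_iff subsetD)

lemma polys_in_uminus [intro]: "p \<in> polys_in I \<Longrightarrow> - p \<in> polys_in I"
  unfolding polys_in_iff by (simp add: keys_minus)

lemma polys_in_diff [intro]: "p \<in> polys_in I \<Longrightarrow> q \<in> polys_in I \<Longrightarrow> p - q \<in> polys_in I"
proof -
  assume "p \<in> polys_in I" "q \<in> polys_in I"
  then have "p + (- q) \<in> polys_in I" by (intro polys_in_add polys_in_uminus)
  then show ?thesis by simp
qed

lemma keys_add_nat: "keys (a + b) = keys a \<union> keys (b :: nat \<Rightarrow>\<^sub>0 nat)"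
  by transfer auto

lemma polys_in_mult [intro]: "p \<in> polys_in I \<Longrightarrow> q \<in> polys_in I \<Longrightarrow> p * q \<in> polys_in I"
proof -
  assume p: "p \<in> polys_in I" and q: "q \<in> polys_in I"
  show "p * q \<in> polys_in I" unfolding polys_in_iff
  proof
    fix m assume "m \<in> keys (p * q)"
    then obtain a b where "m = a + b" "a \<in> keys p" "b \<in> keys q"
      using keys_mult[of p q] by blast
    then show "keys m \<subseteq> I" using p q unfolding polys_in_iff by (simp add: keys_add_nat)
  qed
qed

lemma polys_in_single [intro]: "keys m \<subseteq> I \<Longrightarrow> Poly_Mapping.single m c \<in> polys_in I"
  unfolding polys_in_iff by simp

lemma polys_in_mconst [simp, intro]: "mconst c \<in> polys_in I"
  unfolding mconst_def by (rule polys_in_single) simp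

lemma polys_in_1 [simp, intro]: "1 \<in> polys_in I"
  using polys_in_mconst[of 1 I] by simp

lemma polys_in_mvar [intro]: "i \<in> I \<Longrightarrow> mvar i \<in> polys_in I"
  unfolding mvar_def by (rule polys_in_single) simp

lemma polys_in_mconst_mult [intro]: "p \<in> polys_in I \<Longrightarrow> mconst c * p \<in> polys_in I"
  by auto

lemma polys_in_sum [intro]: "(\<And>x. x \<in> K \<Longrightarrow> f x \<in> polys_in I) \<Longrightarrow> sum f K \<in> polys_in I"
  by (induct K rule: infinite_finite_induct) auto

lemma polys_in_prod [intro]: "(\<And>x. x \<in> K \<Longrightarrow> f x \<in> polys_in I) \<Longrightarrow> prod f K \<in> polys_in I"
  by (induct K rule: infinite_finite_induct) auto

lemma polys_in_power [intro]: "p \<in> polys_in I \<Longrightarrow> p ^ k \<in> polys_in I"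
  by (induct k) auto

lemma polys_in_mono: "p \<in> polys_in I \<Longrightarrow> I \<subseteq> J \<Longrightarrow> p \<in> polys_in J"
  unfolding polys_in_iff by blast

definition lext :: "((nat \<Rightarrow>\<^sub>0 nat) \<Rightarrow> 'k::comm_ring_1 mpoly) \<Rightarrow> 'k mpoly \<Rightarrow> 'k mpoly" where
  "lext f p = (\<Sum>m\<in>keys p. mconst (lookup p m) * f m)"

lemma lext_superset:
  assumes "finite K" "keys p \<subseteq> K"
  shows "lext f p = (\<Sum>m\<in>K. mconst (lookup p m) * f m)"
  unfolding lext_def
  by (rule sum.mono_neutral_left) (use assms in \<open>auto simp: in_keys_iff\<close>)

lemma lext_add: "lext f (p + q) = lext f p + lext f q"
proof -
  let ?K = "keys p \<union> keys q"
  have "lext f (p + q) = (\<Sum>m\<in>?K. mconst (lookup (p+q) m) * f m)"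
    by (rule lext_superset) (auto dest: keys_add[THEN subsetD])
  also have "\<dots> = (\<Sum>m\<in>?K. mconst (lookup p m) * f m) + (\<Sum>m\<in>?K. mconst (lookup q m) * f m)"
    by (simp add: lookup_add mconst_add distrib_right sum.distrib)
  also have "\<dots> = lext f p + lext f q"
  proof -
    have "lext f p = (\<Sum>m\<in>?K. mconst (lookup p m) * f m)" by (rule lext_superset) auto
    moreover have "lext f q = (\<Sum>m\<in>?K. mconst (lookup q m) * f m)" by (rule lext_superset) auto
    ultimately show ?thesis by simp
  qed
  finally show ?thesis .
qed

lemma lext_smult: "lext f (mconst c * p) = mconst c * lext f p"
proof -
  have "keys (mconst c * p) \<subseteq> keys p"
    by (auto simp: in_keys_iff lookup_mconst_mult)
  then have "lext f (mconst c * p) = (\<Sum>m\<in>keys p. mconst (lookup (mconst c * p) m) * f m)"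
    by (intro lext_superset) auto
  also have "\<dots> = mconst c * lext f p"
    by (simp add: lext_def sum_distrib_left lookup_mconst_mult mconst_mult mult.assoc)
  finally show ?thesis .
qed

lemma lext_zero [simp]: "lext f 0 = 0"
  by (simp add: lext_def)

lemma lext_single: "lext f (Poly_Mapping.single m c) = mconst c * f m"
  by (simp add: lext_def)

lemma lext_X [simp]: "lext f (X m) = f m"
  by (simp add: lext_single)

lemma poly_expand: "p = (\<Sum>m\<in>keys p. mconst (lookup p m) * X m)"
proof (rule poly_mapping_eqI)
  fix k
  have "lookup (\<Sum>m\<in>keys p. mconst (lookup p m) * X m) k
      = (\<Sum>m\<in>keys p. (lookup p m when m = k))"
    by (simp add: lookup_sum mconst_single lookup_single)
  also have "\<dots> = lookup p k"
    by (simp add: when_def in_keys_iff)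
  finally show "lookup p k = lookup (\<Sum>m\<in>keys p. mconst (lookup p m) * X m) k" by simp
qed

definition addhom :: "'k::comm_ring_1 mpoly set \<Rightarrow> ('k mpoly \<Rightarrow> 'k mpoly) \<Rightarrow> bool" where
  "addhom S F \<longleftrightarrow> (\<forall>p\<in>S. \<forall>q\<in>S. F (p + q) = F p + F q) \<and>
                 (\<forall>c. \<forall>p\<in>S. F (mconst c * p) = mconst c * F p)"

lemma addhomD:
  "addhom S F \<Longrightarrow> p \<in> S \<Longrightarrow> q \<in> S \<Longrightarrow> F (p + q) = F p + F q"
  "addhom S F \<Longrightarrow> p \<in> S \<Longrightarrow> F (mconst c * p) = mconst c * F p"
  unfolding addhom_def by blast+

lemma addhom_zero: "addhom (polys_in I) F \<Longrightarrow> F 0 = 0"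
  using addhomD(2)[of "polys_in I" F 0 0] by simp

lemma addhom_sum:
  assumes "addhom (polys_in I) F" "finite K" "\<And>x. x \<in> K \<Longrightarrow> g x \<in> polys_in I"
  shows "F (sum g K) = (\<Sum>x\<in>K. F (g x))"
  using assms(2,3)
proof (induct K rule: finite_induct)
  case empty then show ?case using addhom_zero[OF assms(1)] by simp
next
  case (insert x K)
  then show ?case using addhomD(1)[OF assms(1), of "g x" "sum g K"] by auto
qed

lemma addhom_lext:
  assumes "addhom (polys_in I) F" "p \<in> polys_in I"
  shows "F p = lext (\<lambda>m. F (X m)) p"
proof -
  have "F p = F (\<Sum>m\<in>keys p. mconst (lookup p m) * X m)"
    using poly_expand[of p] by simp
  also have "\<dots> = (\<Sum>m\<in>keys p. F (mconst (lookup p m) * X m))"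
    using assms by (intro addhom_sum) (auto simp: polys_in_iff mconst_single)
  also have "\<dots> = lext (\<lambda>m. F (X m)) p"
    unfolding lext_def using assms
    by (intro sum.cong refl addhomD(2)) (auto simp: polys_in_iff mconst_single)
  finally show ?thesis .
qed

lemma addhom_eq:
  assumes "addhom (polys_in I) F" "addhom (polys_in I) G"
    "\<And>m. keys m \<subseteq> I \<Longrightarrow> F (X m) = G (X m)" "p \<in> polys_in I"
  shows "F p = G p"
proof -
  have "F p = lext (\<lambda>m. F (X m)) p" by (rule addhom_lext[OF assms(1,4)])
  also have "\<dots> = lext (\<lambda>m. G (X m)) p"
    unfolding lext_def using assms(3,4) by (intro sum.cong refl) (auto simp: polys_in_iff)
  also have "\<dots> = G p" by (rule addhom_lext[OF assms(2,4), symmetric])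
  finally show ?thesis .
qed

lemma addhom_lext_fun: "addhom S (lext f)"
  unfolding addhom_def by (simp add: lext_add lext_smult)

lemma addhom_compose:
  "addhom S F \<Longrightarrow> addhom S' G \<Longrightarrow> (\<And>p. p \<in> S \<Longrightarrow> F p \<in> S') \<Longrightarrow> addhom S (G \<circ> F)"
  unfolding addhom_def by simp

lemma addhom_mult_left: "addhom S (\<lambda>p. r * p)"
  unfolding addhom_def by (simp add: distrib_left mult.left_commute)

lemma addhom_mult_right: "addhom S (\<lambda>p. p * r)"
  unfolding addhom_def by (simp add: distrib_right mult.assoc)

lemma lookup_minus_nat: "lookup (a - b) k = lookup a k - lookup (b :: nat \<Rightarrow>\<^sub>0 nat) k"
  by transfer simp

lemma single_add_minus:
  fixes m :: "nat \<Rightarrow>\<^sub>0 nat"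
  assumes "lookup m i \<ge> 1"
  shows "Poly_Mapping.single i 1 + (m - Poly_Mapping.single i 1) = m"
  by (rule poly_mapping_eqI) (use assms in \<open>auto simp: lookup_add lookup_minus_nat lookup_single when_def\<close>)

lemma add_minus_single:
  fixes n k :: "nat \<Rightarrow>\<^sub>0 nat"
  assumes "lookup n i \<ge> 1"
  shows "k + (n - Poly_Mapping.single i 1) = (k + n) - Poly_Mapping.single i 1"
  by (rule poly_mapping_eqI) (use assms in \<open>auto simp: lookup_add lookup_minus_nat lookup_single when_def\<close>)

lemma keys_minus_nat: "keys (m - (n :: nat \<Rightarrow>\<^sub>0 nat)) \<subseteq> keys m"
  by (auto simp: in_keys_iff lookup_minus_nat)

definition tdeg :: "(nat \<Rightarrow>\<^sub>0 nat) \<Rightarrow> nat" where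
  "tdeg m = sum (lookup m) (keys m)"

lemma tdeg_superset: "finite K \<Longrightarrow> keys m \<subseteq> K \<Longrightarrow> tdeg m = sum (lookup m) K"
  unfolding tdeg_def by (rule sum.mono_neutral_left) (auto simp: in_keys_iff)

lemma tdeg_minus:
  fixes m :: "nat \<Rightarrow>\<^sub>0 nat"
  assumes "lookup m i \<ge> 1"
  shows "tdeg (m - Poly_Mapping.single i 1) < tdeg m"
proof -
  let ?e = "Poly_Mapping.single i (1::nat)"
  have ik: "i \<in> keys m" using assms by (auto simp: in_keys_iff)
  have "tdeg m = sum (lookup (?e + (m - ?e))) (keys m)"
    using single_add_minus[OF assms] by (simp add: tdeg_def)
  also have "\<dots> = sum (lookup ?e) (keys m) + sum (lookup (m - ?e)) (keys m)"
    by (simp add: lookup_add sum.distrib)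
  also have "sum (lookup ?e) (keys m) = 1"
    using ik by (simp add: lookup_single when_def)
  also have "sum (lookup (m - ?e)) (keys m) = tdeg (m - ?e)"
    by (rule tdeg_superset[symmetric]) (auto simp: keys_minus_nat)
  finally show ?thesis by simp
qed

lemma keys_empty_iff: "keys p = {} \<longleftrightarrow> p = 0"
  by transfer auto

lemma X_zero: "X 0 = 1"
  by simp

lemma mono_induct:
  assumes "keys m \<subseteq> I"
    and base: "P 1"
    and step: "\<And>m i. keys m \<subseteq> I \<Longrightarrow> i \<in> I \<Longrightarrow> P (X m) \<Longrightarrow> P (mvar i * X m)"
  shows "P (X m :: 'k::comm_ring_1 mpoly)"
  using assms(1)
proof (induct "tdeg m" arbitrary: m rule: less_induct)
  case less
  show ?case
  proof (cases "m = 0")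
    case True then show ?thesis using base by simp
  next
    case False
    then obtain i where i: "i \<in> keys m" by (metis keys_empty_iff ex_in_conv)
    then have li: "lookup m i \<ge> 1" by (simp add: in_keys_iff)
    let ?m = "m - Poly_Mapping.single i 1"
    have k: "keys ?m \<subseteq> I" using less.prems keys_minus_nat by blast
    have "P (X ?m)" using less.hyps[OF tdeg_minus[OF li] k] .
    then have "P (mvar i * X ?m)" using step k i less.prems by blast
    also have "mvar i * X ?m = X m"
      unfolding mvar_X X_mult using single_add_minus[OF li] by simp
    finally show ?thesis .
  qed
qed

section \<open>Derivations\<close>

lemma derivationsD:
  assumes "\<theta> \<in> derivations S"
  shows "\<And>q. q \<in> S \<Longrightarrow> \<theta> q \<in> S"
    and "\<And>q. q \<notin> S \<Longrightarrow> \<theta> q = 0"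
    and "\<And>p q. p \<in> S \<Longrightarrow> q \<in> S \<Longrightarrow> \<theta> (p + q) = \<theta> p + \<theta> q"
    and "\<And>c q. q \<in> S \<Longrightarrow> \<theta> (mconst c * q) = mconst c * \<theta> q"
    and "\<And>p q. p \<in> S \<Longrightarrow> q \<in> S \<Longrightarrow> \<theta> (p * q) = p * \<theta> q + q * \<theta> p"
  using assms unfolding derivations_def by blast+

lemma derivations_addhom: "\<theta> \<in> derivations S \<Longrightarrow> addhom S \<theta>"
  unfolding addhom_def using derivationsD(3,4) by blast

lemma der_one:
  assumes "\<theta> \<in> derivations (polys_in I)"
  shows "\<theta> 1 = 0"
proof -
  have "\<theta> (1 * 1) = 1 * \<theta> 1 + 1 * \<theta> 1" using derivationsD(5)[OF assms] by blast
  then show ?thesis by simp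
qed

lemma derivations_eq:
  assumes "\<theta>1 \<in> derivations (polys_in I)" "\<theta>2 \<in> derivations (polys_in I)"
    "\<And>i. i \<in> I \<Longrightarrow> \<theta>1 (mvar i) = \<theta>2 (mvar i)"
  shows "\<theta>1 = \<theta>2"
proof
  fix p
  show "\<theta>1 p = \<theta>2 p"
  proof (cases "p \<in> polys_in I")
    case False then show ?thesis using derivationsD(2) assms by metis
  next
    case True
    show ?thesis
    proof (rule addhom_eq[OF derivations_addhom[OF assms(1)] derivations_addhom[OF assms(2)] _ True])
      fix m :: "nat \<Rightarrow>\<^sub>0 nat" assume "keys m \<subseteq> I"
      then show "\<theta>1 (X m) = \<theta>2 (X m)"
      proof (rule mono_induct)
        show "\<theta>1 1 = \<theta>2 1" using der_one assms by metis
      next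
        fix m i assume m: "keys m \<subseteq> I" and i: "i \<in> I" and h: "\<theta>1 (X m) = \<theta>2 (X m)"
        have xm: "X m \<in> polys_in I" using m by auto
        have xi: "mvar i \<in> polys_in I" using i by auto
        show "\<theta>1 (mvar i * X m) = \<theta>2 (mvar i * X m)"
          using derivationsD(5)[OF assms(1) xi xm] derivationsD(5)[OF assms(2) xi xm] h assms(3)[OF i]
          by simp
      qed
    qed
  qed
qed

lemma derivations_sum:
  fixes D :: "'i \<Rightarrow> 'a::comm_ring_1 op"
  assumes "finite K" "\<And>i. i \<in> K \<Longrightarrow> D i \<in> derivations (polys_in I)"
  shows "(\<lambda>q. \<Sum>i\<in>K. D i q) \<in> derivations (polys_in I)"
  unfolding derivations_def
proof (intro CollectI conjI ballI allI impI)
  fix q :: "'a::comm_ring_1 mpoly" assume "q \<in> polys_in I"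
  then show "(\<Sum>i\<in>K. D i q) \<in> polys_in I" using assms derivationsD(1) by blast
next
  fix q :: "'a::comm_ring_1 mpoly" assume "q \<notin> polys_in I"
  then show "(\<Sum>i\<in>K. D i q) = 0" using assms derivationsD(2) by (metis (no_types, lifting) sum.neutral)
next
  fix p q :: "'a::comm_ring_1 mpoly" assume "p \<in> polys_in I" "q \<in> polys_in I"
  then show "(\<Sum>i\<in>K. D i (p + q)) = (\<Sum>i\<in>K. D i p) + (\<Sum>i\<in>K. D i q)"
  proof -
    have "\<forall>i\<in>K. D i (p + q) = D i p + D i q" using derivationsD(3) assms(2) \<open>p \<in> polys_in I\<close> \<open>q \<in> polys_in I\<close> by blast
    then show ?thesis by (simp add: sum.distrib)
  qed
next
  fix c and q :: "'a::comm_ring_1 mpoly" assume "q \<in> polys_in I"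
  then show "(\<Sum>i\<in>K. D i (mconst c * q)) = mconst c * (\<Sum>i\<in>K. D i q)"
  proof -
    have "\<forall>i\<in>K. D i (mconst c * q) = mconst c * D i q" using derivationsD(4) assms(2) \<open>q \<in> polys_in I\<close> by blast
    then show ?thesis by (simp add: sum_distrib_left)
  qed
next
  fix p q :: "'a::comm_ring_1 mpoly" assume "p \<in> polys_in I" "q \<in> polys_in I"
  then show "(\<Sum>i\<in>K. D i (p * q)) = p * (\<Sum>i\<in>K. D i q) + q * (\<Sum>i\<in>K. D i p)"
  proof -
    have "\<forall>i\<in>K. D i (p * q) = p * D i q + q * D i p" using derivationsD(5) assms(2) \<open>p \<in> polys_in I\<close> \<open>q \<in> polys_in I\<close> by blast
    then show ?thesis by (simp add: sum.distrib sum_distrib_left)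
  qed
qed

lemma derivations_mult:
  fixes \<theta> :: "'a::comm_ring_1 op"
  assumes "\<theta> \<in> derivations (polys_in I)" "r \<in> polys_in I"
  shows "(\<lambda>q. r * \<theta> q) \<in> derivations (polys_in I)"
  unfolding derivations_def
proof (intro CollectI conjI ballI allI impI)
  fix q :: "'a::comm_ring_1 mpoly" assume "q \<in> polys_in I"
  then show "r * \<theta> q \<in> polys_in I" using assms derivationsD(1) by blast
next
  fix q :: "'a::comm_ring_1 mpoly" assume "q \<notin> polys_in I"
  then show "r * \<theta> q = 0" using derivationsD(2)[OF assms(1)] by simp
next
  fix p q :: "'a::comm_ring_1 mpoly" assume "p \<in> polys_in I" "q \<in> polys_in I"
  then show "r * \<theta> (p + q) = r * \<theta> p + r * \<theta> q"
    using derivationsD(3)[OF assms(1)] by (simp add: distrib_left)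
next
  fix c and q :: "'a::comm_ring_1 mpoly" assume "q \<in> polys_in I"
  then show "r * \<theta> (mconst c * q) = mconst c * (r * \<theta> q)"
    using derivationsD(4)[OF assms(1)] by (simp add: mult.left_commute)
next
  fix p q :: "'a::comm_ring_1 mpoly" assume "p \<in> polys_in I" "q \<in> polys_in I"
  then show "r * \<theta> (p * q) = p * (r * \<theta> q) + q * (r * \<theta> p)"
    using derivationsD(5)[OF assms(1)] by (simp add: distrib_left mult.left_commute)
qed

lemma derivations_decompose:
  assumes "finite I" "\<theta> \<in> derivations (polys_in I)"
    and D: "\<And>i. i \<in> I \<Longrightarrow> D i \<in> derivations (polys_in I)"
    and Dv: "\<And>i j. i \<in> I \<Longrightarrow> j \<in> I \<Longrightarrow> D i (mvar j) = (if i = j then 1 else 0)"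
  shows "\<theta> = (\<lambda>q. \<Sum>i\<in>I. mult_op (polys_in I) (\<theta> (mvar i)) (D i q))"
proof -
  have r: "(\<lambda>q. \<Sum>i\<in>I. \<theta> (mvar i) * D i q) \<in> derivations (polys_in I)"
    using assms by (intro derivations_sum derivations_mult derivationsD(1)[OF assms(2)] polys_in_mvar) auto
  have "\<theta> = (\<lambda>q. \<Sum>i\<in>I. \<theta> (mvar i) * D i q)"
  proof (rule derivations_eq[OF assms(2) r])
    fix j assume j: "j \<in> I"
    have "(\<Sum>i\<in>I. \<theta> (mvar i) * D i (mvar j)) = (\<Sum>i\<in>I. if i = j then \<theta> (mvar i) else 0)"
      using Dv j by (intro sum.cong) auto
    also have "\<dots> = \<theta> (mvar j)" using j assms(1) by simp
    finally show "\<theta> (mvar j) = (\<Sum>i\<in>I. \<theta> (mvar i) * D i (mvar j))" by simp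
  qed
  also have "\<dots> = (\<lambda>q. \<Sum>i\<in>I. mult_op (polys_in I) (\<theta> (mvar i)) (D i q))"
  proof
    fix q
    show "(\<Sum>i\<in>I. \<theta> (mvar i) * D i q) = (\<Sum>i\<in>I. mult_op (polys_in I) (\<theta> (mvar i)) (D i q))"
    proof (rule sum.cong[OF refl])
      fix x assume x: "x \<in> I"
      show "\<theta> (mvar x) * D x q = mult_op (polys_in I) (\<theta> (mvar x)) (D x q)"
      proof (cases "q \<in> polys_in I")
        case True then show ?thesis using derivationsD(1)[OF D[OF x]] by (simp add: mult_op_def)
      next
        case False then show ?thesis using derivationsD(2)[OF D[OF x]] by (simp add: mult_op_def)
      qed
    qed
  qed
  finally show ?thesis .
qed

lemma lext_in:
  assumes "\<And>m. m \<in> keys p \<Longrightarrow> f m \<in> polys_in I"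
  shows "lext f p \<in> polys_in I"
  unfolding lext_def using assms by blast

definition pd :: "nat set \<Rightarrow> nat \<Rightarrow> 'k::comm_ring_1 op" where
  "pd I i = (\<lambda>q. if q \<in> polys_in I then
     lext (\<lambda>m. mconst (of_nat (lookup m i)) * X (m - Poly_Mapping.single i 1)) q else 0)"

lemma pd_X: "keys m \<subseteq> I \<Longrightarrow>
  pd I i (X m) = Poly_Mapping.single (m - Poly_Mapping.single i 1) (of_nat (lookup m i))"
  unfolding pd_def by (auto simp: mconst_single)

lemma pd_mvar: "j \<in> I \<Longrightarrow> pd I i (mvar j) = (if i = j then 1 else 0)"
  unfolding mvar_X by (subst pd_X) (auto simp: lookup_single when_def)

lemma pd_derivation: "pd I i \<in> derivations (polys_in I)"
  unfolding derivations_def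
proof (intro CollectI conjI ballI allI impI)
  let ?f = "\<lambda>m. mconst (of_nat (lookup m i)) * X (m - Poly_Mapping.single i 1) :: 'a mpoly"
  fix q :: "'a::comm_ring_1 mpoly" assume q: "q \<in> polys_in I"
  have "lext ?f q \<in> polys_in I"
  proof (rule lext_in)
    fix m assume "m \<in> keys q"
    then have "keys m \<subseteq> I" using q by (simp add: polys_in_iff)
    then have "keys (m - Poly_Mapping.single i 1) \<subseteq> I" using keys_minus_nat by blast
    then show "?f m \<in> polys_in I" by (intro polys_in_mconst_mult polys_in_single)
  qed
  then show "pd I i q \<in> polys_in I" unfolding pd_def using q by simp
next
  fix q :: "'a::comm_ring_1 mpoly" assume "q \<notin> polys_in I"
  then show "pd I i q = 0" unfolding pd_def by simp
next
  fix p q :: "'a::comm_ring_1 mpoly" assume "p \<in> polys_in I" "q \<in> polys_in I"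
  then show "pd I i (p + q) = pd I i p + pd I i q" unfolding pd_def by (auto simp: lext_add)
next
  fix c and q :: "'a::comm_ring_1 mpoly" assume "q \<in> polys_in I"
  then show "pd I i (mconst c * q) = mconst c * pd I i q" unfolding pd_def by (auto simp: lext_smult)
next
  fix p q :: "'a::comm_ring_1 mpoly" assume p: "p \<in> polys_in I" and q: "q \<in> polys_in I"
  let ?D = "pd I i :: 'a op"
  have ah: "addhom (polys_in I) ?D" unfolding addhom_def pd_def by (auto simp: lext_add lext_smult)
  have mono: "?D (X m * X m') = X m * ?D (X m') + X m' * ?D (X m)"
    if "keys m \<subseteq> I" "keys m' \<subseteq> I" for m m'
  proof -
    let ?e = "Poly_Mapping.single i (1::nat)"
    have k: "keys (m + m') \<subseteq> I" using that by (simp add: keys_add_nat)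
    have "?D (X m * X m') = Poly_Mapping.single (m + m' - ?e) (of_nat (lookup m i + lookup m' i))"
      unfolding X_mult using pd_X[OF k] by (simp add: lookup_add)
    moreover have "X m * ?D (X m') = Poly_Mapping.single (m + m' - ?e) (of_nat (lookup m' i))"
    proof (cases "lookup m' i \<ge> 1")
      case True
      have "X m * ?D (X m') = Poly_Mapping.single (m + (m' - ?e)) (of_nat (lookup m' i))"
        unfolding pd_X[OF that(2)] mult_single by simp
      also have "m + (m' - ?e) = m + m' - ?e" using add_minus_single True by blast
      finally show ?thesis .
    next
      case False then have "lookup m' i = 0" by simp
      then show ?thesis unfolding pd_X[OF that(2)] by simp
    qed
    moreover have "X m' * ?D (X m) = Poly_Mapping.single (m + m' - ?e) (of_nat (lookup m i))"
    proof (cases "lookup m i \<ge> 1")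
      case True
      have "X m' * ?D (X m) = Poly_Mapping.single (m' + (m - ?e)) (of_nat (lookup m i))"
        unfolding pd_X[OF that(1)] mult_single by simp
      also have "m' + (m - ?e) = m + m' - ?e" using add_minus_single[OF True, of m'] by (simp add: add.commute)
      finally show ?thesis .
    next
      case False then have "lookup m i = 0" by simp
      then show ?thesis unfolding pd_X[OF that(1)] by simp
    qed
    ultimately show ?thesis by (simp add: single_add[symmetric] add.commute)
  qed
  have step1: "?D (X m * q) = X m * ?D q + q * ?D (X m)" if m: "keys m \<subseteq> I" for m
  proof (rule addhom_eq[where I=I and F="\<lambda>q. ?D (X m * q)" and G="\<lambda>q. X m * ?D q + q * ?D (X m)"])
    show "addhom (polys_in I) (\<lambda>q. ?D (X m * q))"
      by (rule addhom_compose[OF addhom_mult_left ah, unfolded comp_def]) (use m in auto)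
    show "addhom (polys_in I) (\<lambda>q. X m * ?D q + q * ?D (X m))"
      using ah unfolding addhom_def by (simp add: algebra_simps)
    show "?D (X m * X m') = X m * ?D (X m') + X m' * ?D (X m)" if "keys m' \<subseteq> I" for m'
      using mono[OF m that] .
    show "q \<in> polys_in I" by fact
  qed
  show "?D (p * q) = p * ?D q + q * ?D p"
  proof (rule addhom_eq[where I=I and F="\<lambda>p. ?D (p * q)" and G="\<lambda>p. p * ?D q + q * ?D p"])
    show "addhom (polys_in I) (\<lambda>p. ?D (p * q))"
      by (rule addhom_compose[OF addhom_mult_right ah, unfolded comp_def]) (use q in auto)
    show "addhom (polys_in I) (\<lambda>p. p * ?D q + q * ?D p)"
      using ah unfolding addhom_def by (simp add: algebra_simps)
    show "?D (X m * q) = X m * ?D q + q * ?D (X m)" if "keys m \<subseteq> I" for m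
      using step1[OF that] .
    show "p \<in> polys_in I" by fact
  qed
qed

definition linop :: "'k::comm_ring_1 mpoly set \<Rightarrow> 'k op \<Rightarrow> bool" where
  "linop S P \<longleftrightarrow> (\<forall>q\<in>S. P q \<in> S) \<and> (\<forall>q. q \<notin> S \<longrightarrow> P q = 0) \<and> addhom S P"

lemma linopD:
  "linop S P \<Longrightarrow> q \<in> S \<Longrightarrow> P q \<in> S"
  "linop S P \<Longrightarrow> q \<notin> S \<Longrightarrow> P q = 0"
  "linop S P \<Longrightarrow> addhom S P"
  unfolding linop_def by blast+

lemma linop_zero: "linop (polys_in I) P \<Longrightarrow> P 0 = 0"
  using linopD(3) addhom_zero by blast

lemma linop_add: "linop S P \<Longrightarrow> p \<in> S \<Longrightarrow> q \<in> S \<Longrightarrow> P (p + q) = P p + P q"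
  using linopD(3) addhomD(1) by blast

lemma linop_smult: "linop S P \<Longrightarrow> q \<in> S \<Longrightarrow> P (mconst c * q) = mconst c * P q"
  using linopD(3) addhomD(2) by blast

lemma linop_derivation: "\<theta> \<in> derivations S \<Longrightarrow> linop S \<theta>"
  unfolding linop_def using derivationsD derivations_addhom by blast

lemma linop_mult_op: "p \<in> polys_in I \<Longrightarrow> linop (polys_in I) (mult_op (polys_in I) p)"
  unfolding linop_def addhom_def mult_op_def by (auto simp: distrib_left mult.left_commute)

lemma linop_op_add: "linop (polys_in I) P \<Longrightarrow> linop (polys_in I) R \<Longrightarrow> linop (polys_in I) (op_add P R)"
  unfolding linop_def addhom_def op_add_def by (auto simp: distrib_left)

lemma linop_op_smult: "linop (polys_in I) P \<Longrightarrow> linop (polys_in I) (op_smult c P)"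
  unfolding linop_def addhom_def op_smult_def by (auto simp: distrib_left mult.left_commute)

lemma linop_comp:
  assumes P: "linop (polys_in I) P" and R: "linop (polys_in I) R"
  shows "linop (polys_in I) (P \<circ> R)"
  unfolding linop_def
proof (intro conjI ballI allI impI)
  fix q :: "'a mpoly" assume "q \<in> polys_in I" then show "(P \<circ> R) q \<in> polys_in I"
    using linopD(1)[OF P] linopD(1)[OF R] by simp
next
  fix q :: "'a mpoly" assume "q \<notin> polys_in I" then show "(P \<circ> R) q = 0"
    using linopD(2)[OF R] linop_zero[OF P] by simp
next
  show "addhom (polys_in I) (P \<circ> R)"
    by (rule addhom_compose[OF linopD(3)[OF R] linopD(3)[OF P]]) (use R linopD(1) in blast)
qed

lemma linop_diff_ops: "P \<in> diff_ops (polys_in I) \<Longrightarrow> linop (polys_in I) P"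
  by (induct rule: diff_ops.induct)
     (blast intro: linop_derivation linop_mult_op linop_op_add linop_op_smult linop_comp)+

lemma linop_zero_op: "linop (polys_in I) (\<lambda>_. 0)"
  unfolding linop_def addhom_def by auto

definition opsum :: "'i set \<Rightarrow> ('i \<Rightarrow> 'k::comm_ring_1 op) \<Rightarrow> 'k op" where
  "opsum K f = (\<lambda>q. \<Sum>i\<in>K. f i q)"

lemma linop_opsum: "(\<And>i. i \<in> K \<Longrightarrow> linop (polys_in I) (f i)) \<Longrightarrow> linop (polys_in I) (opsum K f)"
proof (induct K rule: infinite_finite_induct)
  case (infinite K) then show ?case by (simp add: opsum_def linop_zero_op)
next
  case empty then show ?case by (simp add: opsum_def linop_zero_op)
next
  case (insert x F)
  have "opsum (insert x F) f = op_add (f x) (opsum F f)"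
    using insert by (simp add: opsum_def op_add_def fun_eq_iff)
  then show ?case using insert by (simp add: linop_op_add)
qed

lemma leibniz_from_monomials:
  fixes D :: "'k::comm_ring_1 op"
  assumes ah: "addhom (polys_in I) D"
    and mono: "\<And>m m'. keys m \<subseteq> I \<Longrightarrow> keys m' \<subseteq> I \<Longrightarrow> D (X m * X m') = X m * D (X m') + X m' * D (X m)"
    and p: "p \<in> polys_in I" and q: "q \<in> polys_in I"
  shows "D (p * q) = p * D q + q * D p"
proof -
  have step1: "D (X m * q) = X m * D q + q * D (X m)" if m: "keys m \<subseteq> I" for m
  proof (rule addhom_eq[where I=I and F="\<lambda>q. D (X m * q)" and G="\<lambda>q. X m * D q + q * D (X m)"])
    show "addhom (polys_in I) (\<lambda>q. D (X m * q))"
      by (rule addhom_compose[OF addhom_mult_left ah, unfolded comp_def]) (use m in auto)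
    show "addhom (polys_in I) (\<lambda>q. X m * D q + q * D (X m))"
      using ah unfolding addhom_def by (simp add: algebra_simps)
    show "D (X m * X m') = X m * D (X m') + X m' * D (X m)" if "keys m' \<subseteq> I" for m'
      using mono[OF m that] .
    show "q \<in> polys_in I" by fact
  qed
  show "D (p * q) = p * D q + q * D p"
  proof (rule addhom_eq[where I=I and F="\<lambda>p. D (p * q)" and G="\<lambda>p. p * D q + q * D p"])
    show "addhom (polys_in I) (\<lambda>p. D (p * q))"
      by (rule addhom_compose[OF addhom_mult_right ah, unfolded comp_def]) (use q in auto)
    show "addhom (polys_in I) (\<lambda>p. p * D q + q * D p)"
      using ah unfolding addhom_def by (simp add: algebra_simps)
    show "D (X m * q) = X m * D q + q * D (X m)" if "keys m \<subseteq> I" for m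
      using step1[OF that] .
    show "p \<in> polys_in I" by fact
  qed
qed

section \<open>Tensor action\<close>

definition r0 :: "(nat \<Rightarrow>\<^sub>0 nat) \<Rightarrow> (nat \<Rightarrow>\<^sub>0 nat)" where
  "r0 m = Poly_Mapping.single 0 (lookup m 0)"

definition rB :: "(nat \<Rightarrow>\<^sub>0 nat) \<Rightarrow> (nat \<Rightarrow>\<^sub>0 nat)" where
  "rB m = m - r0 m"

definition T :: "nat set \<Rightarrow> 'k::comm_ring_1 op \<Rightarrow> 'k op \<Rightarrow> 'k op" where
  "T B a b = (\<lambda>q. if q \<in> polys_in (insert 0 B) then lext (\<lambda>m. a (X (r0 m)) * b (X (rB m))) q else 0)"

lemma r0_rB: "r0 m + rB m = m"
  unfolding r0_def rB_def
  by (rule poly_mapping_eqI) (auto simp: lookup_add lookup_minus_nat lookup_single when_def)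

lemma keys_r0: "keys (r0 m) \<subseteq> {0}"
  unfolding r0_def by simp

lemma keys_rB: 
  assumes "keys m \<subseteq> insert 0 B" shows "keys (rB m) \<subseteq> B"
proof
  fix x assume "x \<in> keys (rB m)"
  then have "lookup m x - (if x = 0 then lookup m 0 else 0) \<noteq> 0"
    unfolding rB_def r0_def by (simp add: in_keys_iff lookup_minus_nat lookup_single when_def)
  then have "x \<noteq> 0" "x \<in> keys m" by (auto simp: in_keys_iff split: if_splits)
  then show "x \<in> B" using assms by blast
qed

lemma r0_add:
  assumes "keys e \<subseteq> {0}" "keys m' \<subseteq> B" "0 \<notin> B"
  shows "r0 (e + m') = e"
proof -
  have "lookup m' 0 = 0" using assms by (auto simp: in_keys_iff)
  then show ?thesis unfolding r0_def using assms(1)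
    by (intro poly_mapping_eqI) (auto simp: lookup_add lookup_single when_def in_keys_iff)
qed

lemma rB_add:
  assumes "keys e \<subseteq> {0}" "keys m' \<subseteq> B" "0 \<notin> B"
  shows "rB (e + m') = m'"
  unfolding rB_def r0_add[OF assms] by simp

lemma X_r0_rB: "X (r0 m) * X (rB m) = X m"
  by (simp add: X_mult r0_rB)

context
  fixes B :: "nat set"
  assumes B0: "0 \<notin> B"
begin


lemma S0_SS: "p \<in> polys_in {0} \<Longrightarrow> p \<in> polys_in (insert 0 B)"
  by (erule polys_in_mono) auto

lemma SB_SS: "p \<in> polys_in B \<Longrightarrow> p \<in> polys_in (insert 0 B)"
  by (erule polys_in_mono) auto

lemma prod_SS: "u \<in> polys_in {0} \<Longrightarrow> g \<in> polys_in B \<Longrightarrow> u * g \<in> polys_in (insert 0 B)"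
  by (intro polys_in_mult S0_SS SB_SS)

lemma T_in:
  assumes "linop (polys_in {0}) a" "linop (polys_in B) b"
  shows "T B a b q \<in> (polys_in (insert 0 B))"
proof (cases "q \<in> (polys_in (insert 0 B))")
  case True
  have "lext (\<lambda>m. a (X (r0 m)) * b (X (rB m))) q \<in> (polys_in (insert 0 B))"
  proof (rule lext_in)
    fix m assume "m \<in> keys q"
    then have "keys m \<subseteq> insert 0 B" using True by (simp add: polys_in_iff)
    then have "keys (rB m) \<subseteq> B" by (rule keys_rB)
    then have "b (X (rB m)) \<in> polys_in B" by (intro linopD(1)[OF assms(2)] polys_in_single)
    moreover have "a (X (r0 m)) \<in> polys_in {0}" using keys_r0 by (intro linopD(1)[OF assms(1)] polys_in_single)
    ultimately show "a (X (r0 m)) * b (X (rB m)) \<in> (polys_in (insert 0 B))"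
      by (intro prod_SS)
  qed
  then show ?thesis using True unfolding T_def by simp
qed (simp add: T_def)

lemma T_addhom: "addhom (polys_in (insert 0 B)) (T B a b)"
  unfolding addhom_def T_def by (auto simp: lext_add lext_smult)

lemma T_linop: "linop (polys_in {0}) a \<Longrightarrow> linop (polys_in B) b \<Longrightarrow> linop (polys_in (insert 0 B)) (T B a b)"
proof -
  assume a: "linop (polys_in {0}) a" and b: "linop (polys_in B) b"
  show ?thesis unfolding linop_def
  proof (intro conjI allI impI ballI)
    show "T B a b q \<in> polys_in (insert 0 B)" for q using T_in[OF a b] by blast
    show "T B a b q = 0" if "q \<notin> polys_in (insert 0 B)" for q using that by (simp add: T_def)
    show "addhom (polys_in (insert 0 B)) (T B a b)" by (rule T_addhom)
  qed
qed

lemma T_X: "keys m \<subseteq> insert 0 B \<Longrightarrow> T B a b (X m) = a (X (r0 m)) * b (X (rB m))"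
  unfolding T_def by auto

lemma T_prod:
  assumes a: "linop (polys_in {0}) a" and b: "linop (polys_in B) b" and u: "u \<in> (polys_in {0})" and g: "g \<in> (polys_in B)"
  shows "T B a b (u * g) = a u * b g"
proof -
  have mono: "T B a b (X e * g) = a (X e) * b g" if e: "keys e \<subseteq> {0}" for e
  proof (rule addhom_eq[where I=B and F="\<lambda>g. T B a b (X e * g)" and G="\<lambda>g. a (X e) * b g"])
    show "addhom (polys_in B) (\<lambda>g. T B a b (X e * g))"
      by (rule addhom_compose[OF addhom_mult_left T_addhom, unfolded comp_def])
         (use e in \<open>auto intro: prod_SS\<close>)
    show "addhom (polys_in B) (\<lambda>g. a (X e) * b g)"
      using linopD(3)[OF b] unfolding addhom_def by (simp add: algebra_simps)
    show "T B a b (X e * X m') = a (X e) * b (X m')" if m': "keys m' \<subseteq> B" for m'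
    proof -
      have k: "keys (e + m') \<subseteq> insert 0 B" using e m' by (auto simp: keys_add_nat)
      show ?thesis unfolding X_mult T_X[OF k] r0_add[OF e m' B0] rB_add[OF e m' B0] ..
    qed
    show "g \<in> (polys_in B)" by fact
  qed
  show ?thesis
  proof (rule addhom_eq[where I="{0}" and F="\<lambda>u. T B a b (u * g)" and G="\<lambda>u. a u * b g"])
    show "addhom (polys_in {0}) (\<lambda>u. T B a b (u * g))"
      by (rule addhom_compose[OF addhom_mult_right T_addhom, unfolded comp_def])
         (use g in \<open>auto intro: prod_SS\<close>)
    show "addhom (polys_in {0}) (\<lambda>u. a u * b g)"
      using linopD(3)[OF a] unfolding addhom_def by (simp add: algebra_simps)
    show "T B a b (X e * g) = a (X e) * b g" if "keys e \<subseteq> {0}" for e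
      using mono[OF that] .
    show "u \<in> (polys_in {0})" by fact
  qed
qed

lemma T_zero: "T B a b 0 = 0"
  unfolding T_def by simp

lemma T_comp:
  assumes a: "linop (polys_in {0}) a" "linop (polys_in {0}) a'" and b: "linop (polys_in B) b" "linop (polys_in B) b'"
  shows "T B a b \<circ> T B a' b' = T B (a \<circ> a') (b \<circ> b')"
proof
  fix q
  show "(T B a b \<circ> T B a' b') q = T B (a \<circ> a') (b \<circ> b') q"
  proof (cases "q \<in> (polys_in (insert 0 B))")
    case False then show ?thesis by (simp add: T_def)
  next
    case True
    show ?thesis
    proof (rule addhom_eq[where I="insert 0 B" and F="T B a b \<circ> T B a' b'"])
      show "addhom (polys_in (insert 0 B)) (T B a b \<circ> T B a' b')"
        by (rule addhom_compose[OF T_addhom T_addhom]) (rule T_in[OF a(2) b(2)])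
      show "addhom (polys_in (insert 0 B)) (T B (a \<circ> a') (b \<circ> b'))" by (rule T_addhom)
      show "(T B a b \<circ> T B a' b') (X m) = T B (a \<circ> a') (b \<circ> b') (X m)"
        if m: "keys m \<subseteq> insert 0 B" for m
      proof -
        have "(T B a b \<circ> T B a' b') (X m) = T B a b (a' (X (r0 m)) * b' (X (rB m)))"
          by (simp only: comp_def T_X[OF m])
        also have "\<dots> = a (a' (X (r0 m))) * b (b' (X (rB m)))"
        proof (rule T_prod[OF a(1) b(1)])
          show "a' (X (r0 m)) \<in> polys_in {0}" using keys_r0 by (intro linopD(1)[OF a(2)] polys_in_single)
          show "b' (X (rB m)) \<in> polys_in B" using keys_rB[OF m] by (intro linopD(1)[OF b(2)] polys_in_single)
        qed
        also have "\<dots> = T B (a \<circ> a') (b \<circ> b') (X m)"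
          by (simp only: comp_def T_X[OF m])
        finally show ?thesis .
      qed
      show "q \<in> (polys_in (insert 0 B))" by fact
    qed
  qed
qed

lemma T_mult:
  assumes u: "u \<in> (polys_in {0})" and g: "g \<in> (polys_in B)"
  shows "T B (mult_op (polys_in {0}) u) (mult_op (polys_in B) g) = mult_op (polys_in (insert 0 B)) (u * g)"
proof
  fix q
  show "T B (mult_op (polys_in {0}) u) (mult_op (polys_in B) g) q = mult_op (polys_in (insert 0 B)) (u * g) q"
  proof (cases "q \<in> (polys_in (insert 0 B))")
    case False then show ?thesis by (simp add: T_def mult_op_def)
  next
    case True
    show ?thesis
    proof (rule addhom_eq[where I="insert 0 B" and F="T B (mult_op (polys_in {0}) u) (mult_op (polys_in B) g)"
        and G="mult_op (polys_in (insert 0 B)) (u * g)"])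
      show "addhom (polys_in (insert 0 B)) (T B (mult_op (polys_in {0}) u) (mult_op (polys_in B) g))" by (rule T_addhom)
      show "addhom (polys_in (insert 0 B)) (mult_op (polys_in (insert 0 B)) (u * g))"
        using u g by (intro linopD(3) linop_mult_op prod_SS)
      show "T B (mult_op (polys_in {0}) u) (mult_op (polys_in B) g) (X m) = mult_op (polys_in (insert 0 B)) (u * g) (X m)"
        if m: "keys m \<subseteq> insert 0 B" for m
      proof -
        have "T B (mult_op (polys_in {0}) u) (mult_op (polys_in B) g) (X m) =
            mult_op (polys_in {0}) u (X (r0 m)) * mult_op (polys_in B) g (X (rB m))"
          by (rule T_X[OF m])
        also have "\<dots> = (u * X (r0 m)) * (g * X (rB m))"
          using keys_r0 keys_rB[OF m] by (simp add: mult_op_def polys_in_single)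
        also have "\<dots> = (u * g) * (X (r0 m) * X (rB m))" by (simp add: ac_simps)
        also have "\<dots> = mult_op (polys_in (insert 0 B)) (u * g) (X m)"
          using m by (simp add: X_r0_rB mult_op_def polys_in_single)
        finally show ?thesis .
      qed
      show "q \<in> (polys_in (insert 0 B))" by fact
    qed
  qed
qed

lemma lext_fun_add: "lext (\<lambda>m. f m + g m) p = lext f p + lext g p"
  unfolding lext_def by (simp add: distrib_left sum.distrib)

lemma lext_fun_smult: "lext (\<lambda>m. mconst c * f m) p = mconst c * lext f p"
  unfolding lext_def by (simp add: sum_distrib_left mult.left_commute)

lemma T_add_left: "T B (op_add a a') b = op_add (T B a b) (T B a' b)"
  unfolding T_def op_add_def by (auto simp: fun_eq_iff distrib_right lext_fun_add)

lemma T_add_right: "T B a (op_add b b') = op_add (T B a b) (T B a b')"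
  unfolding T_def op_add_def by (auto simp: fun_eq_iff distrib_left lext_fun_add)

lemma T_smult_left: "T B (op_smult c a) b = op_smult c (T B a b)"
  unfolding T_def op_smult_def by (auto simp: fun_eq_iff mult.assoc lext_fun_smult)

lemma T_smult_right: "T B a (op_smult c b) = op_smult c (T B a b)"
  unfolding T_def op_smult_def by (auto simp: fun_eq_iff mult.left_commute lext_fun_smult)

lemma linop_id0: "linop (polys_in {0}) (mult_op (polys_in {0}) 1)"
  by (rule linop_mult_op) simp

lemma linop_idB: "linop (polys_in B) (mult_op (polys_in B) 1)"
  by (rule linop_mult_op) simp

lemma T_der_left:
  assumes th: "\<theta> \<in> derivations (polys_in {0})"
  shows "T B \<theta> (mult_op (polys_in B) 1) \<in> derivations (polys_in (insert 0 B))"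
proof -
  let ?D = "T B \<theta> (mult_op (polys_in B) 1)"
  have l: "linop (polys_in {0}) \<theta>" by (rule linop_derivation[OF th])
  have Dp: "?D (u * g) = \<theta> u * g" if "u \<in> polys_in {0}" "g \<in> polys_in B" for u g
    using T_prod[OF l linop_idB that] that by (simp add: mult_op_def)
  have DX: "?D (X m) = \<theta> (X (r0 m)) * X (rB m)" if "keys m \<subseteq> insert 0 B" for m
    using Dp[of "X (r0 m)" "X (rB m)"] keys_r0 keys_rB[OF that] by (simp add: X_r0_rB polys_in_single)
  show ?thesis unfolding derivations_def
  proof (intro CollectI conjI ballI allI impI)
    fix q :: "'a mpoly"
    show "?D q \<in> polys_in (insert 0 B)" using T_in[OF l linop_idB] .
  next
    fix q :: "'a mpoly" assume "q \<notin> polys_in (insert 0 B)" then show "?D q = 0" by (simp add: T_def)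
  next
    fix p q :: "'a mpoly" assume "p \<in> polys_in (insert 0 B)" "q \<in> polys_in (insert 0 B)"
    then show "?D (p + q) = ?D p + ?D q" using T_addhom unfolding addhom_def by blast
  next
    fix c and q :: "'a mpoly" assume "q \<in> polys_in (insert 0 B)"
    then show "?D (mconst c * q) = mconst c * ?D q" using T_addhom unfolding addhom_def by blast
  next
    fix p q :: "'a mpoly" assume p: "p \<in> polys_in (insert 0 B)" and q: "q \<in> polys_in (insert 0 B)"
    show "?D (p * q) = p * ?D q + q * ?D p"
    proof (rule leibniz_from_monomials[OF T_addhom _ p q])
      fix m m' :: "nat \<Rightarrow>\<^sub>0 nat" assume m: "keys m \<subseteq> insert 0 B" and m': "keys m' \<subseteq> insert 0 B"
      let ?e = "X (r0 m) :: 'a mpoly" and ?e' = "X (r0 m') :: 'a mpoly"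
      let ?g = "X (rB m) :: 'a mpoly" and ?g' = "X (rB m') :: 'a mpoly"
      have e: "?e \<in> polys_in {0}" "?e' \<in> polys_in {0}" using keys_r0 by (auto intro: polys_in_single)
      have g: "?g \<in> polys_in B" "?g' \<in> polys_in B" using keys_rB[OF m] keys_rB[OF m'] by (auto intro: polys_in_single)
      have "X m * X m' = (?e * ?e') * (?g * ?g')"
        unfolding X_r0_rB[of m, symmetric] X_r0_rB[of m', symmetric] by (simp add: ac_simps)
      then have "?D (X m * X m') = \<theta> (?e * ?e') * (?g * ?g')"
        using Dp e g by (simp add: polys_in_mult)
      also have "\<dots> = (?e * \<theta> ?e' + ?e' * \<theta> ?e) * (?g * ?g')"
        using derivationsD(5)[OF th e] by simp
      also have "\<dots> = (?e * ?g) * (\<theta> ?e' * ?g') + (?e' * ?g') * (\<theta> ?e * ?g)"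
        by (simp add: algebra_simps)
      also have "\<dots> = X m * ?D (X m') + X m' * ?D (X m)"
        by (simp only: DX[OF m] DX[OF m'] X_r0_rB)
      finally show "?D (X m * X m') = X m * ?D (X m') + X m' * ?D (X m)" .
    qed
  qed
qed

lemma T_der_right:
  assumes th: "\<theta> \<in> derivations (polys_in B)"
  shows "T B (mult_op (polys_in {0}) 1) \<theta> \<in> derivations (polys_in (insert 0 B))"
proof -
  let ?D = "T B (mult_op (polys_in {0}) 1) \<theta>"
  have l: "linop (polys_in B) \<theta>" by (rule linop_derivation[OF th])
  have Dp: "?D (u * g) = u * \<theta> g" if "u \<in> polys_in {0}" "g \<in> polys_in B" for u g
    using T_prod[OF linop_id0 l that] that by (simp add: mult_op_def)
  have DX: "?D (X m) = X (r0 m) * \<theta> (X (rB m))" if "keys m \<subseteq> insert 0 B" for m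
    using Dp[of "X (r0 m)" "X (rB m)"] keys_r0 keys_rB[OF that] by (simp add: X_r0_rB polys_in_single)
  show ?thesis unfolding derivations_def
  proof (intro CollectI conjI ballI allI impI)
    fix q :: "'a mpoly"
    show "?D q \<in> polys_in (insert 0 B)" using T_in[OF linop_id0 l] .
  next
    fix q :: "'a mpoly" assume "q \<notin> polys_in (insert 0 B)" then show "?D q = 0" by (simp add: T_def)
  next
    fix p q :: "'a mpoly" assume "p \<in> polys_in (insert 0 B)" "q \<in> polys_in (insert 0 B)"
    then show "?D (p + q) = ?D p + ?D q" using T_addhom unfolding addhom_def by blast
  next
    fix c and q :: "'a mpoly" assume "q \<in> polys_in (insert 0 B)"
    then show "?D (mconst c * q) = mconst c * ?D q" using T_addhom unfolding addhom_def by blast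
  next
    fix p q :: "'a mpoly" assume p: "p \<in> polys_in (insert 0 B)" and q: "q \<in> polys_in (insert 0 B)"
    show "?D (p * q) = p * ?D q + q * ?D p"
    proof (rule leibniz_from_monomials[OF T_addhom _ p q])
      fix m m' :: "nat \<Rightarrow>\<^sub>0 nat" assume m: "keys m \<subseteq> insert 0 B" and m': "keys m' \<subseteq> insert 0 B"
      let ?e = "X (r0 m) :: 'a mpoly" and ?e' = "X (r0 m') :: 'a mpoly"
      let ?g = "X (rB m) :: 'a mpoly" and ?g' = "X (rB m') :: 'a mpoly"
      have e: "?e \<in> polys_in {0}" "?e' \<in> polys_in {0}" using keys_r0 by (auto intro: polys_in_single)
      have g: "?g \<in> polys_in B" "?g' \<in> polys_in B" using keys_rB[OF m] keys_rB[OF m'] by (auto intro: polys_in_single)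
      have "X m * X m' = (?e * ?e') * (?g * ?g')"
        unfolding X_r0_rB[of m, symmetric] X_r0_rB[of m', symmetric] by (simp add: ac_simps)
      then have "?D (X m * X m') = (?e * ?e') * \<theta> (?g * ?g')"
        using Dp e g by (simp add: polys_in_mult)
      also have "\<dots> = (?e * ?e') * (?g * \<theta> ?g' + ?g' * \<theta> ?g)"
        using derivationsD(5)[OF th g] by simp
      also have "\<dots> = (?e * ?g) * (?e' * \<theta> ?g') + (?e' * ?g') * (?e * \<theta> ?g)"
        by (simp add: algebra_simps)
      also have "\<dots> = X m * ?D (X m') + X m' * ?D (X m)"
        by (simp only: DX[OF m] DX[OF m'] X_r0_rB)
      finally show "?D (X m * X m') = X m * ?D (X m') + X m' * ?D (X m)" .
    qed
  qed
qed

end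

lemma lookup_tsmult: "lookup (tsmult c \<phi>) x = c * lookup \<phi> x"
  unfolding tsmult_def by (simp add: lookup_map0)

lemma keys_tsmult: "keys (tsmult c \<phi>) \<subseteq> keys \<phi>"
  by (auto simp: in_keys_iff lookup_tsmult)

lemma tsmult_neg: "tsmult (-1) \<phi> = - \<phi>"
  by (rule poly_mapping_eqI) (simp add: lookup_tsmult)

lemma tsmult_add: "tsmult c (\<phi> + \<psi>) = tsmult c \<phi> + tsmult c \<psi>"
  by (rule poly_mapping_eqI) (simp add: lookup_tsmult lookup_add distrib_left)

lemma tsmult_tsmult: "tsmult c (tsmult d \<phi>) = tsmult (c * d) \<phi>"
  by (rule poly_mapping_eqI) (simp add: lookup_tsmult)

lemma tsmult_zero [simp]: "tsmult c 0 = 0"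
  by (rule poly_mapping_eqI) (simp add: lookup_tsmult)

lemma tsmult_0 [simp]: "tsmult 0 \<phi> = 0"
  by (rule poly_mapping_eqI) (simp add: lookup_tsmult)

lemma tsmult_1 [simp]: "tsmult 1 \<phi> = \<phi>"
  by (rule poly_mapping_eqI) (simp add: lookup_tsmult)

lemma lookup_tgen: "lookup (tgen a b) x = (if x = (a, b) then 1 else 0)"
  unfolding tgen_def by (simp add: lookup_single when_def eq_commute)

lemma keys_tgen: "keys (tgen a b) = {(a, b)}"
  unfolding tgen_def by simp

lemma tfree_zero [simp]: "0 \<in> tfree A B"
  unfolding tfree_def by simp

lemma tfree_add: "\<phi> \<in> tfree A B \<Longrightarrow> \<psi> \<in> tfree A B \<Longrightarrow> \<phi> + \<psi> \<in> tfree A B"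
  unfolding tfree_def mem_Collect_eq using keys_add[of \<phi> \<psi>] by (rule order_trans) simp

lemma tfree_tsmult: "\<phi> \<in> tfree A B \<Longrightarrow> tsmult c \<phi> \<in> tfree A B"
  unfolding tfree_def mem_Collect_eq using keys_tsmult[of c \<phi>] by (rule order_trans)

lemma tfree_uminus: "\<phi> \<in> tfree A B \<Longrightarrow> - \<phi> \<in> tfree A B"
  unfolding tfree_def by (simp add: keys_minus)

lemma tfree_diff: "\<phi> \<in> tfree A B \<Longrightarrow> \<psi> \<in> tfree A B \<Longrightarrow> \<phi> - \<psi> \<in> tfree A B"
proof -
  assume "\<phi> \<in> tfree A B" "\<psi> \<in> tfree A B"
  then have "\<phi> + (- \<psi>) \<in> tfree A B" by (intro tfree_add tfree_uminus)
  then show ?thesis by simp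
qed

lemma tfree_tgen: "a \<in> A \<Longrightarrow> b \<in> B \<Longrightarrow> tgen a b \<in> tfree A B"
  unfolding tfree_def by (simp add: keys_tgen)

lemma tfree_sum: "(\<And>i. i \<in> K \<Longrightarrow> f i \<in> tfree A B) \<Longrightarrow> sum f K \<in> tfree A B"
  by (induct K rule: infinite_finite_induct) (auto intro: tfree_add)

lemma tfree_mono: "\<phi> \<in> tfree A B \<Longrightarrow> B \<subseteq> B' \<Longrightarrow> \<phi> \<in> tfree A B'"
  unfolding tfree_def mem_Collect_eq by (erule order_trans) auto

lemma trel_diff: "\<phi> \<in> trel A B \<Longrightarrow> \<psi> \<in> trel A B \<Longrightarrow> \<phi> - \<psi> \<in> trel A B"
proof -
  assume "\<phi> \<in> trel A B" "\<psi> \<in> trel A B"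
  then have "\<phi> + tsmult (-1) \<psi> \<in> trel A B" by (intro trel.sum trel.scal)
  then show ?thesis by (simp add: tsmult_neg)
qed

lemma trel_sum: "(\<And>i. i \<in> K \<Longrightarrow> f i \<in> trel A B) \<Longrightarrow> sum f K \<in> trel A B"
  by (induct K rule: infinite_finite_induct) (auto intro: trel.sum trel.zero)

lemma trel_tfree:
  assumes "\<phi> \<in> trel A B"
    and A: "\<And>a a'. a \<in> A \<Longrightarrow> a' \<in> A \<Longrightarrow> op_add a a' \<in> A" "\<And>a c. a \<in> A \<Longrightarrow> op_smult c a \<in> A"
    and B: "\<And>b b'. b \<in> B \<Longrightarrow> b' \<in> B \<Longrightarrow> op_add b b' \<in> B" "\<And>b c. b \<in> B \<Longrightarrow> op_smult c b \<in> B"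
  shows "\<phi> \<in> tfree A B"
  using assms(1)
proof (induct rule: trel.induct)
  case zero then show ?case by simp
next
  case (addl a a' b) then show ?case using A B by (intro tfree_diff tfree_tgen) auto
next
  case (addr a b b') then show ?case using A B by (intro tfree_diff tfree_tgen) auto
next
  case (smultl a b c) then show ?case using A B by (intro tfree_diff tfree_tgen tfree_tsmult) auto
next
  case (smultr a b c) then show ?case using A B by (intro tfree_diff tfree_tgen tfree_tsmult) auto
next
  case (sum \<phi> \<psi>) then show ?case by (intro tfree_add)
next
  case (scal \<phi> c) then show ?case by (intro tfree_tsmult)
qed

lemma tfree_expand: "\<phi> = (\<Sum>x\<in>keys \<phi>. tsmult (lookup \<phi> x) (tgen (fst x) (snd x)))"
proof (rule poly_mapping_eqI)
  fix k
  have "lookup (\<Sum>x\<in>keys \<phi>. tsmult (lookup \<phi> x) (tgen (fst x) (snd x))) k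
      = (\<Sum>x\<in>keys \<phi>. if x = k then lookup \<phi> x else 0)"
    unfolding lookup_sum lookup_tsmult lookup_tgen by (intro sum.cong) auto
  also have "\<dots> = lookup \<phi> k" by (simp add: in_keys_iff)
  finally show "lookup \<phi> k = lookup (\<Sum>x\<in>keys \<phi>. tsmult (lookup \<phi> x) (tgen (fst x) (snd x))) k" by simp
qed

lemma opsum_empty [simp]: "opsum {} f = (\<lambda>_. 0)"
  by (simp add: opsum_def)

lemma opsum_insert: "finite K \<Longrightarrow> x \<notin> K \<Longrightarrow> opsum (insert x K) f = op_add (f x) (opsum K f)"
  by (simp add: opsum_def op_add_def)

lemma opsum_comp_right: "opsum K f \<circ> G = opsum K (\<lambda>i. f i \<circ> G)"
  by (simp add: opsum_def fun_eq_iff)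

lemma op_smult_comp_right: "op_smult c P \<circ> G = op_smult c (P \<circ> G)"
  by (simp add: op_smult_def fun_eq_iff)

lemma opsum_comp_left:
  assumes "linop (polys_in I) L" "finite K" "\<And>i q. i \<in> K \<Longrightarrow> f i q \<in> polys_in I"
  shows "L \<circ> opsum K f = opsum K (\<lambda>i. L \<circ> f i)"
  unfolding opsum_def comp_def fun_eq_iff
proof
  fix q show "L (\<Sum>i\<in>K. f i q) = (\<Sum>i\<in>K. L (f i q))"
    by (rule addhom_sum[OF linopD(3)[OF assms(1)] assms(2)]) (rule assms(3))
qed

lemma op_smult_comp_left:
  assumes "linop (polys_in I) L" "\<And>q. P q \<in> polys_in I"
  shows "L \<circ> op_smult c P = op_smult c (L \<circ> P)"
  unfolding op_smult_def comp_def fun_eq_iff using linop_smult[OF assms(1) assms(2)] by simp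

lemma op_smult_zero [simp]: "op_smult 0 P = (\<lambda>_. 0)"
  by (simp add: op_smult_def)

lemma op_smult_one [simp]: "op_smult 1 P = P"
  by (simp add: op_smult_def)

lemma opsum_cong: "(\<And>i. i \<in> K \<Longrightarrow> f i = g i) \<Longrightarrow> opsum K f = opsum K g"
  by (simp add: opsum_def)

lemma opsum_superset:
  assumes "finite K'" "K \<subseteq> K'" "\<And>i. i \<in> K' - K \<Longrightarrow> f i = (\<lambda>_. 0)"
  shows "opsum K f = opsum K' f"
  unfolding opsum_def fun_eq_iff
proof
  fix q show "(\<Sum>i\<in>K. f i q) = (\<Sum>i\<in>K'. f i q)"
    by (rule sum.mono_neutral_left) (use assms in auto)
qed

lemma diff_ops_zero: "(\<lambda>_. 0) \<in> diff_ops (polys_in I)"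
proof -
  have "op_smult 0 (mult_op (polys_in I) 1) \<in> diff_ops (polys_in I)"
    by (intro diff_ops.smult diff_ops.mult) simp
  then show ?thesis by simp
qed

lemma diff_ops_opsum:
  "(\<And>i. i \<in> K \<Longrightarrow> f i \<in> diff_ops (polys_in I)) \<Longrightarrow> opsum K f \<in> diff_ops (polys_in I)"
proof (induct K rule: infinite_finite_induct)
  case (infinite K) then show ?case by (simp add: opsum_def diff_ops_zero)
next
  case empty then show ?case by (simp add: diff_ops_zero)
next
  case (insert x F) then show ?case by (simp add: opsum_insert diff_ops.add)
qed

definition Psi0 :: "nat set \<Rightarrow> (('k op \<times> 'k op) \<Rightarrow>\<^sub>0 'k::comm_ring_1) \<Rightarrow> 'k op" where
  "Psi0 B \<phi> = opsum (keys \<phi>) (\<lambda>x. op_smult (lookup \<phi> x) (T B (fst x) (snd x)))"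

lemma Psi0_superset:
  assumes "finite K" "keys \<phi> \<subseteq> K"
  shows "Psi0 B \<phi> = opsum K (\<lambda>x. op_smult (lookup \<phi> x) (T B (fst x) (snd x)))"
  unfolding Psi0_def by (rule opsum_superset) (use assms in \<open>auto simp: in_keys_iff\<close>)

lemma Psi0_add: "Psi0 B (\<phi> + \<psi>) = op_add (Psi0 B \<phi>) (Psi0 B \<psi>)"
proof -
  let ?K = "keys \<phi> \<union> keys \<psi>"
  have "Psi0 B (\<phi> + \<psi>) = opsum ?K (\<lambda>x. op_smult (lookup (\<phi> + \<psi>) x) (T B (fst x) (snd x)))"
    by (rule Psi0_superset) (auto dest: keys_add[THEN subsetD])
  moreover have "Psi0 B \<phi> = opsum ?K (\<lambda>x. op_smult (lookup \<phi> x) (T B (fst x) (snd x)))"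
    by (rule Psi0_superset) auto
  moreover have "Psi0 B \<psi> = opsum ?K (\<lambda>x. op_smult (lookup \<psi> x) (T B (fst x) (snd x)))"
    by (rule Psi0_superset) auto
  ultimately show ?thesis
    by (simp add: opsum_def op_add_def op_smult_def lookup_add mconst_add distrib_right sum.distrib)
qed

lemma Psi0_tsmult: "Psi0 B (tsmult c \<phi>) = op_smult c (Psi0 B \<phi>)"
proof -
  have "Psi0 B (tsmult c \<phi>) = opsum (keys \<phi>) (\<lambda>x. op_smult (lookup (tsmult c \<phi>) x) (T B (fst x) (snd x)))"
    by (rule Psi0_superset) (auto simp: keys_tsmult)
  then show ?thesis
    by (simp add: Psi0_def opsum_def op_smult_def lookup_tsmult mconst_mult sum_distrib_left mult.assoc)
qed

lemma Psi0_zero [simp]: "Psi0 B 0 = (\<lambda>_. 0)"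
  by (simp add: Psi0_def)

lemma Psi0_tgen: "Psi0 B (tgen a b) = T B a b"
  by (simp add: Psi0_def keys_tgen lookup_tgen opsum_def)

lemma Psi0_uminus: "Psi0 B (- \<phi>) = (\<lambda>q. - Psi0 B \<phi> q)"
  using Psi0_tsmult[of B "-1" \<phi>] by (simp add: tsmult_neg op_smult_def mconst_uminus)

lemma Psi0_diff: "Psi0 B (\<phi> - \<psi>) = (\<lambda>q. Psi0 B \<phi> q - Psi0 B \<psi> q)"
  by (simp add: diff_conv_add_uminus Psi0_add Psi0_uminus op_add_def del: add_uminus_conv_diff)

lemma Psi0_sum: "finite K \<Longrightarrow> Psi0 B (sum f K) = opsum K (\<lambda>i. Psi0 B (f i))"
  by (induct K rule: finite_induct) (simp_all add: Psi0_add opsum_insert)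

lemma Psi0_trel: 
  assumes B0: "0 \<notin> B" and "\<phi> \<in> trel A C" shows "Psi0 B \<phi> = (\<lambda>_. 0)"
  using assms(2)
proof (induct rule: trel.induct)
  case zero then show ?case by simp
next
  case (addl a a' b) then show ?case
    by (simp add: Psi0_diff Psi0_tgen T_add_left[OF B0]) (simp add: op_add_def)
next
  case (addr a b b') then show ?case
    by (simp add: Psi0_diff Psi0_tgen T_add_right[OF B0]) (simp add: op_add_def)
next
  case (smultl a b c) then show ?case
    by (simp add: Psi0_diff Psi0_tgen T_smult_left[OF B0] Psi0_tsmult)
next
  case (smultr a b c) then show ?case
    by (simp add: Psi0_diff Psi0_tgen T_smult_right[OF B0] Psi0_tsmult)
next
  case (sum \<phi> \<psi>) then show ?case by (simp add: Psi0_add op_add_def)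
next
  case (scal \<phi> c) then show ?case by (simp add: Psi0_tsmult op_smult_def)
qed

lemma linop_id1: "linop (polys_in I) (mult_op (polys_in I) 1)"
  by (rule linop_mult_op) simp

lemma comp_id_right:
  assumes "linop (polys_in I) a" shows "a \<circ> mult_op (polys_in I) 1 = a"
  unfolding fun_eq_iff comp_def mult_op_def using linop_zero[OF assms] linopD(2)[OF assms] by auto

lemma comp_id_left:
  assumes "linop (polys_in I) a" shows "mult_op (polys_in I) 1 \<circ> a = a"
  unfolding fun_eq_iff comp_def mult_op_def using linopD(1)[OF assms] linopD(2)[OF assms] by auto

lemma diff_ops_linop: "P \<in> diff_ops (polys_in I) \<Longrightarrow> linop (polys_in I) P"
  by (rule linop_diff_ops)

context
  fixes B :: "nat set"
  assumes B0: "0 \<notin> B"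
begin

lemma T_left_diff_ops:
  assumes "a \<in> diff_ops (polys_in {0})"
  shows "T B a (mult_op (polys_in B) 1) \<in> diff_ops (polys_in (insert 0 B))"
  using assms
proof (induct rule: diff_ops.induct)
  case (der \<theta>) then show ?case using T_der_left[OF B0] by (blast intro: diff_ops.der)
next
  case (mult p)
  have "T B (mult_op (polys_in {0}) p) (mult_op (polys_in B) 1) = mult_op (polys_in (insert 0 B)) (p * 1)"
    using T_mult[OF B0 mult] by simp
  then show ?case using mult by (simp add: S0_SS[OF B0] diff_ops.mult)
next
  case (add P R) then show ?case by (simp add: T_add_left[OF B0] diff_ops.add)
next
  case (smult P c) then show ?case by (simp add: T_smult_left[OF B0] diff_ops.smult)
next
  case (comp P R)
  have eq: "T B (P \<circ> R) (mult_op (polys_in B) 1) =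
      T B P (mult_op (polys_in B) 1) \<circ> T B R (mult_op (polys_in B) 1)"
    using T_comp[OF B0 diff_ops_linop[OF comp(1)] diff_ops_linop[OF comp(3)] linop_id1 linop_id1]
    by (simp add: comp_id_left[OF linop_id1])
  show ?case unfolding eq by (rule diff_ops.comp[OF comp(2) comp(4)])
qed

lemma T_right_diff_ops:
  assumes "b \<in> diff_ops (polys_in B)"
  shows "T B (mult_op (polys_in {0}) 1) b \<in> diff_ops (polys_in (insert 0 B))"
  using assms
proof (induct rule: diff_ops.induct)
  case (der \<theta>) then show ?case using T_der_right[OF B0] by (blast intro: diff_ops.der)
next
  case (mult p)
  have "T B (mult_op (polys_in {0}) 1) (mult_op (polys_in B) p) = mult_op (polys_in (insert 0 B)) (1 * p)"
    using T_mult[OF B0 _ mult] by simp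
  then show ?case using mult by (simp add: SB_SS[OF B0] diff_ops.mult)
next
  case (add P R) then show ?case by (simp add: T_add_right[OF B0] diff_ops.add)
next
  case (smult P c) then show ?case by (simp add: T_smult_right[OF B0] diff_ops.smult)
next
  case (comp P R)
  have eq: "T B (mult_op (polys_in {0}) 1) (P \<circ> R) =
      T B (mult_op (polys_in {0}) 1) P \<circ> T B (mult_op (polys_in {0}) 1) R"
    using T_comp[OF B0 linop_id1 linop_id1 diff_ops_linop[OF comp(1)] diff_ops_linop[OF comp(3)]]
    by (simp add: comp_id_left[OF linop_id1])
  show ?case unfolding eq by (rule diff_ops.comp[OF comp(2) comp(4)])
qed

lemma T_diff_ops:
  assumes a: "a \<in> diff_ops (polys_in {0})" and b: "b \<in> diff_ops (polys_in B)"
  shows "T B a b \<in> diff_ops (polys_in (insert 0 B))"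
proof -
  have la: "linop (polys_in {0}) a" and lb: "linop (polys_in B) b"
    using a b by (auto intro!: diff_ops_linop)
  have "T B a (mult_op (polys_in B) 1) \<circ> T B (mult_op (polys_in {0}) 1) b = T B a b"
    using T_comp[OF B0 la linop_id1 linop_id1 lb] by (simp add: comp_id_right[OF la] comp_id_left[OF lb])
  then show ?thesis
    using T_left_diff_ops[OF a] T_right_diff_ops[OF b] diff_ops.comp by metis
qed

lemma Psi0_in_SS:
  assumes "\<phi> \<in> tfree (diff_ops (polys_in {0})) (diff_ops (polys_in B))"
  shows "Psi0 B \<phi> q \<in> polys_in (insert 0 B)"
proof -
  have k: "\<And>x. x \<in> keys \<phi> \<Longrightarrow> fst x \<in> diff_ops (polys_in {0}) \<and> snd x \<in> diff_ops (polys_in B)"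
    using assms unfolding tfree_def by auto
  have "\<And>x. x \<in> keys \<phi> \<Longrightarrow> T B (fst x) (snd x) q \<in> polys_in (insert 0 B)"
    using k by (intro T_in[OF B0] diff_ops_linop) auto
  then show ?thesis unfolding Psi0_def opsum_def op_smult_def by (intro polys_in_sum polys_in_mconst_mult)
qed

lemma Psi0_diff_ops:
  assumes "\<phi> \<in> tfree (diff_ops (polys_in {0})) (diff_ops (polys_in B))"
  shows "Psi0 B \<phi> \<in> diff_ops (polys_in (insert 0 B))"
  unfolding Psi0_def using assms unfolding tfree_def
  by (intro diff_ops_opsum diff_ops.smult T_diff_ops) auto

abbreviation Img :: "'k::comm_ring_1 op set" where
  "Img \<equiv> Psi0 B ` tfree (diff_ops (polys_in {0})) (diff_ops (polys_in B))"

lemma Img_T: "a \<in> diff_ops (polys_in {0}) \<Longrightarrow> b \<in> diff_ops (polys_in B) \<Longrightarrow> T B a b \<in> Img"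
proof -
  assume "a \<in> diff_ops (polys_in {0})" "b \<in> diff_ops (polys_in B)"
  then have "tgen a b \<in> tfree (diff_ops (polys_in {0})) (diff_ops (polys_in B))" by (rule tfree_tgen)
  then have "Psi0 B (tgen a b) \<in> Img" by (rule imageI)
  then show ?thesis by (simp only: Psi0_tgen)
qed

lemma Img_add: "P \<in> Img \<Longrightarrow> R \<in> Img \<Longrightarrow> op_add P R \<in> Img"
proof -
  assume "P \<in> Img" "R \<in> Img"
  then obtain \<phi> \<psi> where "\<phi> \<in> tfree (diff_ops (polys_in {0})) (diff_ops (polys_in B))" "P = Psi0 B \<phi>"
    "\<psi> \<in> tfree (diff_ops (polys_in {0})) (diff_ops (polys_in B))" "R = Psi0 B \<psi>" by blast
  then show ?thesis using Psi0_add[of B \<phi> \<psi>] tfree_add[of \<phi> _ _ \<psi>] by (metis imageI)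
qed

lemma Img_smult: "P \<in> Img \<Longrightarrow> op_smult c P \<in> Img"
proof -
  assume "P \<in> Img"
  then obtain \<phi> where "\<phi> \<in> tfree (diff_ops (polys_in {0})) (diff_ops (polys_in B))" "P = Psi0 B \<phi>" by blast
  then show ?thesis using Psi0_tsmult[of B c \<phi>] tfree_tsmult[of \<phi> _ _ c] by (metis imageI)
qed

lemma Img_zero: "(\<lambda>_. 0) \<in> Img"
proof -
  have "Psi0 B 0 \<in> Img" by (rule imageI) simp
  then show ?thesis by simp
qed

lemma Img_opsum: "(\<And>i. i \<in> K \<Longrightarrow> f i \<in> Img) \<Longrightarrow> opsum K f \<in> Img"
proof (induct K rule: infinite_finite_induct)
  case (infinite K) then show ?case by (simp add: opsum_def Img_zero)
next
  case empty then show ?case by (simp add: Img_zero)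
next
  case (insert x F) then show ?case by (simp add: opsum_insert Img_add)
qed

lemma Img_comp:
  assumes P: "P \<in> Img" and R: "R \<in> Img"
  shows "P \<circ> R \<in> Img"
proof -
  obtain \<phi> where \<phi>: "\<phi> \<in> tfree (diff_ops (polys_in {0})) (diff_ops (polys_in B))" "P = Psi0 B \<phi>"
    using P by blast
  obtain \<psi> where \<psi>: "\<psi> \<in> tfree (diff_ops (polys_in {0})) (diff_ops (polys_in B))" "R = Psi0 B \<psi>"
    using R by blast
  have kphi: "\<And>x. x \<in> keys \<phi> \<Longrightarrow> fst x \<in> diff_ops (polys_in {0}) \<and> snd x \<in> diff_ops (polys_in B)"
    using \<phi>(1) unfolding tfree_def by auto
  have kpsi: "\<And>y. y \<in> keys \<psi> \<Longrightarrow> fst y \<in> diff_ops (polys_in {0}) \<and> snd y \<in> diff_ops (polys_in B)"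
    using \<psi>(1) unfolding tfree_def by auto
  have "P \<circ> R = opsum (keys \<phi>) (\<lambda>x. op_smult (lookup \<phi> x) (T B (fst x) (snd x) \<circ> R))"
    unfolding \<phi>(2) Psi0_def opsum_comp_right op_smult_comp_right ..
  also have "\<dots> \<in> Img"
  proof (intro Img_opsum Img_smult)
    fix x assume x: "x \<in> keys \<phi>"
    have lx: "linop (polys_in (insert 0 B)) (T B (fst x) (snd x))"
      using kphi[OF x] by (intro T_linop[OF B0]) (auto intro!: diff_ops_linop)
    have "T B (fst x) (snd x) \<circ> R =
        opsum (keys \<psi>) (\<lambda>y. op_smult (lookup \<psi> y) (T B (fst x) (snd x) \<circ> T B (fst y) (snd y)))"
      unfolding \<psi>(2) Psi0_def
    proof (subst opsum_comp_left[OF lx])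
      show "\<And>i q. i \<in> keys \<psi> \<Longrightarrow> op_smult (lookup \<psi> i) (T B (fst i) (snd i)) q \<in> polys_in (insert 0 B)"
        unfolding op_smult_def using kpsi
        by (intro polys_in_mconst_mult T_in[OF B0]) (auto intro!: diff_ops_linop)
      show "opsum (keys \<psi>) (\<lambda>i. T B (fst x) (snd x) \<circ> op_smult (lookup \<psi> i) (T B (fst i) (snd i))) =
          opsum (keys \<psi>) (\<lambda>y. op_smult (lookup \<psi> y) (T B (fst x) (snd x) \<circ> T B (fst y) (snd y)))"
        using kpsi by (intro opsum_cong op_smult_comp_left[OF lx] T_in[OF B0]) (auto intro!: diff_ops_linop)
    qed simp
    also have "\<dots> \<in> Img"
    proof (intro Img_opsum Img_smult)
      fix y assume y: "y \<in> keys \<psi>"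
      have "T B (fst x) (snd x) \<circ> T B (fst y) (snd y) = T B (fst x \<circ> fst y) (snd x \<circ> snd y)"
        using kphi[OF x] kpsi[OF y] by (intro T_comp[OF B0]) (auto intro!: diff_ops_linop)
      also have "\<dots> \<in> Img"
        using kphi[OF x] kpsi[OF y] by (intro Img_T diff_ops.comp) auto
      finally show "T B (fst x) (snd x) \<circ> T B (fst y) (snd y) \<in> Img" .
    qed
    finally show "T B (fst x) (snd x) \<circ> R \<in> Img" .
  qed
  finally show ?thesis .
qed

lemma mult_op_sum:
  assumes "finite K" "\<And>i. i \<in> K \<Longrightarrow> f i \<in> polys_in I"
  shows "mult_op (polys_in I) (sum f K) = opsum K (\<lambda>i. mult_op (polys_in I) (f i))"
  unfolding mult_op_def opsum_def fun_eq_iff by (simp add: sum_distrib_right)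

lemma mult_op_smult:
  "mult_op (polys_in I) (mconst c * p) = op_smult c (mult_op (polys_in I) p)"
  unfolding mult_op_def op_smult_def fun_eq_iff by (simp add: mult.assoc)

lemma Img_mult:
  fixes p :: "'k::comm_ring_1 mpoly"
  assumes p: "p \<in> polys_in (insert 0 B)"
  shows "mult_op (polys_in (insert 0 B)) p \<in> Img"
proof -
  have "mult_op (polys_in (insert 0 B)) p =
      mult_op (polys_in (insert 0 B)) (\<Sum>m\<in>keys p. mconst (lookup p m) * X m)"
    using poly_expand[of p] by simp
  also have "\<dots> = opsum (keys p) (\<lambda>m. mult_op (polys_in (insert 0 B)) (mconst (lookup p m) * X m))"
  proof (rule mult_op_sum)
    fix m assume "m \<in> keys p"
    then have "keys m \<subseteq> insert 0 B" using p by (simp add: polys_in_iff)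
    then show "mconst (lookup p m) * X m \<in> polys_in (insert 0 B)"
      by (intro polys_in_mconst_mult polys_in_single)
  qed simp
  also have "\<dots> = opsum (keys p) (\<lambda>m. op_smult (lookup p m) (mult_op (polys_in (insert 0 B)) (X m)))"
    by (simp add: mult_op_smult)
  also have "\<dots> \<in> Img"
  proof (intro Img_opsum Img_smult)
    fix m assume "m \<in> keys p"
    then have m: "keys m \<subseteq> insert 0 B" using p by (simp add: polys_in_iff)
    have e: "(X (r0 m) :: 'k mpoly) \<in> polys_in {0}" using keys_r0 by (auto intro: polys_in_single)
    have g: "(X (rB m) :: 'k mpoly) \<in> polys_in B" using keys_rB[OF m] by (auto intro: polys_in_single)
    have "mult_op (polys_in (insert 0 B)) (X m :: 'k mpoly) = T B (mult_op (polys_in {0}) (X (r0 m))) (mult_op (polys_in B) (X (rB m)))"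
      using T_mult[OF B0 e g] by (simp add: X_r0_rB)
    also have "\<dots> \<in> Img" using e g by (intro Img_T diff_ops.mult)
    finally show "mult_op (polys_in (insert 0 B)) (X m :: 'k mpoly) \<in> Img" .
  qed
  finally show ?thesis .
qed

definition Dpd :: "nat \<Rightarrow> 'k::comm_ring_1 op" where
  "Dpd i = (if i = 0 then T B (pd {0} 0) (mult_op (polys_in B) 1) else T B (mult_op (polys_in {0}) 1) (pd B i))"

lemma Dpd_der: "Dpd i \<in> derivations (polys_in (insert 0 B))"
proof (cases "i = 0")
  case True then show ?thesis unfolding Dpd_def using T_der_left[OF B0 pd_derivation] by simp
next
  case False then show ?thesis unfolding Dpd_def using T_der_right[OF B0 pd_derivation] by simp
qed

lemma Dpd_Img: "Dpd i \<in> Img"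
proof (cases "i = 0")
  case True 
  have "T B (pd {0} 0) (mult_op (polys_in B) 1) \<in> Img"
    by (intro Img_T diff_ops.der diff_ops.mult pd_derivation) simp
  then show ?thesis using True unfolding Dpd_def by simp
next
  case False
  have "T B (mult_op (polys_in {0}) 1) (pd B i) \<in> Img"
    by (intro Img_T diff_ops.der diff_ops.mult pd_derivation) simp
  then show ?thesis using False unfolding Dpd_def by simp
qed

lemma Dpd_mvar:
  assumes i: "i \<in> insert 0 B" and j: "j \<in> insert 0 B"
  shows "Dpd i (mvar j) = (if i = j then 1 else (0 :: 'a::comm_ring_1 mpoly))"
proof -
  have l0: "linop (polys_in {0}) (pd {0} 0 :: 'a op)" by (rule linop_derivation[OF pd_derivation])
  have lB: "linop (polys_in B) (pd B i :: 'a op)" by (rule linop_derivation[OF pd_derivation])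
  have m0: "(mvar 0 :: 'a mpoly) \<in> polys_in {0}" by (rule polys_in_mvar) simp
  have o0: "(1::'a mpoly) \<in> polys_in {0}" and oB: "(1::'a mpoly) \<in> polys_in B" by simp_all
  have p00: "pd {0} 0 (1::'a mpoly) = 0" and pB0: "pd B i (1::'a mpoly) = 0"
    using der_one[OF pd_derivation] by blast+
  have id1: "mult_op (polys_in B) 1 (1::'a mpoly) = 1" "mult_op (polys_in {0}) 1 (1::'a mpoly) = 1"
    by (simp_all add: mult_op_def)
  show ?thesis
  proof (cases "j = 0")
    case True
    have e: "mvar j = mvar 0 * (1 :: 'a mpoly)" using True by simp
    show ?thesis
    proof (cases "i = 0")
      case True
      have "Dpd i (mvar j) = T B (pd {0} 0) (mult_op (polys_in B) 1) (mvar 0 * (1 :: 'a mpoly))"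
        unfolding e Dpd_def using True by simp
      also have "\<dots> = pd {0} 0 (mvar 0) * mult_op (polys_in B) 1 1"
        by (rule T_prod[OF B0 l0 linop_id1 m0 oB])
      also have "\<dots> = 1" unfolding id1 by (simp add: pd_mvar)
      finally show ?thesis using True \<open>j = 0\<close> by simp
    next
      case False
      have "Dpd i (mvar j) = T B (mult_op (polys_in {0}) 1) (pd B i) (mvar 0 * (1 :: 'a mpoly))"
        unfolding e Dpd_def using False by simp
      also have "\<dots> = mult_op (polys_in {0}) 1 (mvar 0) * pd B i 1"
        by (rule T_prod[OF B0 linop_id1 lB m0 oB])
      also have "\<dots> = 0" unfolding pB0 by simp
      finally show ?thesis using False \<open>j = 0\<close> by simp
    qed
  next
    case False
    then have jB: "j \<in> B" using j by simp
    then have mj: "(mvar j :: 'a mpoly) \<in> polys_in B" by (rule polys_in_mvar)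
    have e: "mvar j = (1 :: 'a mpoly) * mvar j" by simp
    show ?thesis
    proof (cases "i = 0")
      case True
      have "Dpd i (mvar j) = T B (pd {0} 0) (mult_op (polys_in B) 1) ((1 :: 'a mpoly) * mvar j)"
        unfolding Dpd_def using True by simp
      also have "\<dots> = pd {0} 0 1 * mult_op (polys_in B) 1 (mvar j)"
        by (rule T_prod[OF B0 l0 linop_id1 o0 mj])
      also have "\<dots> = 0" unfolding p00 by simp
      finally show ?thesis using True \<open>j \<noteq> 0\<close> by simp
    next
      case False
      have "Dpd i (mvar j) = T B (mult_op (polys_in {0}) 1) (pd B i) ((1 :: 'a mpoly) * mvar j)"
        unfolding Dpd_def using False by simp
      also have "\<dots> = mult_op (polys_in {0}) 1 1 * pd B i (mvar j)"
        by (rule T_prod[OF B0 linop_id1 lB o0 mj])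
      also have "\<dots> = (if i = j then 1 else 0)" unfolding id1 using jB by (simp add: pd_mvar)
      finally show ?thesis .
    qed
  qed
qed

lemma Img_der:
  assumes finB: "finite B" and th: "\<theta> \<in> derivations (polys_in (insert 0 B))"
  shows "\<theta> \<in> Img"
proof -
  have "\<theta> = (\<lambda>q. \<Sum>i\<in>insert 0 B. mult_op (polys_in (insert 0 B)) (\<theta> (mvar i)) (Dpd i q))"
  proof (rule derivations_decompose)
    show "finite (insert 0 B)" using finB by simp
    show "\<theta> \<in> derivations (polys_in (insert 0 B))" by (rule th)
    show "\<And>i. i \<in> insert 0 B \<Longrightarrow> Dpd i \<in> derivations (polys_in (insert 0 B))" by (rule Dpd_der)
    show "\<And>i j. i \<in> insert 0 B \<Longrightarrow> j \<in> insert 0 B \<Longrightarrow> Dpd i (mvar j) = (if i = j then 1 else 0)"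
      by (rule Dpd_mvar)
  qed
  also have "\<dots> = opsum (insert 0 B) (\<lambda>i. mult_op (polys_in (insert 0 B)) (\<theta> (mvar i)) \<circ> Dpd i)"
    by (simp add: opsum_def comp_def)
  also have "\<dots> \<in> Img"
    using derivationsD(1)[OF th]
    by (intro Img_opsum Img_comp Img_mult Dpd_Img polys_in_mvar) auto
  finally show ?thesis .
qed

lemma diff_ops_Img:
  assumes finB: "finite B" and P: "P \<in> diff_ops (polys_in (insert 0 B))"
  shows "P \<in> Img"
  using P
proof (induct rule: diff_ops.induct)
  case (der \<theta>) then show ?case by (rule Img_der[OF finB])
next
  case (mult p) then show ?case by (rule Img_mult)
next
  case (add P R) show ?case by (rule Img_add[OF add(2) add(4)])
next
  case (smult P c) show ?case by (rule Img_smult[OF smult(2)])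
next
  case (comp P R) show ?case by (rule Img_comp[OF comp(2) comp(4)])
qed

lemma Img_eq: "finite B \<Longrightarrow> Img = diff_ops (polys_in (insert 0 B))"
  using diff_ops_Img Psi0_diff_ops by blast

end

section \<open>Dual functionals\<close>

definition Lf :: "(('x \<Rightarrow> 'k::field) \<Rightarrow> 'k) set" where
  "Lf = {\<Lambda>. \<exists>D w. finite D \<and> \<Lambda> = (\<lambda>g. \<Sum>x\<in>D. w x * g x)}"

lemma Lf_ev: "(\<lambda>g. g x0) \<in> Lf"
  unfolding Lf_def by (rule CollectI, rule exI[of _ "{x0}"], rule exI[of _ "\<lambda>_. 1"]) simp

lemma Lf_lin:
  assumes "\<Lambda>1 \<in> Lf" "\<Lambda>2 \<in> Lf"
  shows "(\<lambda>g. c1 * \<Lambda>1 g + c2 * \<Lambda>2 g) \<in> Lf"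
proof -
  obtain D1 w1 where 1: "finite D1" "\<Lambda>1 = (\<lambda>g. \<Sum>x\<in>D1. w1 x * g x)" using assms(1) unfolding Lf_def mem_Collect_eq by (elim exE conjE) blast
  obtain D2 w2 where 2: "finite D2" "\<Lambda>2 = (\<lambda>g. \<Sum>x\<in>D2. w2 x * g x)" using assms(2) unfolding Lf_def mem_Collect_eq by (elim exE conjE) blast
  let ?D = "D1 \<union> D2"
  let ?w = "\<lambda>x. c1 * (if x \<in> D1 then w1 x else 0) + c2 * (if x \<in> D2 then w2 x else 0)"
  have "(\<lambda>g. c1 * \<Lambda>1 g + c2 * \<Lambda>2 g) = (\<lambda>g. \<Sum>x\<in>?D. ?w x * g x)"
  proof
    fix g
    have s1: "(\<Sum>x\<in>?D. (if x \<in> D1 then w1 x else 0) * g x) = (\<Sum>x\<in>D1. w1 x * g x)"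
    proof -
      have "(\<Sum>x\<in>?D. (if x \<in> D1 then w1 x else 0) * g x) = (\<Sum>x\<in>?D. if x \<in> D1 then w1 x * g x else 0)"
        by (intro sum.cong) auto
      also have "\<dots> = (\<Sum>x\<in>?D \<inter> D1. w1 x * g x)"
        using 1(1) 2(1) by (simp add: sum.If_cases Int_def)
      also have "?D \<inter> D1 = D1" by blast
      finally show ?thesis .
    qed
    have s2: "(\<Sum>x\<in>?D. (if x \<in> D2 then w2 x else 0) * g x) = (\<Sum>x\<in>D2. w2 x * g x)"
    proof -
      have "(\<Sum>x\<in>?D. (if x \<in> D2 then w2 x else 0) * g x) = (\<Sum>x\<in>?D. if x \<in> D2 then w2 x * g x else 0)"
        by (intro sum.cong) auto
      also have "\<dots> = (\<Sum>x\<in>?D \<inter> D2. w2 x * g x)"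
        using 1(1) 2(1) by (simp add: sum.If_cases Int_def)
      also have "?D \<inter> D2 = D2" by blast
      finally show ?thesis .
    qed
    have "(\<Sum>x\<in>?D. ?w x * g x) = c1 * (\<Sum>x\<in>?D. (if x \<in> D1 then w1 x else 0) * g x)
        + c2 * (\<Sum>x\<in>?D. (if x \<in> D2 then w2 x else 0) * g x)"
      by (simp only: distrib_right sum.distrib sum_distrib_left mult.assoc)
    also have "\<dots> = c1 * \<Lambda>1 g + c2 * \<Lambda>2 g"
      unfolding 1(2) 2(2) s1 s2 ..
    finally show "c1 * \<Lambda>1 g + c2 * \<Lambda>2 g = (\<Sum>x\<in>?D. ?w x * g x)" by simp
  qed
  then show ?thesis unfolding Lf_def
    by (intro CollectI exI[of _ ?D] exI[of _ ?w] conjI) (use 1(1) 2(1) in simp_all)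
qed

lemma Lf_zero: "(\<lambda>g. 0) \<in> Lf"
  unfolding Lf_def by (rule CollectI, rule exI[of _ "{}"]) simp

lemma Lf_sum:
  assumes "finite F" "\<And>a. a \<in> F \<Longrightarrow> L a \<in> Lf"
  shows "(\<lambda>g. \<Sum>a\<in>F. c a * L a g) \<in> Lf"
  using assms
proof (induct F rule: finite_induct)
  case empty then show ?case by (simp add: Lf_zero)
next
  case (insert a F)
  have "(\<lambda>g. 1 * (c a * L a g) + 1 * (\<Sum>a\<in>F. c a * L a g)) \<in> Lf"
  proof (rule Lf_lin)
    show "(\<lambda>g. c a * L a g) \<in> Lf" using Lf_lin[OF insert(4)[of a] Lf_zero, of "c a" 0] by simp
    show "(\<lambda>g. \<Sum>a\<in>F. c a * L a g) \<in> Lf" using insert by simp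
  qed
  then show ?case using insert by simp
qed

definition indep_fam :: "'i set \<Rightarrow> ('i \<Rightarrow> 'x \<Rightarrow> 'k::field) \<Rightarrow> bool" where
  "indep_fam F h \<longleftrightarrow> (\<forall>c. (\<forall>x. (\<Sum>a\<in>F. c a * h a x) = 0) \<longrightarrow> (\<forall>a\<in>F. c a = 0))"

lemma indep_fam_subset:
  assumes "indep_fam (insert a' F) h" "a' \<notin> F" "finite F"
  shows "indep_fam F h"
  unfolding indep_fam_def
proof (intro allI impI ballI)
  fix c a assume c: "\<forall>x. (\<Sum>a\<in>F. c a * h a x) = 0" and a: "a \<in> F"
  let ?c = "c(a' := 0)"
  have "\<forall>x. (\<Sum>b\<in>insert a' F. ?c b * h b x) = 0"
  proof
    fix x
    have "(\<Sum>b\<in>insert a' F. ?c b * h b x) = (\<Sum>b\<in>F. ?c b * h b x)" using assms by simp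
    also have "\<dots> = (\<Sum>b\<in>F. c b * h b x)" using assms(2) by (intro sum.cong) auto
    finally show "(\<Sum>b\<in>insert a' F. ?c b * h b x) = 0" using c by simp
  qed
  then have "?c a = 0" using assms(1) a unfolding indep_fam_def by blast
  then show "c a = 0" using a assms(2) by (auto split: if_splits)
qed

lemma dual_exists:
  fixes h :: "'i \<Rightarrow> 'x \<Rightarrow> 'k::field"
  assumes "finite F" "indep_fam F h"
  shows "\<forall>a0\<in>F. \<exists>\<Lambda>\<in>Lf. \<forall>a\<in>F. \<Lambda> (h a) = (if a = a0 then 1 else 0)"
  using assms
proof (induct F rule: finite_induct)
  case empty then show ?case by simp
next
  case (insert a' F)
  have indF: "indep_fam F h" using indep_fam_subset[OF insert(4) insert(2) insert(1)] .
  have "\<forall>a0\<in>F. \<exists>\<Lambda>. \<Lambda> \<in> Lf \<and> (\<forall>a\<in>F. \<Lambda> (h a) = (if a = a0 then 1 else 0))"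
    using insert(3)[OF indF] by blast
  from bchoice[OF this] obtain L where L0: "\<forall>a0\<in>F. L a0 \<in> Lf \<and> (\<forall>a\<in>F. L a0 (h a) = (if a = a0 then 1 else 0))"
    by blast
  have L: "\<And>a0. a0 \<in> F \<Longrightarrow> L a0 \<in> Lf"
    "\<And>a0 a. a0 \<in> F \<Longrightarrow> a \<in> F \<Longrightarrow> L a0 (h a) = (if a = a0 then 1 else 0)"
    using L0 by blast+
  define v where "v x = h a' x - (\<Sum>a\<in>F. L a (h a') * h a x)" for x
  have "\<exists>x0. v x0 \<noteq> 0"
  proof (rule ccontr)
    assume "\<not> (\<exists>x0. v x0 \<noteq> 0)"
    then have v0: "\<And>x. v x = 0" by blast
    let ?c = "\<lambda>a. if a = a' then 1 else - L a (h a')"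
    have "\<forall>x. (\<Sum>a\<in>insert a' F. ?c a * h a x) = 0"
    proof
      fix x
      have "(\<Sum>a\<in>insert a' F. ?c a * h a x) = h a' x + (\<Sum>a\<in>F. ?c a * h a x)"
        using insert(1,2) by simp
      also have "(\<Sum>a\<in>F. ?c a * h a x) = - (\<Sum>a\<in>F. L a (h a') * h a x)"
        using insert(2) by (simp add: sum_negf[symmetric]) (intro sum.cong, auto)
      finally show "(\<Sum>a\<in>insert a' F. ?c a * h a x) = 0" using v0[of x] unfolding v_def by simp
    qed
    have ind: "\<And>c. (\<forall>x. (\<Sum>a\<in>insert a' F. c a * h a x) = 0) \<Longrightarrow> \<forall>a\<in>insert a' F. c a = 0"
      using insert(4) unfolding indep_fam_def by blast
    have "\<forall>a\<in>insert a' F. ?c a = 0" by (rule ind) fact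
    then show False by simp
  qed
  then obtain x0 where x0: "v x0 \<noteq> 0" by blast
  define \<Lambda>' where "\<Lambda>' = (\<lambda>g. (1 / v x0) * (\<lambda>g. g x0) g + (- 1 / v x0) * (\<lambda>g. \<Sum>a\<in>F. h a x0 * L a g) g)"
  have \<Lambda>'Lf: "\<Lambda>' \<in> Lf"
    unfolding \<Lambda>'_def by (intro Lf_lin Lf_ev Lf_sum insert(1) L(1))
  have \<Lambda>'a': "\<Lambda>' (h a') = 1"
  proof -
    have "(\<Sum>a\<in>F. h a x0 * L a (h a')) = (\<Sum>a\<in>F. L a (h a') * h a x0)"
      by (simp add: mult.commute)
    then have "\<Lambda>' (h a') = (1 / v x0) * (h a' x0 - (\<Sum>a\<in>F. L a (h a') * h a x0))"
      unfolding \<Lambda>'_def by (simp add: algebra_simps)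
    also have "\<dots> = 1" using x0 unfolding v_def by simp
    finally show ?thesis .
  qed
  have \<Lambda>'F: "\<Lambda>' (h b) = 0" if b: "b \<in> F" for b
  proof -
    have "(\<Sum>a\<in>F. h a x0 * L a (h b)) = (\<Sum>a\<in>F. if a = b then h a x0 else 0)"
      using L(2) b by (intro sum.cong) auto
    also have "\<dots> = h b x0" using b insert(1) by simp
    finally show ?thesis unfolding \<Lambda>'_def by (simp add: algebra_simps)
  qed
  show ?case
  proof
    fix a0 assume a0: "a0 \<in> insert a' F"
    show "\<exists>\<Lambda>\<in>Lf. \<forall>a\<in>insert a' F. \<Lambda> (h a) = (if a = a0 then 1 else 0)"
    proof (cases "a0 = a'")
      case True
      show ?thesis using \<Lambda>'Lf \<Lambda>'a' \<Lambda>'F True insert(2) by (intro bexI[of _ \<Lambda>']) auto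
    next
      case False
      then have a0F: "a0 \<in> F" using a0 by simp
      let ?L = "\<lambda>g. 1 * L a0 g + (- L a0 (h a')) * \<Lambda>' g"
      have "?L \<in> Lf" by (intro Lf_lin L(1)[OF a0F] \<Lambda>'Lf)
      moreover have "\<forall>a\<in>insert a' F. ?L (h a) = (if a = a0 then 1 else 0)"
        using L(2)[OF a0F] \<Lambda>'a' \<Lambda>'F False insert(2) by auto
      ultimately show ?thesis by (intro bexI[of _ ?L])
    qed
  qed
qed

section \<open>Reduction modulo the tensor relations\<close>

definition indep_ops :: "'i set \<Rightarrow> ('i \<Rightarrow> 'k::comm_ring_1 op) \<Rightarrow> bool" where
  "indep_ops I fa \<longleftrightarrow> (\<forall>c. opsum I (\<lambda>i. op_smult (c i) (fa i)) = (\<lambda>_. 0) \<longrightarrow> (\<forall>i\<in>I. c i = 0))"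

locale opspaces =
  fixes A C :: "'k::field op set"
  assumes A_add: "a \<in> A \<Longrightarrow> a' \<in> A \<Longrightarrow> op_add a a' \<in> A"
    and A_smult: "a \<in> A \<Longrightarrow> op_smult c a \<in> A"
    and A_zero: "(\<lambda>_. 0) \<in> A"
    and C_add: "b \<in> C \<Longrightarrow> b' \<in> C \<Longrightarrow> op_add b b' \<in> C"
    and C_smult: "b \<in> C \<Longrightarrow> op_smult c b \<in> C"
    and C_zero: "(\<lambda>_. 0) \<in> C"
begin

lemma tgen_zero_left:
  assumes "b \<in> C" shows "tgen (\<lambda>_. 0) b \<in> trel A C"
  using trel.smultl[OF A_zero assms, where c=0] by simp

lemma tgen_zero_right:
  assumes "a \<in> A" shows "tgen a (\<lambda>_. 0) \<in> trel A C"
  using trel.smultr[OF assms C_zero, where c=0] by simp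

lemma A_opsum: "(\<And>i. i \<in> G \<Longrightarrow> f i \<in> A) \<Longrightarrow> opsum G f \<in> A"
proof (induct G rule: infinite_finite_induct)
  case (infinite G) then show ?case by (simp add: opsum_def A_zero)
next
  case empty then show ?case by (simp add: A_zero)
next
  case (insert x F) then show ?case by (simp add: opsum_insert A_add)
qed

lemma tgen_opsum_left:
  assumes "finite G" "\<And>i. i \<in> G \<Longrightarrow> fa i \<in> A" "b \<in> C"
  shows "tgen (opsum G (\<lambda>i. op_smult (d i) (fa i))) b - (\<Sum>i\<in>G. tgen (fa i) (op_smult (d i) b)) \<in> trel A C"
  using assms(1,2)
proof (induct G rule: finite_induct)
  case empty then show ?case using tgen_zero_left[OF assms(3)] by simp
next
  case (insert x F)
  let ?Y = "opsum F (\<lambda>i. op_smult (d i) (fa i))"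
  let ?X = "op_smult (d x) (fa x)"
  have fx: "fa x \<in> A" using insert by simp
  have Y: "?Y \<in> A" using insert by (intro A_opsum A_smult) auto
  have X: "?X \<in> A" using fx by (rule A_smult)
  have e: "opsum (insert x F) (\<lambda>i. op_smult (d i) (fa i)) = op_add ?X ?Y"
    using insert(1,2) by (rule opsum_insert)
  have t1: "tgen (op_add ?X ?Y) b - tgen ?X b - tgen ?Y b \<in> trel A C"
    by (rule trel.addl[OF X Y assms(3)])
  have t2: "tgen ?X b - tsmult (d x) (tgen (fa x) b) \<in> trel A C"
    by (rule trel.smultl[OF fx assms(3)])
  have t3: "tgen (fa x) (op_smult (d x) b) - tsmult (d x) (tgen (fa x) b) \<in> trel A C"
    by (rule trel.smultr[OF fx assms(3)])
  have t4: "tgen ?Y b - (\<Sum>i\<in>F. tgen (fa i) (op_smult (d i) b)) \<in> trel A C"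
    using insert by simp
  have "(tgen (op_add ?X ?Y) b - tgen ?X b - tgen ?Y b) + (tgen ?X b - tsmult (d x) (tgen (fa x) b))
      - (tgen (fa x) (op_smult (d x) b) - tsmult (d x) (tgen (fa x) b))
      + (tgen ?Y b - (\<Sum>i\<in>F. tgen (fa i) (op_smult (d i) b))) \<in> trel A C"
    by (rule trel.sum[OF trel_diff[OF trel.sum[OF t1 t2] t3] t4])
  moreover have "(tgen (op_add ?X ?Y) b - tgen ?X b - tgen ?Y b) + (tgen ?X b - tsmult (d x) (tgen (fa x) b))
      - (tgen (fa x) (op_smult (d x) b) - tsmult (d x) (tgen (fa x) b))
      + (tgen ?Y b - (\<Sum>i\<in>F. tgen (fa i) (op_smult (d i) b)))
      = tgen (opsum (insert x F) (\<lambda>i. op_smult (d i) (fa i))) b - (\<Sum>i\<in>insert x F. tgen (fa i) (op_smult (d i) b))"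
    unfolding e using insert(1,2) by (simp add: algebra_simps)
  ultimately show ?case by simp
qed

lemma reduce:
  assumes "finite I" "\<And>i. i \<in> I \<Longrightarrow> fa i \<in> A" "\<And>i. i \<in> I \<Longrightarrow> fb i \<in> C"
  shows "\<exists>I' fb'. I' \<subseteq> I \<and> (\<forall>i\<in>I'. fb' i \<in> C) \<and> indep_ops I' fa \<and>
      (\<Sum>i\<in>I. tgen (fa i) (fb i)) - (\<Sum>i\<in>I'. tgen (fa i) (fb' i)) \<in> trel A C"
  using assms
proof (induct "card I" arbitrary: I fb rule: less_induct)
  case less
  show ?case
  proof (cases "indep_ops I fa")
    case True
    then show ?thesis using less.prems by (intro exI[of _ I] exI[of _ fb]) (auto intro: trel.zero)
  next
    case False
    then obtain c i0 where c: "opsum I (\<lambda>i. op_smult (c i) (fa i)) = (\<lambda>_. 0)" and i0: "i0 \<in> I" "c i0 \<noteq> 0"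
      unfolding indep_ops_def by blast
    let ?G = "I - {i0}"
    define d where "d i = - c i / c i0" for i
    have finG: "finite ?G" using less.prems(1) by simp
    have eq: "fa i0 = opsum ?G (\<lambda>i. op_smult (d i) (fa i))"
    proof
      fix q
      have "opsum I (\<lambda>i. op_smult (c i) (fa i)) q = mconst (c i0) * fa i0 q + opsum ?G (\<lambda>i. op_smult (c i) (fa i)) q"
        unfolding opsum_def op_smult_def using less.prems(1) i0(1) by (simp add: sum.remove)
      then have h: "mconst (c i0) * fa i0 q = - opsum ?G (\<lambda>i. op_smult (c i) (fa i)) q"
        using c by (simp add: eq_neg_iff_add_eq_0)
      have "fa i0 q = mconst (inverse (c i0)) * (mconst (c i0) * fa i0 q)"
        using i0(2) by (simp add: mult.assoc[symmetric] mconst_mult[symmetric])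
      also have "\<dots> = opsum ?G (\<lambda>i. op_smult (d i) (fa i)) q"
        unfolding h opsum_def op_smult_def d_def
        by (simp add: sum_distrib_left mult.assoc[symmetric] mconst_mult[symmetric] sum_negf[symmetric]
            mconst_uminus divide_inverse mult.commute)
      finally show "fa i0 q = opsum ?G (\<lambda>i. op_smult (d i) (fa i)) q" .
    qed
    define fb' where "fb' i = op_add (fb i) (op_smult (d i) (fb i0))" for i
    have fb'C: "\<And>i. i \<in> ?G \<Longrightarrow> fb' i \<in> C"
      unfolding fb'_def using less.prems i0(1) by (intro C_add C_smult) auto
    have X1: "tgen (fa i0) (fb i0) - (\<Sum>i\<in>?G. tgen (fa i) (op_smult (d i) (fb i0))) \<in> trel A C"
      using tgen_opsum_left[OF finG, of fa "fb i0" d] less.prems i0(1) eq by simp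
    have X2: "(\<Sum>i\<in>?G. tgen (fa i) (fb' i) - tgen (fa i) (fb i) - tgen (fa i) (op_smult (d i) (fb i0))) \<in> trel A C"
      unfolding fb'_def using less.prems i0(1)
      by (intro trel_sum trel.addr C_smult) auto
    have "card ?G < card I" using less.prems(1) i0(1) by (rule card_Diff1_less)
    then obtain I' fb'' where IH: "I' \<subseteq> ?G" "\<forall>i\<in>I'. fb'' i \<in> C" "indep_ops I' fa"
      "(\<Sum>i\<in>?G. tgen (fa i) (fb' i)) - (\<Sum>i\<in>I'. tgen (fa i) (fb'' i)) \<in> trel A C"
      using less.hyps[of ?G fb'] finG less.prems(2) fb'C by blast
    have "(\<Sum>i\<in>I. tgen (fa i) (fb i)) - (\<Sum>i\<in>I'. tgen (fa i) (fb'' i)) =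
      (tgen (fa i0) (fb i0) - (\<Sum>i\<in>?G. tgen (fa i) (op_smult (d i) (fb i0))))
      - (\<Sum>i\<in>?G. tgen (fa i) (fb' i) - tgen (fa i) (fb i) - tgen (fa i) (op_smult (d i) (fb i0)))
      + ((\<Sum>i\<in>?G. tgen (fa i) (fb' i)) - (\<Sum>i\<in>I'. tgen (fa i) (fb'' i)))"
      using less.prems(1) i0(1) by (simp add: sum.remove sum_subtractf sum.distrib algebra_simps)
    also have "\<dots> \<in> trel A C" by (rule trel.sum[OF trel_diff[OF X1 X2] IH(4)])
    finally show ?thesis using IH(1-3) by blast
  qed
qed

lemma reduce_tfree:
  assumes "\<phi> \<in> tfree A C"
  shows "\<exists>I' fb'. I' \<subseteq> keys \<phi> \<and> (\<forall>i\<in>I'. fb' i \<in> C) \<and> indep_ops I' fst \<and>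
      \<phi> - (\<Sum>i\<in>I'. tgen (fst i) (fb' i)) \<in> trel A C"
proof -
  have k: "\<And>x. x \<in> keys \<phi> \<Longrightarrow> fst x \<in> A \<and> snd x \<in> C" using assms unfolding tfree_def by auto
  have t: "(\<Sum>x\<in>keys \<phi>. tgen (fst x) (op_smult (lookup \<phi> x) (snd x)) - tsmult (lookup \<phi> x) (tgen (fst x) (snd x))) \<in> trel A C"
    using k by (intro trel_sum trel.smultr) auto
  have "\<exists>I' fb'. I' \<subseteq> keys \<phi> \<and> (\<forall>i\<in>I'. fb' i \<in> C) \<and> indep_ops I' fst \<and>
    (\<Sum>x\<in>keys \<phi>. tgen (fst x) (op_smult (lookup \<phi> x) (snd x))) - (\<Sum>i\<in>I'. tgen (fst i) (fb' i)) \<in> trel A C"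
    by (rule reduce) (use k in \<open>auto intro: C_smult\<close>)
  then obtain I' fb' where r: "I' \<subseteq> keys \<phi>" "\<forall>i\<in>I'. fb' i \<in> C" "indep_ops I' fst"
    "(\<Sum>x\<in>keys \<phi>. tgen (fst x) (op_smult (lookup \<phi> x) (snd x))) - (\<Sum>i\<in>I'. tgen (fst i) (fb' i)) \<in> trel A C"
    by blast
  have "\<phi> - (\<Sum>i\<in>I'. tgen (fst i) (fb' i)) =
      ((\<Sum>x\<in>keys \<phi>. tgen (fst x) (op_smult (lookup \<phi> x) (snd x))) - (\<Sum>i\<in>I'. tgen (fst i) (fb' i)))
      - (\<Sum>x\<in>keys \<phi>. tgen (fst x) (op_smult (lookup \<phi> x) (snd x)) - tsmult (lookup \<phi> x) (tgen (fst x) (snd x)))"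
    by (subst (1) tfree_expand) (simp add: sum_subtractf)
  also have "\<dots> \<in> trel A C" using r(4) t by (rule trel_diff)
  finally show ?thesis using r(1-3) by blast
qed

end

section \<open>Coefficient extraction\<close>

definition alpha :: "'k::comm_ring_1 op \<Rightarrow> nat \<times> nat \<Rightarrow> 'k" where
  "alpha a x = lookup (a (X (Poly_Mapping.single 0 (fst x)))) (Poly_Mapping.single 0 (snd x))"

definition Cf :: "nat \<Rightarrow> 'k::comm_ring_1 mpoly \<Rightarrow> 'k mpoly" where
  "Cf e = lext (\<lambda>m. if lookup m 0 = e then X (rB m) else 0)"

definition Ex :: "nat set \<Rightarrow> 'k::comm_ring_1 op \<Rightarrow> nat \<times> nat \<Rightarrow> 'k op" where
  "Ex B P x = (\<lambda>g. if g \<in> polys_in B then Cf (snd x) (P (X (Poly_Mapping.single 0 (fst x)) * g)) else 0)"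

lemma lext_sum: "finite K \<Longrightarrow> lext f (\<Sum>i\<in>K. g i) = (\<Sum>i\<in>K. lext f (g i))"
  by (induct K rule: finite_induct) (simp_all add: lext_add)

lemma mconst_sum: "finite K \<Longrightarrow> mconst (\<Sum>i\<in>K. f i) = (\<Sum>i\<in>K. mconst (f i))"
  by (induct K rule: finite_induct) (simp_all add: mconst_add)

lemma keys_single0: "keys m \<subseteq> {0} \<Longrightarrow> m = Poly_Mapping.single 0 (lookup m (0::nat))"
  by (rule poly_mapping_eqI) (auto simp: lookup_single when_def in_keys_iff)

lemma rB_add_right:
  assumes "lookup m' 0 = 0"
  shows "rB (m + m') = rB m + m'"
  unfolding rB_def r0_def using assms
  by (intro poly_mapping_eqI) (auto simp: lookup_add lookup_minus_nat lookup_single when_def)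

lemma rB_single0: "rB (Poly_Mapping.single 0 u) = 0"
  unfolding rB_def r0_def by simp

context
  fixes B :: "nat set"
  assumes B0: "0 \<notin> B"
begin

lemma Cf_in:
  assumes "h \<in> polys_in (insert 0 B)"
  shows "Cf e h \<in> polys_in B"
  unfolding Cf_def
proof (rule lext_in)
  fix m assume "m \<in> keys h"
  then have "keys m \<subseteq> insert 0 B" using assms by (simp add: polys_in_iff)
  then have "keys (rB m) \<subseteq> B" by (rule keys_rB)
  then show "(if lookup m 0 = e then X (rB m) else 0) \<in> polys_in B" by (auto intro: polys_in_single)
qed

lemma Cf_mult:
  fixes h w :: "'k::comm_ring_1 mpoly"
  assumes h: "h \<in> polys_in (insert 0 B)" and w: "w \<in> polys_in B"
  shows "Cf e (h * w) = Cf e h * w"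
proof -
  have ah: "addhom S (Cf e :: 'k mpoly \<Rightarrow> 'k mpoly)" for S unfolding Cf_def by (rule addhom_lext_fun)
  have mono: "Cf e (X m * w) = Cf e (X m :: 'k mpoly) * w" if m: "keys m \<subseteq> insert 0 B" for m
  proof (rule addhom_eq[where I=B and F="\<lambda>w::'k mpoly. Cf e (X m * w)" and G="\<lambda>w::'k mpoly. Cf e (X m) * w"])
    show "addhom (polys_in B) (\<lambda>w::'k mpoly. Cf e (X m * w))"
      by (rule addhom_compose[OF addhom_mult_left ah[of UNIV], unfolded comp_def]) simp
    show "addhom (polys_in B) (\<lambda>w::'k mpoly. Cf e (X m) * w)" by (rule addhom_mult_left)
    show "Cf e (X m * X m') = Cf e (X m) * (X m' :: 'k mpoly)" if m': "keys m' \<subseteq> B" for m'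
    proof -
      have l0: "lookup m' 0 = 0" using m' B0 by (auto simp: in_keys_iff)
      have "Cf e (X m * X m' :: 'k mpoly) = (if lookup m 0 = e then X (rB m + m') else 0)"
        unfolding X_mult Cf_def lext_X using l0 by (simp add: lookup_add rB_add_right)
      also have "\<dots> = Cf e (X m) * X m'"
        unfolding Cf_def lext_X by (simp add: X_mult)
      finally show ?thesis .
    qed
    show "w \<in> polys_in B" by fact
  qed
  show ?thesis
  proof (rule addhom_eq[where I="insert 0 B" and F="\<lambda>h::'k mpoly. Cf e (h * w)" and G="\<lambda>h::'k mpoly. Cf e h * w"])
    show "addhom (polys_in (insert 0 B)) (\<lambda>h::'k mpoly. Cf e (h * w))"
      by (rule addhom_compose[OF addhom_mult_right ah[of UNIV], unfolded comp_def]) simp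
    show "addhom (polys_in (insert 0 B)) (\<lambda>h::'k mpoly. Cf e h * w)"
      by (rule addhom_compose[OF ah addhom_mult_right[of UNIV], unfolded comp_def]) simp
    show "Cf e (X m * w) = Cf e (X m :: 'k mpoly) * w" if "keys m \<subseteq> insert 0 B" for m
      using mono[OF that] .
    show "h \<in> polys_in (insert 0 B)" by fact
  qed
qed

lemma Cf_S0:
  fixes v :: "'k::comm_ring_1 mpoly"
  assumes v: "v \<in> polys_in {0}"
  shows "Cf e v = mconst (lookup v (Poly_Mapping.single 0 e))"
proof (rule addhom_eq[where I="{0}" and F="Cf e" and G="\<lambda>v. mconst (lookup v (Poly_Mapping.single 0 e))"])
  show "addhom (polys_in {0}) (Cf e :: 'k mpoly \<Rightarrow> 'k mpoly)" unfolding Cf_def by (rule addhom_lext_fun)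
  show "addhom (polys_in {0}) (\<lambda>v. mconst (lookup v (Poly_Mapping.single 0 e)) :: 'k mpoly)"
    unfolding addhom_def by (simp add: lookup_add mconst_add lookup_mconst_mult mconst_mult)
  show "Cf e (X m :: 'k mpoly) = mconst (lookup (X m :: 'k mpoly) (Poly_Mapping.single 0 e))"
    if m: "keys m \<subseteq> {0}" for m
  proof -
    have me: "m = Poly_Mapping.single 0 (lookup m 0)" using keys_single0[OF m] .
    have "(m = Poly_Mapping.single 0 e) = (lookup m 0 = e)"
      by (subst me) (auto simp: inj_single[THEN injD] dest: arg_cong[where f="\<lambda>m. lookup m 0"])
    moreover have "rB m = 0" by (subst me) (rule rB_single0)
    ultimately show ?thesis unfolding Cf_def lext_X
      by (auto simp: lookup_single when_def mconst_def)
  qed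
  show "v \<in> polys_in {0}" by fact
qed

lemma Cf_T:
  fixes g :: "'k::comm_ring_1 mpoly"
  assumes a: "linop (polys_in {0}) a" and b: "linop (polys_in B) b" and g: "g \<in> polys_in B"
  shows "Cf e (T B a b (X (Poly_Mapping.single 0 u) * g)) = mconst (alpha a (u, e)) * b g"
proof -
  have u: "(X (Poly_Mapping.single 0 u) :: 'k mpoly) \<in> polys_in {0}" by (intro polys_in_single) simp
  have au: "a (X (Poly_Mapping.single 0 u)) \<in> polys_in {0}" by (rule linopD(1)[OF a u])
  have "Cf e (T B a b (X (Poly_Mapping.single 0 u) * g)) = Cf e (a (X (Poly_Mapping.single 0 u)) * b g)"
    using T_prod[OF B0 a b u g] by simp
  also have "\<dots> = Cf e (a (X (Poly_Mapping.single 0 u))) * b g"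
    by (rule Cf_mult[OF S0_SS[OF B0 au] linopD(1)[OF b g]])
  also have "\<dots> = mconst (alpha a (u, e)) * b g"
    unfolding Cf_S0[OF au] alpha_def by simp
  finally show ?thesis .
qed

lemma Ex_opsum:
  fixes f g :: "'i \<Rightarrow> 'k::comm_ring_1 op"
  assumes "finite K" "\<And>y. y \<in> K \<Longrightarrow> linop (polys_in {0}) (f y)" "\<And>y. y \<in> K \<Longrightarrow> linop (polys_in B) (g y)"
  shows "Ex B (opsum K (\<lambda>y. op_smult (c y) (T B (f y) (g y)))) x =
    opsum K (\<lambda>y. op_smult (c y * alpha (f y) x) (g y))"
proof
  fix gg :: "'k mpoly"
  show "Ex B (opsum K (\<lambda>y. op_smult (c y) (T B (f y) (g y)))) x gg =
    opsum K (\<lambda>y. op_smult (c y * alpha (f y) x) (g y)) gg"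
  proof (cases "gg \<in> polys_in B")
    case False
    have z: "\<And>y. y \<in> K \<Longrightarrow> g y gg = 0" using linopD(2)[OF assms(3) False] .
    then show ?thesis using False unfolding Ex_def opsum_def op_smult_def by simp
  next
    case True
    have "Ex B (opsum K (\<lambda>y. op_smult (c y) (T B (f y) (g y)))) x gg =
      (\<Sum>y\<in>K. mconst (c y) * Cf (snd x) (T B (f y) (g y) (X (Poly_Mapping.single 0 (fst x)) * gg)))"
      unfolding Ex_def opsum_def op_smult_def Cf_def using True assms(1)
      by (simp add: lext_sum lext_smult)
    also have "\<dots> = (\<Sum>y\<in>K. mconst (c y) * (mconst (alpha (f y) (fst x, snd x)) * g y gg))"
      using assms True by (intro sum.cong refl) (simp add: Cf_T)
    also have "\<dots> = opsum K (\<lambda>y. op_smult (c y * alpha (f y) x) (g y)) gg"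
      unfolding opsum_def op_smult_def by (simp add: mconst_mult mult.assoc)
    finally show ?thesis .
  qed
qed

end

lemma linop_in_all:
  assumes "linop (polys_in I) P" shows "P q \<in> polys_in I"
proof (cases "q \<in> polys_in I")
  case True then show ?thesis by (rule linopD(1)[OF assms])
next
  case False then show ?thesis using linopD(2)[OF assms False] by simp
qed

lemma indep_transfer:
  fixes fa :: "'i \<Rightarrow> 'k::field op"
  assumes fin: "finite I" and lin: "\<And>i. i \<in> I \<Longrightarrow> linop (polys_in {0}) (fa i)" and ind: "indep_ops I fa"
  shows "indep_fam I (\<lambda>i. alpha (fa i))"
  unfolding indep_fam_def
proof (intro allI impI)
  fix c assume H: "\<forall>x. (\<Sum>i\<in>I. c i * alpha (fa i) x) = 0"
  let ?Q = "opsum I (\<lambda>i. op_smult (c i) (fa i))"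
  have lQ: "linop (polys_in {0}) ?Q" using lin by (intro linop_opsum linop_op_smult)
  have "?Q = (\<lambda>_. 0)"
  proof
    fix q :: "'k mpoly"
    show "?Q q = 0"
    proof (cases "q \<in> polys_in {0}")
      case False then show ?thesis using linopD(2)[OF lQ] by simp
    next
      case True
      show ?thesis
      proof (rule addhom_eq[where I="{0}" and F="?Q" and G="\<lambda>_. 0", OF linopD(3)[OF lQ] _ _ True])
        show "addhom (polys_in {0}) (\<lambda>_. 0 :: 'k mpoly)" unfolding addhom_def by simp
        fix m :: "nat \<Rightarrow>\<^sub>0 nat" assume m: "keys m \<subseteq> {0}"
        have me: "m = Poly_Mapping.single 0 (lookup m 0)" using keys_single0[OF m] .
        have inS: "?Q (X m) \<in> polys_in {0}" using m by (intro linopD(1)[OF lQ] polys_in_single)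
        show "?Q (X m) = 0"
        proof (rule poly_mapping_eqI)
          fix n
          show "lookup (?Q (X m)) n = lookup 0 n"
          proof (cases "n \<in> keys (?Q (X m))")
            case False then show ?thesis by (simp add: in_keys_iff)
          next
            case True
            then have "keys n \<subseteq> {0}" using inS by (simp add: polys_in_iff)
            then have ne: "n = Poly_Mapping.single 0 (lookup n 0)" by (rule keys_single0)
            have "lookup (?Q (X m)) n = (\<Sum>i\<in>I. c i * alpha (fa i) (lookup m 0, lookup n 0))"
              unfolding opsum_def op_smult_def alpha_def
              by (subst (1 2) me, subst ne) (simp add: lookup_sum lookup_mconst_mult)
            also have "\<dots> = 0" using H by simp
            finally show ?thesis by simp
          qed
        qed
      qed
    qed
  qed
  then show "\<forall>i\<in>I. c i = 0" using ind unfolding indep_ops_def by blast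
qed

context
  fixes B :: "nat set"
  assumes B0: "0 \<notin> B"
begin

lemma extract_coeff:
  fixes fa fb :: "'i \<Rightarrow> 'k::field op"
  assumes fin: "finite I" and ind: "indep_ops I fa"
    and la: "\<And>i. i \<in> I \<Longrightarrow> linop (polys_in {0}) (fa i)"
    and lb: "\<And>i. i \<in> I \<Longrightarrow> linop (polys_in B) (fb i)"
    and i0: "i0 \<in> I"
  shows "\<exists>D w. finite D \<and> fb i0 = opsum D (\<lambda>x. op_smult (w x) (Ex B (opsum I (\<lambda>i. T B (fa i) (fb i))) x))"
proof -
  have "\<forall>a0\<in>I. \<exists>\<Lambda>\<in>Lf. \<forall>a\<in>I. \<Lambda> (alpha (fa a)) = (if a = a0 then 1 else 0)"
    by (rule dual_exists[OF fin indep_transfer[OF fin la ind]])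
  then obtain \<Lambda> where \<Lambda>: "\<Lambda> \<in> Lf" "\<And>a. a \<in> I \<Longrightarrow> \<Lambda> (alpha (fa a)) = (if a = i0 then 1 else 0)"
    using i0 by blast
  then obtain D w where D: "finite D" "\<Lambda> = (\<lambda>g. \<Sum>x\<in>D. w x * g x)" unfolding Lf_def by blast
  have Exf: "Ex B (opsum I (\<lambda>i. T B (fa i) (fb i))) x = opsum I (\<lambda>i. op_smult (alpha (fa i) x) (fb i))" for x
    using Ex_opsum[OF B0 fin la lb, where c="\<lambda>_. 1" and x=x] by simp
  have "fb i0 = opsum D (\<lambda>x. op_smult (w x) (opsum I (\<lambda>i. op_smult (alpha (fa i) x) (fb i))))"
  proof
    fix q
    have "opsum D (\<lambda>x. op_smult (w x) (opsum I (\<lambda>i. op_smult (alpha (fa i) x) (fb i)))) q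
        = (\<Sum>x\<in>D. \<Sum>i\<in>I. mconst (w x * alpha (fa i) x) * fb i q)"
      unfolding opsum_def op_smult_def by (simp add: sum_distrib_left mconst_mult mult.assoc)
    also have "\<dots> = (\<Sum>i\<in>I. \<Sum>x\<in>D. mconst (w x * alpha (fa i) x) * fb i q)"
      by (rule sum.swap)
    also have "\<dots> = (\<Sum>i\<in>I. mconst (\<Lambda> (alpha (fa i))) * fb i q)"
      unfolding D(2) using D(1) by (simp add: mconst_sum sum_distrib_right)
    also have "\<dots> = (\<Sum>i\<in>I. if i = i0 then fb i q else 0)"
      using \<Lambda>(2) by (intro sum.cong) auto
    also have "\<dots> = fb i0 q" using fin i0 by simp
    finally show "fb i0 q = opsum D (\<lambda>x. op_smult (w x) (opsum I (\<lambda>i. op_smult (alpha (fa i) x) (fb i)))) q" by simp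
  qed
  then have "fb i0 = opsum D (\<lambda>x. op_smult (w x) (Ex B (opsum I (\<lambda>i. T B (fa i) (fb i))) x))"
    by (simp add: Exf)
  then show ?thesis using D(1) by blast
qed

end

lemma tangent_opsD:
  assumes "P \<in> tangent_ops S Q"
  shows "P \<in> diff_ops S"
    and "\<And>m R. m \<ge> 1 \<Longrightarrow> R \<in> diff_ops S \<Longrightarrow> \<exists>R'\<in>diff_ops S. P \<circ> mult_op S (Q ^ m) \<circ> R = mult_op S (Q ^ m) \<circ> R'"
  using assms unfolding tangent_ops_def by blast+

lemma tangent_opsI:
  assumes "P \<in> diff_ops S"
    and "\<And>m R. m \<ge> 1 \<Longrightarrow> R \<in> diff_ops S \<Longrightarrow> \<exists>R'\<in>diff_ops S. P \<circ> mult_op S (Q ^ m) \<circ> R = mult_op S (Q ^ m) \<circ> R'"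
  shows "P \<in> tangent_ops S Q"
  using assms unfolding tangent_ops_def by blast

lemma tangent_add:
  fixes Q :: "'k::comm_ring_1 mpoly"
  assumes P1: "P1 \<in> tangent_ops (polys_in I) Q" and P2: "P2 \<in> tangent_ops (polys_in I) Q"
    and Q: "Q \<in> polys_in I"
  shows "op_add P1 P2 \<in> tangent_ops (polys_in I) Q"
proof (rule tangent_opsI)
  show "op_add P1 P2 \<in> diff_ops (polys_in I)" using tangent_opsD(1)[OF P1] tangent_opsD(1)[OF P2] by (rule diff_ops.add)
  fix m :: nat and R :: "'k op" assume m: "m \<ge> 1" and R: "R \<in> diff_ops (polys_in I)"
  obtain R1 where R1: "R1 \<in> diff_ops (polys_in I)" "P1 \<circ> mult_op (polys_in I) (Q ^ m) \<circ> R = mult_op (polys_in I) (Q ^ m) \<circ> R1"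
    using tangent_opsD(2)[OF P1 m R] by blast
  obtain R2 where R2: "R2 \<in> diff_ops (polys_in I)" "P2 \<circ> mult_op (polys_in I) (Q ^ m) \<circ> R = mult_op (polys_in I) (Q ^ m) \<circ> R2"
    using tangent_opsD(2)[OF P2 m R] by blast
  have "op_add P1 P2 \<circ> mult_op (polys_in I) (Q ^ m) \<circ> R = mult_op (polys_in I) (Q ^ m) \<circ> op_add R1 R2"
  proof
    fix q
    have "(op_add P1 P2 \<circ> mult_op (polys_in I) (Q ^ m) \<circ> R) q
        = (P1 \<circ> mult_op (polys_in I) (Q ^ m) \<circ> R) q + (P2 \<circ> mult_op (polys_in I) (Q ^ m) \<circ> R) q"
      by (simp add: op_add_def)
    also have "\<dots> = (mult_op (polys_in I) (Q ^ m) \<circ> op_add R1 R2) q"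
      unfolding R1(2) R2(2) using linop_in_all[OF linop_diff_ops[OF R1(1)], of q] linop_in_all[OF linop_diff_ops[OF R2(1)], of q]
      by (simp add: op_add_def mult_op_def distrib_left polys_in_add)
    finally show "(op_add P1 P2 \<circ> mult_op (polys_in I) (Q ^ m) \<circ> R) q = (mult_op (polys_in I) (Q ^ m) \<circ> op_add R1 R2) q" .
  qed
  then show "\<exists>R'\<in>diff_ops (polys_in I). op_add P1 P2 \<circ> mult_op (polys_in I) (Q ^ m) \<circ> R = mult_op (polys_in I) (Q ^ m) \<circ> R'"
    using R1(1) R2(1) by (blast intro: diff_ops.add)
qed

lemma tangent_smult:
  fixes Q :: "'k::comm_ring_1 mpoly"
  assumes P: "P \<in> tangent_ops (polys_in I) Q" and Q: "Q \<in> polys_in I"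
  shows "op_smult c P \<in> tangent_ops (polys_in I) Q"
proof (rule tangent_opsI)
  show "op_smult c P \<in> diff_ops (polys_in I)" using tangent_opsD(1)[OF P] by (rule diff_ops.smult)
  fix m :: nat and R :: "'k op" assume m: "m \<ge> 1" and R: "R \<in> diff_ops (polys_in I)"
  obtain R1 where R1: "R1 \<in> diff_ops (polys_in I)" "P \<circ> mult_op (polys_in I) (Q ^ m) \<circ> R = mult_op (polys_in I) (Q ^ m) \<circ> R1"
    using tangent_opsD(2)[OF P m R] by blast
  have "op_smult c P \<circ> mult_op (polys_in I) (Q ^ m) \<circ> R = mult_op (polys_in I) (Q ^ m) \<circ> op_smult c R1"
  proof
    fix q
    have "(op_smult c P \<circ> mult_op (polys_in I) (Q ^ m) \<circ> R) q = mconst c * (P \<circ> mult_op (polys_in I) (Q ^ m) \<circ> R) q"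
      by (simp add: op_smult_def)
    also have "\<dots> = (mult_op (polys_in I) (Q ^ m) \<circ> op_smult c R1) q"
      unfolding R1(2) using linop_in_all[OF linop_diff_ops[OF R1(1)], of q]
      by (simp add: op_smult_def mult_op_def mult.left_commute polys_in_mconst_mult)
    finally show "(op_smult c P \<circ> mult_op (polys_in I) (Q ^ m) \<circ> R) q = (mult_op (polys_in I) (Q ^ m) \<circ> op_smult c R1) q" .
  qed
  then show "\<exists>R'\<in>diff_ops (polys_in I). op_smult c P \<circ> mult_op (polys_in I) (Q ^ m) \<circ> R = mult_op (polys_in I) (Q ^ m) \<circ> R'"
    using R1(1) by (blast intro: diff_ops.smult)
qed

lemma tangent_zero:
  fixes Q :: "'k::comm_ring_1 mpoly"
  shows "(\<lambda>_. 0) \<in> tangent_ops (polys_in I) Q"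
proof (rule tangent_opsI)
  show "(\<lambda>_. 0) \<in> diff_ops (polys_in I)" by (rule diff_ops_zero)
  fix m :: nat and R :: "'k op" assume "m \<ge> 1" "R \<in> diff_ops (polys_in I)"
  have "(\<lambda>_. 0) \<circ> mult_op (polys_in I) (Q ^ m) \<circ> R = mult_op (polys_in I) (Q ^ m) \<circ> (\<lambda>_. 0)"
    by (simp add: fun_eq_iff mult_op_def)
  then show "\<exists>R'\<in>diff_ops (polys_in I). (\<lambda>_. 0) \<circ> mult_op (polys_in I) (Q ^ m) \<circ> R = mult_op (polys_in I) (Q ^ m) \<circ> R'"
    using diff_ops_zero by blast
qed

lemma tangent_opsum:
  assumes "\<And>i. i \<in> K \<Longrightarrow> f i \<in> tangent_ops (polys_in I) Q" and Q: "Q \<in> polys_in I"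
  shows "opsum K f \<in> tangent_ops (polys_in I) Q"
  using assms(1)
proof (induct K rule: infinite_finite_induct)
  case (infinite K) then show ?case by (simp add: opsum_def tangent_zero)
next
  case empty then show ?case by (simp add: tangent_zero)
next
  case (insert x F) then show ?case by (simp add: opsum_insert tangent_add[OF _ _ Q])
qed

context
  fixes B :: "nat set" and Q :: "'k::field mpoly"
  assumes B0: "0 \<notin> B" and finB: "finite B" and Q: "Q \<in> polys_in B"
begin

lemma Img_DS: "Psi0 B ` tfree (diff_ops (polys_in {0})) (diff_ops (polys_in B)) = diff_ops (polys_in (insert 0 B))"
  by (rule Img_eq[OF B0 finB])

lemma keys_tfree: "\<phi> \<in> tfree A C \<Longrightarrow> y \<in> keys \<phi> \<Longrightarrow> fst y \<in> A \<and> snd y \<in> C"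
  unfolding tfree_def by auto

lemma Ex_DB:
  assumes P: "P \<in> diff_ops (polys_in (insert 0 B))"
  shows "Ex B P x \<in> diff_ops (polys_in B)"
proof -
  obtain \<phi> where \<phi>: "\<phi> \<in> tfree (diff_ops (polys_in {0})) (diff_ops (polys_in B))" "P = Psi0 B \<phi>"
    using P Img_DS by (metis imageE)
  have k: "\<And>y. y \<in> keys \<phi> \<Longrightarrow> fst y \<in> diff_ops (polys_in {0}) \<and> snd y \<in> diff_ops (polys_in B)"
    using keys_tfree[OF \<phi>(1)] .
  have "Ex B P x = opsum (keys \<phi>) (\<lambda>y. op_smult (lookup \<phi> y * alpha (fst y) x) (snd y))"
    unfolding \<phi>(2) Psi0_def
    by (rule Ex_opsum[OF B0]) (use k in \<open>auto intro: linop_diff_ops\<close>)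
  also have "\<dots> \<in> diff_ops (polys_in B)"
    using k by (intro diff_ops_opsum diff_ops.smult) auto
  finally show ?thesis .
qed

lemma MS_eq: "mult_op (polys_in (insert 0 B)) (Q ^ m) = T B (mult_op (polys_in {0}) 1) (mult_op (polys_in B) (Q ^ m))"
  using T_mult[OF B0 polys_in_1 polys_in_power[OF Q, of m]] by simp

lemma Ex_tangent:
  assumes P: "P \<in> tangent_ops (polys_in (insert 0 B)) Q"
  shows "Ex B P x \<in> tangent_ops (polys_in B) Q"
proof (rule tangent_opsI)
  have PD: "P \<in> diff_ops (polys_in (insert 0 B))" by (rule tangent_opsD(1)[OF P])
  have lP: "linop (polys_in (insert 0 B)) P" by (rule linop_diff_ops[OF PD])
  show "Ex B P x \<in> diff_ops (polys_in B)" by (rule Ex_DB[OF PD])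
  fix m :: nat and RB :: "'k op" assume m: "m \<ge> 1" and RB: "RB \<in> diff_ops (polys_in B)"
  have lRB: "linop (polys_in B) RB" by (rule linop_diff_ops[OF RB])
  let ?R = "T B (mult_op (polys_in {0}) 1) RB"
  let ?MS = "mult_op (polys_in (insert 0 B)) (Q ^ m)"
  let ?MB = "mult_op (polys_in B) (Q ^ m)"
  have R: "?R \<in> diff_ops (polys_in (insert 0 B))" by (rule T_right_diff_ops[OF B0 RB])
  obtain R' where R': "R' \<in> diff_ops (polys_in (insert 0 B))" "P \<circ> ?MS \<circ> ?R = ?MS \<circ> R'"
    using tangent_opsD(2)[OF P m R] by blast
  have lR': "linop (polys_in (insert 0 B)) R'" by (rule linop_diff_ops[OF R'(1)])
  have Qm: "Q ^ m \<in> polys_in B" using Q by (rule polys_in_power)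
  have "Ex B P x \<circ> ?MB \<circ> RB = ?MB \<circ> Ex B R' x"
  proof
    fix g :: "'k mpoly"
    let ?X0 = "X (Poly_Mapping.single 0 (fst x)) :: 'k mpoly"
    have X0: "?X0 \<in> polys_in {0}" by (intro polys_in_single) simp
    show "(Ex B P x \<circ> ?MB \<circ> RB) g = (?MB \<circ> Ex B R' x) g"
    proof (cases "g \<in> polys_in B")
      case False
      have "RB g = 0" using linopD(2)[OF lRB False] .
      moreover have "Ex B P x 0 = 0"
        unfolding Ex_def using linop_zero[OF lP] by (simp add: Cf_def)
      moreover have "Ex B R' x g = 0" unfolding Ex_def using False by simp
      ultimately show ?thesis by (simp add: mult_op_def)
    next
      case True
      have RBg: "RB g \<in> polys_in B" by (rule linopD(1)[OF lRB True])
      have QRB: "Q ^ m * RB g \<in> polys_in B" using Qm RBg by (rule polys_in_mult)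
      have X0RB: "?X0 * RB g \<in> polys_in (insert 0 B)" by (rule prod_SS[OF B0 X0 RBg])
      have Rx: "?R (?X0 * g) = ?X0 * RB g"
        using T_prod[OF B0 linop_id1 lRB X0 True] X0 by (simp add: mult_op_def)
      have "?X0 * (Q ^ m * RB g) = (?MS \<circ> ?R) (?X0 * g)"
        using Rx X0RB by (simp add: mult_op_def ac_simps)
      then have "P (?X0 * (Q ^ m * RB g)) = (P \<circ> ?MS \<circ> ?R) (?X0 * g)" by simp
      also have "\<dots> = Q ^ m * R' (?X0 * g)"
        unfolding R'(2) using linop_in_all[OF lR', of "?X0 * g"] by (simp add: mult_op_def)
      finally have e1: "P (?X0 * (Q ^ m * RB g)) = R' (?X0 * g) * Q ^ m" by (simp add: mult.commute)
      have "(Ex B P x \<circ> ?MB \<circ> RB) g = Cf (snd x) (P (?X0 * (Q ^ m * RB g)))"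
        using RBg QRB unfolding Ex_def by (simp add: mult_op_def)
      also have "\<dots> = Cf (snd x) (R' (?X0 * g)) * Q ^ m"
        unfolding e1 by (rule Cf_mult[OF B0 linop_in_all[OF lR'] Qm])
      also have "\<dots> = (?MB \<circ> Ex B R' x) g"
        using True Cf_in[OF B0 linop_in_all[OF lR'], of "snd x" "?X0 * g"]
        unfolding Ex_def by (simp add: mult_op_def mult.commute)
      finally show ?thesis .
    qed
  qed
  then show "\<exists>R''\<in>diff_ops (polys_in B). Ex B P x \<circ> ?MB \<circ> RB = ?MB \<circ> R''"
    using Ex_DB[OF R'(1)] by blast
qed

lemma T_tangent:
  assumes a: "a \<in> diff_ops (polys_in {0})" and b: "b \<in> tangent_ops (polys_in B) Q"
  shows "T B a b \<in> tangent_ops (polys_in (insert 0 B)) Q"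
proof (rule tangent_opsI)
  have bD: "b \<in> diff_ops (polys_in B)" by (rule tangent_opsD(1)[OF b])
  have la: "linop (polys_in {0}) a" by (rule linop_diff_ops[OF a])
  have lb: "linop (polys_in B) b" by (rule linop_diff_ops[OF bD])
  show "T B a b \<in> diff_ops (polys_in (insert 0 B))" by (rule T_diff_ops[OF B0 a bD])
  fix m :: nat and R :: "'k op" assume m: "m \<ge> 1" and R: "R \<in> diff_ops (polys_in (insert 0 B))"
  let ?MS = "mult_op (polys_in (insert 0 B)) (Q ^ m)"
  let ?MB = "mult_op (polys_in B) (Q ^ m)"
  let ?id0 = "mult_op (polys_in {0}) (1 :: 'k mpoly)"
  have Qm: "Q ^ m \<in> polys_in B" using Q by (rule polys_in_power)
  have lMB: "linop (polys_in B) ?MB" by (rule linop_mult_op[OF Qm])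
  have lMS: "linop (polys_in (insert 0 B)) ?MS" by (rule linop_mult_op[OF SB_SS[OF B0 Qm]])
  obtain \<rho> where \<rho>: "\<rho> \<in> tfree (diff_ops (polys_in {0})) (diff_ops (polys_in B))" "R = Psi0 B \<rho>"
    using R Img_DS by (metis imageE)
  have k: "\<And>y. y \<in> keys \<rho> \<Longrightarrow> fst y \<in> diff_ops (polys_in {0}) \<and> snd y \<in> diff_ops (polys_in B)"
    using keys_tfree[OF \<rho>(1)] .
  have "\<forall>y\<in>keys \<rho>. \<exists>b''. b'' \<in> diff_ops (polys_in B) \<and> b \<circ> ?MB \<circ> snd y = ?MB \<circ> b''"
    using tangent_opsD(2)[OF b m] k by blast
  from bchoice[OF this] obtain bb where bb: "\<And>y. y \<in> keys \<rho> \<Longrightarrow> bb y \<in> diff_ops (polys_in B) \<and> b \<circ> ?MB \<circ> snd y = ?MB \<circ> bb y"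
    by blast
  have claim: "T B a b \<circ> ?MS \<circ> T B (fst y) (snd y) = ?MS \<circ> T B (a \<circ> fst y) (bb y)" if y: "y \<in> keys \<rho>" for y
  proof -
    have l1: "linop (polys_in {0}) (fst y)" and l2: "linop (polys_in B) (snd y)" and l3: "linop (polys_in B) (bb y)"
      using k[OF y] bb[OF y] by (auto intro: linop_diff_ops)
    have lbM: "linop (polys_in B) (b \<circ> ?MB)" by (rule linop_comp[OF lb lMB])
    have la1: "linop (polys_in {0}) (a \<circ> fst y)" by (rule linop_comp[OF la l1])
    have "T B a b \<circ> ?MS = T B a (b \<circ> ?MB)"
      unfolding MS_eq using T_comp[OF B0 la linop_id1 lb lMB] by (simp add: comp_id_right[OF la])
    then have "T B a b \<circ> ?MS \<circ> T B (fst y) (snd y) = T B (a \<circ> fst y) (b \<circ> ?MB \<circ> snd y)"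
      using T_comp[OF B0 la l1 lbM l2] by simp
    also have "\<dots> = T B (a \<circ> fst y) (?MB \<circ> bb y)" using bb[OF y] by simp
    also have "\<dots> = ?MS \<circ> T B (a \<circ> fst y) (bb y)"
      unfolding MS_eq using T_comp[OF B0 linop_id1 la1 lMB l3] by (simp add: comp_id_left[OF la1])
    finally show ?thesis .
  qed
  let ?R' = "opsum (keys \<rho>) (\<lambda>y. op_smult (lookup \<rho> y) (T B (a \<circ> fst y) (bb y)))"
  have lL: "linop (polys_in (insert 0 B)) (T B a b \<circ> ?MS)"
    by (rule linop_comp[OF T_linop[OF B0 la lb] lMS])
  have Tin: "\<And>y q. y \<in> keys \<rho> \<Longrightarrow> op_smult (lookup \<rho> y) (T B (fst y) (snd y)) q \<in> polys_in (insert 0 B)"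
    unfolding op_smult_def using k by (intro polys_in_mconst_mult T_in[OF B0]) (auto intro: linop_diff_ops)
  have Tin2: "\<And>y q. y \<in> keys \<rho> \<Longrightarrow> op_smult (lookup \<rho> y) (T B (a \<circ> fst y) (bb y)) q \<in> polys_in (insert 0 B)"
    unfolding op_smult_def using k bb la by (intro polys_in_mconst_mult T_in[OF B0] linop_comp) (auto intro: linop_diff_ops)
  have "T B a b \<circ> ?MS \<circ> R = opsum (keys \<rho>) (\<lambda>y. (T B a b \<circ> ?MS) \<circ> op_smult (lookup \<rho> y) (T B (fst y) (snd y)))"
    unfolding \<rho>(2) Psi0_def by (rule opsum_comp_left[OF lL finite_keys Tin])
  also have "\<dots> = opsum (keys \<rho>) (\<lambda>y. op_smult (lookup \<rho> y) (?MS \<circ> T B (a \<circ> fst y) (bb y)))"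
  proof (rule opsum_cong)
    fix y assume y: "y \<in> keys \<rho>"
    have "(T B a b \<circ> ?MS) \<circ> op_smult (lookup \<rho> y) (T B (fst y) (snd y))
        = op_smult (lookup \<rho> y) (T B a b \<circ> ?MS \<circ> T B (fst y) (snd y))"
      using k[OF y] by (intro op_smult_comp_left[OF lL] T_in[OF B0]) (auto intro: linop_diff_ops)
    then show "(T B a b \<circ> ?MS) \<circ> op_smult (lookup \<rho> y) (T B (fst y) (snd y)) =
        op_smult (lookup \<rho> y) (?MS \<circ> T B (a \<circ> fst y) (bb y))"
      using claim[OF y] by simp
  qed
  also have "\<dots> = opsum (keys \<rho>) (\<lambda>y. ?MS \<circ> op_smult (lookup \<rho> y) (T B (a \<circ> fst y) (bb y)))"
  proof (rule opsum_cong)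
    fix y assume y: "y \<in> keys \<rho>"
    show "op_smult (lookup \<rho> y) (?MS \<circ> T B (a \<circ> fst y) (bb y)) = ?MS \<circ> op_smult (lookup \<rho> y) (T B (a \<circ> fst y) (bb y))"
      using k[OF y] bb[OF y] la
      by (intro op_smult_comp_left[OF lMS, symmetric] T_in[OF B0] linop_comp) (auto intro: linop_diff_ops)
  qed
  also have "\<dots> = ?MS \<circ> ?R'"
    by (rule opsum_comp_left[OF lMS finite_keys Tin2, symmetric])
  finally have eq: "T B a b \<circ> ?MS \<circ> R = ?MS \<circ> ?R'" .
  have "?R' \<in> diff_ops (polys_in (insert 0 B))"
    using k bb a by (intro diff_ops_opsum diff_ops.smult T_diff_ops[OF B0] diff_ops.comp) auto
  then show "\<exists>R'\<in>diff_ops (polys_in (insert 0 B)). T B a b \<circ> ?MS \<circ> R = ?MS \<circ> R'"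
    using eq by blast
qed

lemma opspaces_DB: "opspaces (diff_ops (polys_in {0})) (diff_ops (polys_in B) :: 'k op set)"
proof
  show "\<And>a a'. a \<in> diff_ops (polys_in {0}) \<Longrightarrow> a' \<in> diff_ops (polys_in {0}) \<Longrightarrow> op_add a a' \<in> diff_ops (polys_in {0})"
    by (rule diff_ops.add)
  show "\<And>a c. a \<in> diff_ops (polys_in {0}) \<Longrightarrow> op_smult c a \<in> diff_ops (polys_in {0})"
    by (rule diff_ops.smult)
  show "(\<lambda>_. 0) \<in> diff_ops (polys_in {0})" by (rule diff_ops_zero)
  show "\<And>a a'. a \<in> diff_ops (polys_in B) \<Longrightarrow> a' \<in> diff_ops (polys_in B) \<Longrightarrow> op_add a a' \<in> diff_ops (polys_in B)"
    by (rule diff_ops.add)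
  show "\<And>a c. a \<in> diff_ops (polys_in B) \<Longrightarrow> op_smult c a \<in> diff_ops (polys_in B)"
    by (rule diff_ops.smult)
  show "(\<lambda>_. 0) \<in> diff_ops (polys_in B)" by (rule diff_ops_zero)
qed

lemma opspaces_TB: "opspaces (diff_ops (polys_in {0})) (tangent_ops (polys_in B) Q)"
proof
  show "\<And>a a'. a \<in> diff_ops (polys_in {0}) \<Longrightarrow> a' \<in> diff_ops (polys_in {0}) \<Longrightarrow> op_add a a' \<in> diff_ops (polys_in {0})"
    by (rule diff_ops.add)
  show "\<And>a c. a \<in> diff_ops (polys_in {0}) \<Longrightarrow> op_smult c a \<in> diff_ops (polys_in {0})"
    by (rule diff_ops.smult)
  show "(\<lambda>_. 0) \<in> diff_ops (polys_in {0})" by (rule diff_ops_zero)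
  show "\<And>a a'. a \<in> tangent_ops (polys_in B) Q \<Longrightarrow> a' \<in> tangent_ops (polys_in B) Q \<Longrightarrow> op_add a a' \<in> tangent_ops (polys_in B) Q"
    by (rule tangent_add[OF _ _ Q])
  show "\<And>a c. a \<in> tangent_ops (polys_in B) Q \<Longrightarrow> op_smult c a \<in> tangent_ops (polys_in B) Q"
    by (rule tangent_smult[OF _ Q])
  show "(\<lambda>_. 0) \<in> tangent_ops (polys_in B) Q" by (rule tangent_zero)
qed

lemma Psi0_sum_tgen:
  "finite I' \<Longrightarrow> Psi0 B (\<Sum>i\<in>I'. tgen (fst i) (fb i)) = opsum I' (\<lambda>i. T B (fst i) (fb i))"
  by (simp add: Psi0_sum Psi0_tgen)

lemma Psi0_eq_trel:
  assumes "\<phi> - \<psi> \<in> trel A C" shows "Psi0 B \<phi> = Psi0 B \<psi>"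
proof
  fix q
  have "Psi0 B (\<phi> - \<psi>) q = 0" using Psi0_trel[OF B0 assms] by simp
  then show "Psi0 B \<phi> q = Psi0 B \<psi> q" by (simp add: Psi0_diff)
qed

lemma image_TS:
  "Psi0 B ` tfree (diff_ops (polys_in {0})) (tangent_ops (polys_in B) Q) = tangent_ops (polys_in (insert 0 B)) Q"
proof
  have QS: "Q \<in> polys_in (insert 0 B)" by (rule SB_SS[OF B0 Q])
  show "Psi0 B ` tfree (diff_ops (polys_in {0})) (tangent_ops (polys_in B) Q) \<subseteq> tangent_ops (polys_in (insert 0 B)) Q"
  proof
    fix P assume "P \<in> Psi0 B ` tfree (diff_ops (polys_in {0})) (tangent_ops (polys_in B) Q)"
    then obtain \<phi> where \<phi>: "\<phi> \<in> tfree (diff_ops (polys_in {0})) (tangent_ops (polys_in B) Q)" "P = Psi0 B \<phi>"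
      by blast
    have k: "\<And>y. y \<in> keys \<phi> \<Longrightarrow> fst y \<in> diff_ops (polys_in {0}) \<and> snd y \<in> tangent_ops (polys_in B) Q"
      using keys_tfree[OF \<phi>(1)] .
    show "P \<in> tangent_ops (polys_in (insert 0 B)) Q"
      unfolding \<phi>(2) Psi0_def using k
      by (intro tangent_opsum[OF _ QS] tangent_smult[OF _ QS] T_tangent) auto
  qed
  show "tangent_ops (polys_in (insert 0 B)) Q \<subseteq> Psi0 B ` tfree (diff_ops (polys_in {0})) (tangent_ops (polys_in B) Q)"
  proof
    fix P assume P: "P \<in> tangent_ops (polys_in (insert 0 B)) Q"
    have PD: "P \<in> diff_ops (polys_in (insert 0 B))" by (rule tangent_opsD(1)[OF P])
    obtain \<phi> where \<phi>: "\<phi> \<in> tfree (diff_ops (polys_in {0})) (diff_ops (polys_in B))" "P = Psi0 B \<phi>"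
      using PD Img_DS by (metis imageE)
    have k: "\<And>y. y \<in> keys \<phi> \<Longrightarrow> fst y \<in> diff_ops (polys_in {0}) \<and> snd y \<in> diff_ops (polys_in B)"
      using keys_tfree[OF \<phi>(1)] .
    obtain I' fb' where r: "I' \<subseteq> keys \<phi>" "\<forall>i\<in>I'. fb' i \<in> diff_ops (polys_in B)" "indep_ops I' fst"
      "\<phi> - (\<Sum>i\<in>I'. tgen (fst i) (fb' i)) \<in> trel (diff_ops (polys_in {0})) (diff_ops (polys_in B))"
      using opspaces.reduce_tfree[OF opspaces_DB \<phi>(1)] by blast
    have finI: "finite I'" by (rule finite_subset[OF r(1) finite_keys])
    have PI: "P = opsum I' (\<lambda>i. T B (fst i) (fb' i))"
      unfolding \<phi>(2) Psi0_eq_trel[OF r(4)] Psi0_sum_tgen[OF finI] ..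
    have fbT: "fb' i0 \<in> tangent_ops (polys_in B) Q" if i0: "i0 \<in> I'" for i0
    proof -
      have la: "linop (polys_in {0}) (fst i)" if i: "i \<in> I'" for i
      proof -
        have "i \<in> keys \<phi>" using r(1) i by blast
        then show ?thesis using k by (intro linop_diff_ops) blast
      qed
      have lb: "linop (polys_in B) (fb' i)" if i: "i \<in> I'" for i
      proof -
        have "fb' i \<in> diff_ops (polys_in B)" using r(2) i by blast
        then show ?thesis by (rule linop_diff_ops)
      qed
      have "\<exists>D w. finite D \<and> fb' i0 = opsum D (\<lambda>x. op_smult (w x) (Ex B (opsum I' (\<lambda>i. T B (fst i) (fb' i))) x))"
        by (rule extract_coeff[OF B0 finI r(3) la lb i0])
      then obtain D w where D: "finite D" "fb' i0 = opsum D (\<lambda>x. op_smult (w x) (Ex B P x))"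
        unfolding PI[symmetric] by blast
      show ?thesis unfolding D(2)
        by (intro tangent_opsum[OF _ Q] tangent_smult[OF _ Q] Ex_tangent P)
    qed
    have "(\<Sum>i\<in>I'. tgen (fst i) (fb' i)) \<in> tfree (diff_ops (polys_in {0})) (tangent_ops (polys_in B) Q)"
      using r(1) k fbT by (intro tfree_sum tfree_tgen) auto
    moreover have "P = Psi0 B (\<Sum>i\<in>I'. tgen (fst i) (fb' i))"
      unfolding PI Psi0_sum_tgen[OF finI] ..
    ultimately show "P \<in> Psi0 B ` tfree (diff_ops (polys_in {0})) (tangent_ops (polys_in B) Q)" by blast
  qed
qed

lemma kernel_TS:
  assumes \<phi>: "\<phi> \<in> tfree (diff_ops (polys_in {0})) (tangent_ops (polys_in B) Q)"
  shows "Psi0 B \<phi> = (\<lambda>_. 0) \<longleftrightarrow> \<phi> \<in> trel (diff_ops (polys_in {0})) (tangent_ops (polys_in B) Q)"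
proof
  assume "\<phi> \<in> trel (diff_ops (polys_in {0})) (tangent_ops (polys_in B) Q)"
  then show "Psi0 B \<phi> = (\<lambda>_. 0)" by (rule Psi0_trel[OF B0])
next
  assume P0: "Psi0 B \<phi> = (\<lambda>_. 0)"
  have k: "\<And>y. y \<in> keys \<phi> \<Longrightarrow> fst y \<in> diff_ops (polys_in {0}) \<and> snd y \<in> tangent_ops (polys_in B) Q"
    using keys_tfree[OF \<phi>] .
  obtain I' fb' where r: "I' \<subseteq> keys \<phi>" "\<forall>i\<in>I'. fb' i \<in> tangent_ops (polys_in B) Q" "indep_ops I' fst"
    "\<phi> - (\<Sum>i\<in>I'. tgen (fst i) (fb' i)) \<in> trel (diff_ops (polys_in {0})) (tangent_ops (polys_in B) Q)"
    using opspaces.reduce_tfree[OF opspaces_TB \<phi>] by blast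
  have finI: "finite I'" by (rule finite_subset[OF r(1) finite_keys])
  have PI: "(\<lambda>_. 0) = opsum I' (\<lambda>i. T B (fst i) (fb' i))"
    unfolding P0[symmetric] Psi0_eq_trel[OF r(4)] Psi0_sum_tgen[OF finI] ..
  have Ex0: "Ex B (\<lambda>_. 0) x = (\<lambda>_. 0)" for x :: "nat \<times> nat"
    unfolding Ex_def Cf_def by (simp add: fun_eq_iff)
  have fb0: "fb' i0 = (\<lambda>_. 0)" if i0: "i0 \<in> I'" for i0
  proof -
    have la: "linop (polys_in {0}) (fst i)" if i: "i \<in> I'" for i
    proof -
      have "i \<in> keys \<phi>" using r(1) i by blast
      then show ?thesis using k by (intro linop_diff_ops) blast
    qed
    have lb: "linop (polys_in B) (fb' i)" if i: "i \<in> I'" for i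
    proof -
      have "fb' i \<in> tangent_ops (polys_in B) Q" using r(2) i by blast
      then show ?thesis by (intro linop_diff_ops tangent_opsD(1))
    qed
    have "\<exists>D w. finite D \<and> fb' i0 = opsum D (\<lambda>x. op_smult (w x) (Ex B (opsum I' (\<lambda>i. T B (fst i) (fb' i))) x))"
      by (rule extract_coeff[OF B0 finI r(3) la lb i0])
    then obtain D w where D: "finite D" "fb' i0 = opsum D (\<lambda>x. op_smult (w x) (Ex B (\<lambda>_. 0) x))"
      unfolding PI[symmetric] by blast
    show ?thesis unfolding D(2) Ex0 by (simp add: opsum_def op_smult_def)
  qed
  have "(\<Sum>i\<in>I'. tgen (fst i) (fb' i)) \<in> trel (diff_ops (polys_in {0})) (tangent_ops (polys_in B) Q)"
  proof (rule trel_sum)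
    fix i assume i: "i \<in> I'"
    then have "fst i \<in> diff_ops (polys_in {0})" using k r(1) by blast
    then have "tgen (fst i) (\<lambda>_. 0) \<in> trel (diff_ops (polys_in {0})) (tangent_ops (polys_in B) Q)"
      by (rule opspaces.tgen_zero_right[OF opspaces_TB])
    then show "tgen (fst i) (fb' i) \<in> trel (diff_ops (polys_in {0})) (tangent_ops (polys_in B) Q)"
      using fb0[OF i] by simp
  qed
  then have "(\<phi> - (\<Sum>i\<in>I'. tgen (fst i) (fb' i))) + (\<Sum>i\<in>I'. tgen (fst i) (fb' i)) \<in> trel (diff_ops (polys_in {0})) (tangent_ops (polys_in B) Q)"
    using r(4) by (intro trel.sum)
  then show "\<phi> \<in> trel (diff_ops (polys_in {0})) (tangent_ops (polys_in B) Q)" by simp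
qed

end

definition mono_val :: "(nat \<Rightarrow> 'k::comm_ring_1 mpoly) \<Rightarrow> (nat \<Rightarrow>\<^sub>0 nat) \<Rightarrow> 'k mpoly" where
  "mono_val f m = (\<Prod>i\<in>keys m. f i ^ lookup m i)"

definition subst :: "(nat \<Rightarrow> 'k::comm_ring_1 mpoly) \<Rightarrow> 'k mpoly \<Rightarrow> 'k mpoly" where
  "subst f = lext (mono_val f)"

lemma mono_val_superset:
  "finite K \<Longrightarrow> keys m \<subseteq> K \<Longrightarrow> mono_val f m = (\<Prod>i\<in>K. f i ^ lookup m i)"
  unfolding mono_val_def by (rule prod.mono_neutral_left) (auto simp: in_keys_iff)

lemma mono_val_add: "mono_val f (m + m') = mono_val f m * mono_val f m'"
proof -
  let ?K = "keys m \<union> keys m'"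
  have "mono_val f (m + m') = (\<Prod>i\<in>?K. f i ^ lookup (m + m') i)"
    by (rule mono_val_superset) (auto simp: keys_add_nat)
  also have "\<dots> = (\<Prod>i\<in>?K. f i ^ lookup m i) * (\<Prod>i\<in>?K. f i ^ lookup m' i)"
    by (simp add: lookup_add power_add prod.distrib)
  also have "\<dots> = mono_val f m * mono_val f m'"
  proof -
    have "mono_val f m = (\<Prod>i\<in>?K. f i ^ lookup m i)" by (rule mono_val_superset) auto
    moreover have "mono_val f m' = (\<Prod>i\<in>?K. f i ^ lookup m' i)" by (rule mono_val_superset) auto
    ultimately show ?thesis by simp
  qed
  finally show ?thesis .
qed

lemma subst_add: "subst f (p + q) = subst f p + subst f q"
  unfolding subst_def by (rule lext_add)

lemma subst_smult: "subst f (mconst c * p) = mconst c * subst f p"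
  unfolding subst_def by (rule lext_smult)

lemma subst_zero [simp]: "subst f 0 = 0"
  unfolding subst_def by simp

lemma subst_uminus: "subst f (- p) = - subst f p"
  using subst_smult[of f "-1" p] by (simp add: mconst_uminus)

lemma subst_diff: "subst f (p - q) = subst f p - subst f q"
  using subst_add[of f p "- q"] subst_uminus[of f q] by simp

lemma subst_X: "subst f (X m) = mono_val f m"
  unfolding subst_def by simp

lemma subst_one [simp]: "subst f 1 = 1"
  using subst_X[of f 0] by (simp add: mono_val_def)

lemma subst_mvar: "subst f (mvar i) = f i"
  unfolding mvar_X subst_X mono_val_def by simp

lemma addhom_subst: "addhom S (subst f)"
  unfolding subst_def by (rule addhom_lext_fun)

lemma subst_mult: "subst f (p * q) = subst f p * subst f q"
proof -
  have mono: "subst f (X m * q) = subst f (X m) * subst f q" for m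
  proof (rule addhom_eq[where I=UNIV and F="\<lambda>q. subst f (X m * q)" and G="\<lambda>q. subst f (X m) * subst f q"])
    show "addhom (polys_in UNIV) (\<lambda>q. subst f (X m * q))"
      by (rule addhom_compose[OF addhom_mult_left addhom_subst[of UNIV], unfolded comp_def]) simp
    show "addhom (polys_in UNIV) (\<lambda>q. subst f (X m) * subst f q)"
      by (rule addhom_compose[OF addhom_subst addhom_mult_left[of UNIV], unfolded comp_def]) simp
    show "subst f (X m * X m') = subst f (X m) * subst f (X m')" for m'
      unfolding X_mult subst_X by (rule mono_val_add)
    show "q \<in> polys_in UNIV" by (simp add: polys_in_iff)
  qed
  show ?thesis
  proof (rule addhom_eq[where I=UNIV and F="\<lambda>p. subst f (p * q)" and G="\<lambda>p. subst f p * subst f q"])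
    show "addhom (polys_in UNIV) (\<lambda>p. subst f (p * q))"
      by (rule addhom_compose[OF addhom_mult_right addhom_subst[of UNIV], unfolded comp_def]) simp
    show "addhom (polys_in UNIV) (\<lambda>p. subst f p * subst f q)"
      by (rule addhom_compose[OF addhom_subst addhom_mult_right[of UNIV], unfolded comp_def]) simp
    show "subst f (X m * q) = subst f (X m) * subst f q" for m by (rule mono)
    show "p \<in> polys_in UNIV" by (simp add: polys_in_iff)
  qed
qed

lemma subst_power: "subst f (p ^ k) = subst f p ^ k"
  by (induct k) (simp_all add: subst_mult)

lemma subst_prod: "subst f (\<Prod>x\<in>K. g x) = (\<Prod>x\<in>K. subst f (g x))"
  by (induct K rule: infinite_finite_induct) (simp_all add: subst_mult)

lemma subst_in:
  assumes "\<And>i. i \<in> I \<Longrightarrow> f i \<in> polys_in J" "p \<in> polys_in I"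
  shows "subst f p \<in> polys_in J"
  unfolding subst_def
proof (rule lext_in)
  fix m assume "m \<in> keys p"
  then have "keys m \<subseteq> I" using assms(2) by (simp add: polys_in_iff)
  then show "mono_val f m \<in> polys_in J" unfolding mono_val_def using assms(1) by blast
qed

lemma ringhom_eq:
  fixes F G :: "'k::comm_ring_1 mpoly \<Rightarrow> 'k mpoly"
  assumes aF: "addhom (polys_in I) F" and aG: "addhom (polys_in I) G"
    and mF: "\<And>p q. p \<in> polys_in I \<Longrightarrow> q \<in> polys_in I \<Longrightarrow> F (p * q) = F p * F q"
    and mG: "\<And>p q. p \<in> polys_in I \<Longrightarrow> q \<in> polys_in I \<Longrightarrow> G (p * q) = G p * G q"
    and one: "F 1 = G 1" and var: "\<And>i. i \<in> I \<Longrightarrow> F (mvar i) = G (mvar i)"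
    and p: "p \<in> polys_in I"
  shows "F p = G p"
proof (rule addhom_eq[OF aF aG _ p])
  fix m :: "nat \<Rightarrow>\<^sub>0 nat" assume "keys m \<subseteq> I"
  then show "F (X m) = G (X m)"
  proof (rule mono_induct)
    show "F 1 = G 1" by (rule one)
  next
    fix m i assume m: "keys m \<subseteq> I" and i: "i \<in> I" and h: "F (X m) = G (X m)"
    have xm: "(X m :: 'k mpoly) \<in> polys_in I" using m by (rule polys_in_single)
    have xi: "(mvar i :: 'k mpoly) \<in> polys_in I" using i by (rule polys_in_mvar)
    show "F (mvar i * X m) = G (mvar i * X m)"
      using mF[OF xi xm] mG[OF xi xm] h var[OF i] by simp
  qed
qed

section \<open>Conjugation by an involutive automorphism\<close>

locale invol =
  fixes I :: "nat set" and sg :: "'k::field mpoly \<Rightarrow> 'k mpoly"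
  assumes sg_in: "p \<in> polys_in I \<Longrightarrow> sg p \<in> polys_in I"
    and sg_sg: "p \<in> polys_in I \<Longrightarrow> sg (sg p) = p"
    and sg_add: "sg (p + q) = sg p + sg q"
    and sg_mult: "sg (p * q) = sg p * sg q"
    and sg_smult: "sg (mconst c * p) = mconst c * sg p"
    and sg_one: "sg 1 = 1"
begin

definition sg' :: "'k mpoly \<Rightarrow> 'k mpoly" where
  "sg' q = (if q \<in> polys_in I then sg q else 0)"

definition conj :: "'k op \<Rightarrow> 'k op" where
  "conj P = sg' \<circ> P \<circ> sg'"

lemma sg_zero: "sg 0 = 0"
  using sg_smult[of 0 0] by simp

lemma sg'_in: "sg' q \<in> polys_in I"
  unfolding sg'_def using sg_in by auto

lemma sg'_sg': "q \<in> polys_in I \<Longrightarrow> sg' (sg' q) = q"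
  unfolding sg'_def using sg_in sg_sg by auto

lemma sg'_zero [simp]: "sg' 0 = 0"
  unfolding sg'_def by (simp add: sg_zero)

lemma sg_power: "sg (p ^ k) = sg p ^ k"
  by (induct k) (simp_all add: sg_one sg_mult)

lemma conj_apply: "conj P q = sg' (P (sg' q))"
  unfolding conj_def by simp

lemma conj_conj:
  assumes "linop (polys_in I) P"
  shows "conj (conj P) = P"
proof
  fix q
  show "conj (conj P) q = P q"
  proof (cases "q \<in> polys_in I")
    case True
    then show ?thesis unfolding conj_apply using sg'_sg' linop_in_all[OF assms] by simp
  next
    case False
    then show ?thesis unfolding conj_apply using linopD(2)[OF assms False] linop_zero[OF assms]
      by (simp add: sg'_def sg_zero)
  qed
qed

lemma conj_zero: "conj (\<lambda>_. 0) = (\<lambda>_. 0)"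
  unfolding conj_def by (simp add: fun_eq_iff)

lemma conj_add:
  assumes "linop (polys_in I) P" "linop (polys_in I) R"
  shows "conj (op_add P R) = op_add (conj P) (conj R)"
  unfolding conj_def op_add_def fun_eq_iff comp_def sg'_def
  using linop_in_all[OF assms(1)] linop_in_all[OF assms(2)] by (simp add: sg_add polys_in_add)

lemma conj_smult:
  assumes "linop (polys_in I) P"
  shows "conj (op_smult c P) = op_smult c (conj P)"
  unfolding conj_def op_smult_def fun_eq_iff comp_def sg'_def
  using linop_in_all[OF assms(1)] by (simp add: sg_smult polys_in_mconst_mult)

lemma conj_comp:
  assumes "linop (polys_in I) R"
  shows "conj (P \<circ> R) = conj P \<circ> conj R"
  unfolding conj_def fun_eq_iff comp_def using sg'_sg' linop_in_all[OF assms] by simp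

lemma conj_mult:
  assumes p: "p \<in> polys_in I"
  shows "conj (mult_op (polys_in I) p) = mult_op (polys_in I) (sg p)"
proof
  fix q
  show "conj (mult_op (polys_in I) p) q = mult_op (polys_in I) (sg p) q"
  proof (cases "q \<in> polys_in I")
    case True
    have "sg q \<in> polys_in I" using sg_in[OF True] .
    then show ?thesis using True p sg_in sg_sg unfolding conj_apply mult_op_def sg'_def
      by (simp add: sg_mult polys_in_mult)
  next
    case False then show ?thesis unfolding conj_apply mult_op_def sg'_def by (simp add: sg_zero)
  qed
qed

lemma conj_derivation:
  assumes th: "\<theta> \<in> derivations (polys_in I)"
  shows "conj \<theta> \<in> derivations (polys_in I)"
  unfolding derivations_def
proof (intro CollectI conjI ballI allI impI)
  fix q :: "'k mpoly"
  show "conj \<theta> q \<in> polys_in I" unfolding conj_apply by (rule sg'_in)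
next
  fix q :: "'k mpoly" assume "q \<notin> polys_in I"
  then show "conj \<theta> q = 0" unfolding conj_apply sg'_def using derivationsD(2)[OF th] linop_zero[OF linop_derivation[OF th]]
    by (simp add: sg_zero)
next
  fix p q :: "'k mpoly" assume p: "p \<in> polys_in I" and q: "q \<in> polys_in I"
  show "conj \<theta> (p + q) = conj \<theta> p + conj \<theta> q"
    unfolding conj_apply sg'_def using p q sg_in derivationsD(1,3)[OF th]
    by (simp add: sg_add polys_in_add)
next
  fix c and q :: "'k mpoly" assume q: "q \<in> polys_in I"
  show "conj \<theta> (mconst c * q) = mconst c * conj \<theta> q"
    unfolding conj_apply sg'_def using q sg_in derivationsD(1,4)[OF th]
    by (simp add: sg_smult polys_in_mconst_mult)
next
  fix p q :: "'k mpoly" assume p: "p \<in> polys_in I" and q: "q \<in> polys_in I"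
  show "conj \<theta> (p * q) = p * conj \<theta> q + q * conj \<theta> p"
    unfolding conj_apply sg'_def using p q sg_in sg_sg derivationsD(1,5)[OF th]
    by (simp add: sg_add sg_mult polys_in_mult polys_in_add)
qed

lemma conj_diff_ops:
  assumes "P \<in> diff_ops (polys_in I)"
  shows "conj P \<in> diff_ops (polys_in I)"
  using assms
proof (induct rule: diff_ops.induct)
  case (der \<theta>) then show ?case by (intro diff_ops.der conj_derivation)
next
  case (mult p) then show ?case by (simp add: conj_mult sg_in diff_ops.mult)
next
  case (add P R) then show ?case by (simp add: conj_add linop_diff_ops diff_ops.add)
next
  case (smult P c) then show ?case by (simp add: conj_smult linop_diff_ops diff_ops.smult)
next
  case (comp P R)
  have eq: "conj (P \<circ> R) = conj P \<circ> conj R" by (rule conj_comp[OF linop_diff_ops[OF comp(3)]])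
  show ?case unfolding eq by (rule diff_ops.comp[OF comp(2) comp(4)])
qed

lemma conj_tangent:
  assumes P: "P \<in> tangent_ops (polys_in I) Q" and Q: "Q \<in> polys_in I"
  shows "conj P \<in> tangent_ops (polys_in I) (sg Q)"
proof (rule tangent_opsI)
  have PD: "P \<in> diff_ops (polys_in I)" by (rule tangent_opsD(1)[OF P])
  show "conj P \<in> diff_ops (polys_in I)" by (rule conj_diff_ops[OF PD])
  fix m :: nat and R :: "'k op" assume m: "m \<ge> 1" and R: "R \<in> diff_ops (polys_in I)"
  have cR: "conj R \<in> diff_ops (polys_in I)" by (rule conj_diff_ops[OF R])
  obtain R' where R': "R' \<in> diff_ops (polys_in I)" "P \<circ> mult_op (polys_in I) (Q ^ m) \<circ> conj R = mult_op (polys_in I) (Q ^ m) \<circ> R'"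
    using tangent_opsD(2)[OF P m cR] by blast
  have Qm: "Q ^ m \<in> polys_in I" using Q by (rule polys_in_power)
  have lM: "linop (polys_in I) (mult_op (polys_in I) (Q ^ m))" by (rule linop_mult_op[OF Qm])
  have lcR: "linop (polys_in I) (conj R)" by (rule linop_diff_ops[OF cR])
  have lR: "linop (polys_in I) R" by (rule linop_diff_ops[OF R])
  have lR': "linop (polys_in I) R'" by (rule linop_diff_ops[OF R'(1)])
  have "conj (P \<circ> mult_op (polys_in I) (Q ^ m) \<circ> conj R) = conj P \<circ> mult_op (polys_in I) (sg Q ^ m) \<circ> R"
    by (simp add: conj_comp[OF lcR] conj_comp[OF lM] conj_conj[OF lR] conj_mult[OF Qm] sg_power)
  moreover have "conj (mult_op (polys_in I) (Q ^ m) \<circ> R') = mult_op (polys_in I) (sg Q ^ m) \<circ> conj R'"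
    by (simp add: conj_comp[OF lR'] conj_mult[OF Qm] sg_power)
  ultimately have "conj P \<circ> mult_op (polys_in I) (sg Q ^ m) \<circ> R = mult_op (polys_in I) (sg Q ^ m) \<circ> conj R'"
    using R'(2) by simp
  then show "\<exists>R''\<in>diff_ops (polys_in I). conj P \<circ> mult_op (polys_in I) (sg Q ^ m) \<circ> R = mult_op (polys_in I) (sg Q ^ m) \<circ> R''"
    using conj_diff_ops[OF R'(1)] by blast
qed

lemma tangent_conj_image:
  assumes Q: "Q \<in> polys_in I"
  shows "tangent_ops (polys_in I) Q = conj ` tangent_ops (polys_in I) (sg Q)"
proof
  show "tangent_ops (polys_in I) Q \<subseteq> conj ` tangent_ops (polys_in I) (sg Q)"
  proof
    fix P assume P: "P \<in> tangent_ops (polys_in I) Q"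
    have "P = conj (conj P)" using conj_conj[OF linop_diff_ops[OF tangent_opsD(1)[OF P]]] by simp
    moreover have "conj P \<in> tangent_ops (polys_in I) (sg Q)" by (rule conj_tangent[OF P Q])
    ultimately show "P \<in> conj ` tangent_ops (polys_in I) (sg Q)" by blast
  qed
  show "conj ` tangent_ops (polys_in I) (sg Q) \<subseteq> tangent_ops (polys_in I) Q"
  proof
    fix P assume "P \<in> conj ` tangent_ops (polys_in I) (sg Q)"
    then obtain P' where P': "P' \<in> tangent_ops (polys_in I) (sg Q)" "P = conj P'" by blast
    have "conj P' \<in> tangent_ops (polys_in I) (sg (sg Q))" by (rule conj_tangent[OF P'(1) sg_in[OF Q]])
    then show "P \<in> tangent_ops (polys_in I) Q" using P'(2) sg_sg[OF Q] by simp
  qed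
qed

end

lemma tangent_scale_sub:
  fixes Q :: "'k::field mpoly"
  assumes c: "c \<noteq> 0" and Q: "Q \<in> polys_in I"
  shows "tangent_ops (polys_in I) (mconst c * Q) \<subseteq> tangent_ops (polys_in I) Q"
proof
  fix P assume P: "P \<in> tangent_ops (polys_in I) (mconst c * Q)"
  show "P \<in> tangent_ops (polys_in I) Q"
  proof (rule tangent_opsI)
    show "P \<in> diff_ops (polys_in I)" by (rule tangent_opsD(1)[OF P])
    fix m :: nat and R :: "'k op" assume m: "m \<ge> 1" and R: "R \<in> diff_ops (polys_in I)"
    let ?U' = "mult_op (polys_in I) (mconst (inverse c ^ m))"
    let ?U = "mult_op (polys_in I) (mconst (c ^ m))"
    have R1: "?U' \<circ> R \<in> diff_ops (polys_in I)" by (intro diff_ops.comp diff_ops.mult R) simp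
    obtain R' where R': "R' \<in> diff_ops (polys_in I)"
      "P \<circ> mult_op (polys_in I) ((mconst c * Q) ^ m) \<circ> (?U' \<circ> R) = mult_op (polys_in I) ((mconst c * Q) ^ m) \<circ> R'"
      using tangent_opsD(2)[OF P m R1] by blast
    have lR: "linop (polys_in I) R" by (rule linop_diff_ops[OF R])
    have lR': "linop (polys_in I) R'" by (rule linop_diff_ops[OF R'(1)])
    have cc: "mconst (c ^ m) * mconst (inverse c ^ m) = (1 :: 'k mpoly)"
      using c by (simp add: mconst_mult[symmetric] power_mult_distrib[symmetric])
    have Qm: "Q ^ m \<in> polys_in I" using Q by (rule polys_in_power)
    have e1: "mult_op (polys_in I) ((mconst c * Q) ^ m) \<circ> (?U' \<circ> R) = mult_op (polys_in I) (Q ^ m) \<circ> R"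
    proof
      fix q
      have Rq: "R q \<in> polys_in I" by (rule linop_in_all[OF lR])
      then have u: "?U' (R q) = mconst (inverse c ^ m) * R q" by (simp add: mult_op_def)
      have uin: "mconst (inverse c ^ m) * R q \<in> polys_in I" using Rq by (rule polys_in_mconst_mult)
      have "(mult_op (polys_in I) ((mconst c * Q) ^ m) \<circ> (?U' \<circ> R)) q
          = (mconst c * Q) ^ m * (mconst (inverse c ^ m) * R q)"
        using u uin by (simp add: mult_op_def)
      also have "\<dots> = (mconst (c ^ m) * mconst (inverse c ^ m)) * (Q ^ m * R q)"
        by (simp add: power_mult_distrib mconst_power ac_simps)
      also have "\<dots> = (mult_op (polys_in I) (Q ^ m) \<circ> R) q"
        using cc Rq by (simp add: mult_op_def)
      finally show "(mult_op (polys_in I) ((mconst c * Q) ^ m) \<circ> (?U' \<circ> R)) q = (mult_op (polys_in I) (Q ^ m) \<circ> R) q" .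
    qed
    have e2: "mult_op (polys_in I) ((mconst c * Q) ^ m) \<circ> R' = mult_op (polys_in I) (Q ^ m) \<circ> (?U \<circ> R')"
    proof
      fix q
      have Rq: "R' q \<in> polys_in I" by (rule linop_in_all[OF lR'])
      then have u: "?U (R' q) = mconst (c ^ m) * R' q" by (simp add: mult_op_def)
      have uin: "mconst (c ^ m) * R' q \<in> polys_in I" using Rq by (rule polys_in_mconst_mult)
      have "(mult_op (polys_in I) (Q ^ m) \<circ> (?U \<circ> R')) q = Q ^ m * (mconst (c ^ m) * R' q)"
        using u uin by (simp add: mult_op_def)
      also have "\<dots> = (mconst c * Q) ^ m * R' q"
        by (simp add: power_mult_distrib mconst_power ac_simps)
      also have "\<dots> = (mult_op (polys_in I) ((mconst c * Q) ^ m) \<circ> R') q"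
        using Rq by (simp add: mult_op_def)
      finally show "(mult_op (polys_in I) ((mconst c * Q) ^ m) \<circ> R') q = (mult_op (polys_in I) (Q ^ m) \<circ> (?U \<circ> R')) q" by simp
    qed
    have "P \<circ> mult_op (polys_in I) (Q ^ m) \<circ> R = mult_op (polys_in I) (Q ^ m) \<circ> (?U \<circ> R')"
      using R'(2) unfolding comp_assoc e1 e2 .
    moreover have "?U \<circ> R' \<in> diff_ops (polys_in I)" by (intro diff_ops.comp diff_ops.mult R'(1)) simp
    ultimately show "\<exists>R''\<in>diff_ops (polys_in I). P \<circ> mult_op (polys_in I) (Q ^ m) \<circ> R = mult_op (polys_in I) (Q ^ m) \<circ> R''"
      by blast
  qed
qed

lemma tangent_scale:
  fixes Q :: "'k::field mpoly"
  assumes c: "c \<noteq> 0" and Q: "Q \<in> polys_in I"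
  shows "tangent_ops (polys_in I) (mconst c * Q) = tangent_ops (polys_in I) Q"
proof
  show "tangent_ops (polys_in I) (mconst c * Q) \<subseteq> tangent_ops (polys_in I) Q" by (rule tangent_scale_sub[OF c Q])
  have "tangent_ops (polys_in I) (mconst (inverse c) * (mconst c * Q)) \<subseteq> tangent_ops (polys_in I) (mconst c * Q)"
    using c Q by (intro tangent_scale_sub) auto
  moreover have "mconst (inverse c) * (mconst c * Q) = Q"
    using c by (simp add: mult.assoc[symmetric] mconst_mult[symmetric])
  ultimately show "tangent_ops (polys_in I) Q \<subseteq> tangent_ops (polys_in I) (mconst c * Q)" by simp
qed

section \<open>The coordinate change\<close>

definition sgf :: "nat \<Rightarrow> 'k::comm_ring_1 mpoly" where
  "sgf i = (if i = 0 then mvar 0 else mvar 0 - mvar i)"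

lemma sgf_in: "i \<in> insert 0 B \<Longrightarrow> sgf i \<in> polys_in (insert 0 B)"
  unfolding sgf_def by (auto intro!: polys_in_diff polys_in_mvar)

lemma subst_sgf_sgf:
  fixes p :: "'k::comm_ring_1 mpoly"
  assumes p: "p \<in> polys_in (insert 0 B)"
  shows "subst sgf (subst sgf p) = p"
proof (rule ringhom_eq[where F="\<lambda>p. subst sgf (subst sgf p)" and G="\<lambda>p. p", OF _ _ _ _ _ _ p])
  show "addhom (polys_in (insert 0 B)) (\<lambda>p. subst sgf (subst sgf p) :: 'k mpoly)"
    unfolding addhom_def by (simp add: subst_add subst_smult)
  show "addhom (polys_in (insert 0 B)) (\<lambda>p. p :: 'k mpoly)"
    unfolding addhom_def by simp
  show "\<And>p q. subst sgf (subst sgf (p * q)) = subst sgf (subst sgf p) * subst sgf (subst sgf (q :: 'k mpoly))"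
    by (simp add: subst_mult)
  show "\<And>p q. (p * q :: 'k mpoly) = p * q" by simp
  show "subst sgf (subst sgf (1 :: 'k mpoly)) = 1" by simp
  show "subst sgf (subst sgf (mvar i :: 'k mpoly)) = mvar i" for i
    by (cases "i = 0") (simp_all add: subst_mvar sgf_def subst_diff)
qed

lemma invol_sgf: "invol (insert 0 B) (subst sgf :: 'k::field mpoly \<Rightarrow> 'k mpoly)"
proof
  show "\<And>p. p \<in> polys_in (insert 0 B) \<Longrightarrow> subst sgf p \<in> polys_in (insert 0 B)"
    by (rule subst_in[OF sgf_in])
  show "\<And>p. p \<in> polys_in (insert 0 B) \<Longrightarrow> subst sgf (subst sgf p) = p" by (rule subst_sgf_sgf)
  show "\<And>p q. subst sgf (p + q) = subst sgf p + subst sgf q" by (rule subst_add)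
  show "\<And>p q. subst sgf (p * q) = subst sgf p * subst sgf q" by (rule subst_mult)
  show "\<And>c p. subst sgf (mconst c * p) = mconst c * subst sgf p" by (rule subst_smult)
  show "subst sgf 1 = 1" by simp
qed

lemma braid_split:
  "{(i, j). i < j \<and> j \<le> n} = (\<lambda>j. (0::nat, j)) ` {1..n} \<union> {(i, j). 1 \<le> i \<and> i < j \<and> j \<le> (n::nat)}"
  by auto

lemma subst_braid:
  "subst sgf (braid_poly n :: 'k::comm_ring_1 mpoly) =
     mconst ((-1) ^ card {(i, j). 1 \<le> i \<and> i < j \<and> j \<le> n}) * braid_tilde_poly n"
proof -
  let ?P1 = "{(i, j). 1 \<le> i \<and> i < j \<and> j \<le> (n::nat)}"
  have fin1: "finite ?P1" by (rule finite_subset[of _ "{0..n} \<times> {0..n}"]) auto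
  have fin0: "finite ((\<lambda>j. (0::nat, j)) ` {1..n})" by simp
  have disj: "(\<lambda>j. (0::nat, j)) ` {1..n} \<inter> ?P1 = {}" by auto
  have "subst sgf (braid_poly n :: 'k mpoly) = (\<Prod>x\<in>{(i, j). i < j \<and> j \<le> n}. subst sgf (case x of (i, j) \<Rightarrow> mvar i - mvar j))"
    unfolding braid_poly_def by (simp add: subst_prod case_prod_beta')
  also have "\<dots> = (\<Prod>x\<in>(\<lambda>j. (0::nat, j)) ` {1..n}. subst sgf (case x of (i, j) \<Rightarrow> mvar i - mvar j)) *
      (\<Prod>x\<in>?P1. subst sgf (case x of (i, j) \<Rightarrow> mvar i - mvar j))"
    unfolding braid_split by (rule prod.union_disjoint[OF fin0 fin1 disj])
  also have "(\<Prod>x\<in>(\<lambda>j. (0::nat, j)) ` {1..n}. subst sgf (case x of (i, j) \<Rightarrow> mvar i - mvar j) :: 'k mpoly)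
      = (\<Prod>j\<in>{1..n}. mvar j)"
    by (subst prod.reindex) (auto simp: inj_on_def subst_diff subst_mvar sgf_def intro!: prod.cong)
  also have "(\<Prod>x\<in>?P1. subst sgf (case x of (i, j) \<Rightarrow> mvar i - mvar j) :: 'k mpoly)
      = (\<Prod>x\<in>?P1. mconst (-1) * (case x of (i, j) \<Rightarrow> mvar i - mvar j))"
    by (intro prod.cong refl) (auto simp: subst_diff subst_mvar sgf_def mconst_uminus)
  also have "\<dots> = mconst (-1) ^ card ?P1 * (\<Prod>x\<in>?P1. (case x of (i, j) \<Rightarrow> mvar i - mvar j))"
    by (simp add: prod.distrib)
  finally show ?thesis
    unfolding braid_tilde_poly_def by (simp add: mconst_power ac_simps case_prod_beta')
qed

lemma braid_in: "braid_poly n \<in> polys_in {0..n}"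
  unfolding braid_poly_def by (intro polys_in_prod) (auto intro!: polys_in_diff polys_in_mvar)

lemma braid_tilde_in: "braid_tilde_poly n \<in> polys_in {1..n}"
  unfolding braid_tilde_poly_def
  by (intro polys_in_mult polys_in_prod) (auto intro!: polys_in_diff polys_in_mvar)

lemma set_0n: "{0..n} = insert 0 {1..(n::nat)}"
  by auto

theorem proposition1p21:
  fixes n :: nat
  assumes "n \<ge> 1"
  shows "alg_iso_tensor
           (weyl_algebra_1 :: 'k::field_char_0 op set) (mult_op (polys_in {0}) 1)
           (D_braid_tilde n) (mult_op (polys_in {1..n}) 1)
           (D_braid n) (mult_op (polys_in {0..n}) 1)"
proof -
  define B where "B = {1..n}"
  have B0: "0 \<notin> B" and finB: "finite B" unfolding B_def by auto
  have J: "{0..n} = insert 0 B" unfolding B_def by auto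
  define Qt :: "'k mpoly" where "Qt = braid_tilde_poly n"
  define Qb :: "'k mpoly" where "Qb = braid_poly n"
  have QtB: "Qt \<in> polys_in B" unfolding Qt_def B_def by (rule braid_tilde_in)
  have QtS: "Qt \<in> polys_in (insert 0 B)" by (rule SB_SS[OF B0 QtB])
  have QbS: "Qb \<in> polys_in (insert 0 B)" unfolding Qb_def J[symmetric] by (rule braid_in)
  interpret iv: invol "insert 0 B" "subst sgf :: 'k mpoly \<Rightarrow> 'k mpoly" by (rule invol_sgf)
  let ?A = "diff_ops (polys_in {0}) :: 'k op set"
  let ?TB = "tangent_ops (polys_in B) Qt"
  let ?SS = "polys_in (insert 0 B) :: 'k mpoly set"
  define \<Psi> where "\<Psi> \<phi> = iv.conj (Psi0 B \<phi>)" for \<phi>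
  have TBD: "?TB \<subseteq> diff_ops (polys_in B)" using tangent_opsD(1) by blast
  have linPsi: "linop ?SS (Psi0 B \<phi>)" if "\<phi> \<in> tfree ?A ?TB" for \<phi>
    by (rule linop_diff_ops[OF Psi0_diff_ops[OF B0 tfree_mono[OF that TBD]]])
  have lA: "linop (polys_in {0}) a" if "a \<in> ?A" for a using that by (rule linop_diff_ops)
  have lB: "linop (polys_in B) b" if "b \<in> ?TB" for b using that TBD by (intro linop_diff_ops) blast
  have eps: "(-1 :: 'k) ^ card {(i, j). 1 \<le> i \<and> i < j \<and> j \<le> n} \<noteq> 0" by simp
  have img: "\<Psi> ` tfree ?A ?TB = tangent_ops ?SS Qb"
  proof -
    have "\<Psi> ` tfree ?A ?TB = iv.conj ` (Psi0 B ` tfree ?A ?TB)" unfolding \<Psi>_def by (simp add: image_comp comp_def)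
    also have "\<dots> = iv.conj ` tangent_ops ?SS Qt" unfolding image_TS[OF B0 finB QtB] ..
    also have "\<dots> = iv.conj ` tangent_ops ?SS (subst sgf Qb)"
      unfolding Qb_def subst_braid Qt_def[symmetric] tangent_scale[OF eps QtS] ..
    also have "\<dots> = tangent_ops ?SS Qb" by (rule iv.tangent_conj_image[OF QbS, symmetric])
    finally show ?thesis .
  qed
  show ?thesis
    unfolding alg_iso_tensor_def weyl_algebra_1_def D_braid_tilde_def D_braid_def
      B_def[symmetric] Qt_def[symmetric] Qb_def[symmetric] J
  proof (intro exI[of _ \<Psi>] conjI ballI allI)
    show "\<Psi> ` tfree ?A ?TB = tangent_ops ?SS Qb" by (rule img)
  next
    fix \<phi> \<psi> assume \<phi>: "\<phi> \<in> tfree ?A ?TB" and \<psi>: "\<psi> \<in> tfree ?A ?TB"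
    show "\<Psi> (\<phi> + \<psi>) = op_add (\<Psi> \<phi>) (\<Psi> \<psi>)"
      unfolding \<Psi>_def Psi0_add by (rule iv.conj_add[OF linPsi[OF \<phi>] linPsi[OF \<psi>]])
  next
    fix c and \<phi> assume \<phi>: "\<phi> \<in> tfree ?A ?TB"
    show "\<Psi> (tsmult c \<phi>) = op_smult c (\<Psi> \<phi>)"
      unfolding \<Psi>_def Psi0_tsmult by (rule iv.conj_smult[OF linPsi[OF \<phi>]])
  next
    fix \<phi> assume \<phi>: "\<phi> \<in> tfree ?A ?TB"
    have "\<Psi> \<phi> = (\<lambda>_. 0) \<longleftrightarrow> Psi0 B \<phi> = (\<lambda>_. 0)"
    proof
      assume "\<Psi> \<phi> = (\<lambda>_. 0)"
      then have "iv.conj (iv.conj (Psi0 B \<phi>)) = iv.conj (\<lambda>_. 0)" unfolding \<Psi>_def by simp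
      then show "Psi0 B \<phi> = (\<lambda>_. 0)" unfolding iv.conj_conj[OF linPsi[OF \<phi>]] iv.conj_zero .
    next
      assume "Psi0 B \<phi> = (\<lambda>_. 0)"
      then show "\<Psi> \<phi> = (\<lambda>_. 0)" unfolding \<Psi>_def by (simp add: iv.conj_zero)
    qed
    also have "\<dots> \<longleftrightarrow> \<phi> \<in> trel ?A ?TB" by (rule kernel_TS[OF B0 finB QtB \<phi>])
    finally show "\<Psi> \<phi> = (\<lambda>_. 0) \<longleftrightarrow> \<phi> \<in> trel ?A ?TB" .
  next
    fix a a' b b' assume a: "a \<in> ?A" and a': "a' \<in> ?A" and b: "b \<in> ?TB" and b': "b' \<in> ?TB"
    have "T B (a \<circ> a') (b \<circ> b') = T B a b \<circ> T B a' b'"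
      by (rule T_comp[OF B0 lA[OF a] lA[OF a'] lB[OF b] lB[OF b'], symmetric])
    then show "\<Psi> (tgen (a \<circ> a') (b \<circ> b')) = \<Psi> (tgen a b) \<circ> \<Psi> (tgen a' b')"
      unfolding \<Psi>_def Psi0_tgen using iv.conj_comp[OF T_linop[OF B0 lA[OF a'] lB[OF b']]] by simp
  next
    have "T B (mult_op (polys_in {0}) 1) (mult_op (polys_in B) 1) = mult_op ?SS (1 * 1)"
      by (rule T_mult[OF B0]) simp_all
    then show "\<Psi> (tgen (mult_op (polys_in {0}) 1) (mult_op (polys_in B) 1)) = mult_op ?SS 1"
      unfolding \<Psi>_def Psi0_tgen using iv.conj_mult[of 1] by simp
  qed
qed

end
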